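(* Let $X$ be a $T_1$ space. The assignments $\mathcal G\mapsto\hat{\mathcal G}$ and $\mathcal C\mapsto\mathcal C^\star$ give a one-to-one correspondence (up to isomorphism) between topological étale groupoids over $X$ and pseudogroup sheaves on $X$: for every topological étale groupoid $\mathcal G$ over $X$, $\hat{\mathcal G}$ is a pseudogroup sheaf and $(\hat{\mathcal G})^\star\cong\mathcal G$ as topological groupoids over $X$; and for every pseudogroup sheaf $\mathcal C$ on $X$, $\mathcal C^\star$ (with the étale space topology) is a topological étale groupoid over $X$ and $\widehat{\mathcal C^\star}\cong\mathcal C$ by an isomorphism of categories that is the identity on $X_{top}$.
   Context: $X_{top}$ denotes the set of open subsets of $X$, regarded as a category with exactly one morphism $U\to V$ iff $U\subseteq V$. Let $\mathcal C$ be a small category with $\mathrm{Ob}(\mathcal C)=X_{top}$ containing $X_{top}$ as a subcategory (identity on objects). For each open $V$, $\mathcal C(-,V)$ is a presheaf of sets on $X$ (restriction along $U'\subseteq U$ = precomposition with the inclusion morphism). For $x\in X$ let $\mathcal C_x(V)=\operatorname{colim}_{U\ni x}\mathcal C(U,V)$ (germ of $f\in\mathcal C(U,V)$ at $x$ written $f_x$); postcomposition with inclusions makes this functorial in $V$, and for $y\in X$ let $\mathcal C_x^y=\lim_{V\ni y}\mathcal C_x(V)$ (limit over open neighbourhoods of $y$), with projections $\mathcal C_x^y\to\mathcal C_x(V)$. Composition in $\mathcal C$ induces $\mathcal C_y^z\times\mathcal C_x^y\to\mathcal C_x^z$: given $\varphi\in\mathcal C_x^y,\psi\in\mathcal C_y^z$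 and open $W\ni z$, choose $g\in\mathcal C(V,W)$, $y\in V$, representing the component $\psi_W$, and $f\in\mathcal C(U,V)$ representing $\varphi_V$; the $W$-component of $\psi\circ\varphi$ is $(g\circ f)_x$. This defines a category $\mathcal C^\star$ with objects the points of $X$ and $\mathcal C^\star(x,y)=\mathcal C_x^y$; its morphism set $\coprod_{x,y}\mathcal C_x^y$ is identified via (2) below with $\coprod_x\mathcal C_x(X)$ and topologized as the étale space of the presheaf $\mathcal C(-,X)$. For $X$ a $T_1$ space, a pre-pseudogroup on $X$ is such a $\mathcal C$ satisfying: (1) $\mathrm{Ob}(\mathcal C)=\mathrm{Ob}(X_{top})$; (2) for every open $V$ and $x\in X$, the map $\coprod_{y\in V}\mathcal C_x^y\to\mathcal C_x(V)$ induced by the projections is a bijection; (3) $\mathcal C^\star$ is a groupoid. A pseudogroup sheaf on $X$ is a pre-pseudogroup such that moreover (4) each presheaf $\mathcal C(-,V)$ is a sheaf. A topological étale groupoid $\mathcal G$ over $X$ has object space $X$, morphism space $\mathcal G_1$, continuous structure maps (source $s$, target $t$, unit $i$, inversion, composition $\mathrm{comp}$), with $s,t$ local homeomorphisms. $\hat{\mathcal G}$ is the category with object set $X_{top}$ and $\hat{\mathcal G}(U,V)=\{f:U\to t^{-1}(V)\text{ continuous}: s\circ f=\mathrm{id}_U\}$, composite of $f\in\hat{\mathcal G}(U,V)$, $g\in\hat{\mathcal G}(V,W)$ being $x\mapsto\mathrm{comp}(g(t(f(x))),f(x))$, identity $i|_U$, and $X_{top}$ embedded via $(U\subseteq V)\mapsto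 i|_U$. *)

theory Defs
  imports "HOL-Analysis.Analysis"
begin

text \<open>A small category whose objects are the open subsets of X. Morphisms live in smor;
  sdom/scod give source and target, scmp g f is the composite g after f, sidn U the identity,
  and sinc U V the morphism U -> V that is the image of the inclusion U <= V of X_top.\<close>

record ('a,'m) sitecat =
  smor :: "'m set"
  sdom :: "'m \<Rightarrow> 'a set"
  scod :: "'m \<Rightarrow> 'a set"
  scmp :: "'m \<Rightarrow> 'm \<Rightarrow> 'm"
  sidn :: "'a set \<Rightarrow> 'm"
  sinc :: "'a set \<Rightarrow> 'a set \<Rightarrow> 'm"

definition shom :: "('a,'m) sitecat \<Rightarrow> 'a set \<Rightarrow> 'a set \<Rightarrow> 'm set" where
  "shom C U V = {f \<in> smor C. sdom C f = U \<and> scod C f = V}"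

definition is_sitecat :: "'a topology \<Rightarrow> ('a,'m) sitecat \<Rightarrow> bool" where
  "is_sitecat X C \<longleftrightarrow>
     (\<forall>f\<in>smor C. openin X (sdom C f) \<and> openin X (scod C f)) \<and>
     (\<forall>U. openin X U \<longrightarrow> sidn C U \<in> shom C U U) \<and>
     (\<forall>U V W f g. f \<in> shom C U V \<and> g \<in> shom C V W \<longrightarrow> scmp C g f \<in> shom C U W) \<and>
     (\<forall>f\<in>smor C. scmp C (sidn C (scod C f)) f = f \<and> scmp C f (sidn C (sdom C f)) = f) \<and>
     (\<forall>U V W Z f g h. f \<in> shom C U V \<and> g \<in> shom C V W \<and> h \<in> shom C W Z \<longrightarrow>
        scmp C h (scmp C g f) = scmp C (scmp C h g) f) \<and>
     (\<forall>U V. openin X U \<and> openin X V \<and> U \<subseteq> V \<longrightarrow> sinc C U V \<in> shom C U V) \<and>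
     (\<forall>U. openin X U \<longrightarrow> sinc C U U = sidn C U) \<and>
     (\<forall>U V W. openin X U \<and> openin X V \<and> openin X W \<and> U \<subseteq> V \<and> V \<subseteq> W \<longrightarrow>
        scmp C (sinc C V W) (sinc C U V) = sinc C U W)"

text \<open>The germ at x of f (with x in the domain of f): the equivalence class of f in the
  filtered colimit over open neighbourhoods U of x of C(U, cod f).\<close>
definition germ :: "'a topology \<Rightarrow> ('a,'m) sitecat \<Rightarrow> 'a \<Rightarrow> 'm \<Rightarrow> 'm set" where
  "germ X C x f = {g \<in> smor C. scod C g = scod C f \<and> x \<in> sdom C g \<and>
      (\<exists>W. openin X W \<and> x \<in> W \<and> W \<subseteq> sdom C f \<inter> sdom C g \<and>
           scmp C f (sinc C W (sdom C f)) = scmp C g (sinc C W (sdom C g)))}"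

definition stalk :: "'a topology \<Rightarrow> ('a,'m) sitecat \<Rightarrow> 'a \<Rightarrow> 'a set \<Rightarrow> 'm set set" where
  "stalk X C x V = {germ X C x f | f. f \<in> smor C \<and> scod C f = V \<and> x \<in> sdom C f}"

text \<open>C_x^y: compatible families (limit over open neighbourhoods V of y); a family is
  represented as a function on open sets, equal to the empty set away from the neighbourhoods
  of y.\<close>
definition stalk2 :: "'a topology \<Rightarrow> ('a,'m) sitecat \<Rightarrow> 'a \<Rightarrow> 'a \<Rightarrow> ('a set \<Rightarrow> 'm set) set" where
  "stalk2 X C x y = {\<phi>.
     (\<forall>V. openin X V \<and> y \<in> V \<longrightarrow> \<phi> V \<in> stalk X C x V) \<and>
     (\<forall>V. \<not> (openin X V \<and> y \<in> V) \<longrightarrow> \<phi> V = {}) \<and>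
     (\<forall>V V' f. openin X V \<and> openin X V' \<and> y \<in> V \<and> V \<subseteq> V' \<and>
        f \<in> smor C \<and> scod C f = V \<and> x \<in> sdom C f \<and> germ X C x f = \<phi> V \<longrightarrow>
        germ X C x (scmp C (sinc C V V') f) = \<phi> V')}"

definition star_mor :: "'a topology \<Rightarrow> ('a,'m) sitecat \<Rightarrow> ('a \<times> 'a \<times> ('a set \<Rightarrow> 'm set)) set" where
  "star_mor X C = {(x, y, \<phi>). x \<in> topspace X \<and> y \<in> topspace X \<and> \<phi> \<in> stalk2 X C x y}"

definition star_src :: "'a \<times> 'a \<times> ('a set \<Rightarrow> 'm set) \<Rightarrow> 'a" where
  "star_src m = fst m"

definition star_tgt :: "'a \<times> 'a \<times> ('a set \<Rightarrow> 'm set) \<Rightarrow> 'a" where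
  "star_tgt m = fst (snd m)"

definition star_cmp_fam ::
  "'a topology \<Rightarrow> ('a,'m) sitecat \<Rightarrow> 'a \<Rightarrow> 'a \<Rightarrow> 'a \<Rightarrow> ('a set \<Rightarrow> 'm set) \<Rightarrow> ('a set \<Rightarrow> 'm set) \<Rightarrow> ('a set \<Rightarrow> 'm set)" where
  "star_cmp_fam X C x y z \<psi> \<phi> = (\<lambda>W. if openin X W \<and> z \<in> W then
      (SOME h. \<exists>g f. g \<in> smor C \<and> scod C g = W \<and> y \<in> sdom C g \<and> germ X C y g = \<psi> W \<and>
                    f \<in> smor C \<and> scod C f = sdom C g \<and> x \<in> sdom C f \<and> germ X C x f = \<phi> (sdom C g) \<and>
                    h = germ X C x (scmp C g f))
      else {})"

definition star_cmp :: "'a topology \<Rightarrow> ('a,'m) sitecat \<Rightarrow>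
    'a \<times> 'a \<times> ('a set \<Rightarrow> 'm set) \<Rightarrow> 'a \<times> 'a \<times> ('a set \<Rightarrow> 'm set) \<Rightarrow> 'a \<times> 'a \<times> ('a set \<Rightarrow> 'm set)" where
  "star_cmp X C n m = (fst m, fst (snd n), star_cmp_fam X C (fst m) (fst (snd m)) (fst (snd n)) (snd (snd n)) (snd (snd m)))"

definition star_idfam :: "'a topology \<Rightarrow> ('a,'m) sitecat \<Rightarrow> 'a \<Rightarrow> ('a set \<Rightarrow> 'm set)" where
  "star_idfam X C x = (\<lambda>V. if openin X V \<and> x \<in> V then germ X C x (sidn C V) else {})"

definition star_unit :: "'a topology \<Rightarrow> ('a,'m) sitecat \<Rightarrow> 'a \<Rightarrow> 'a \<times> 'a \<times> ('a set \<Rightarrow> 'm set)" where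
  "star_unit X C x = (x, x, star_idfam X C x)"

definition star_inv :: "'a topology \<Rightarrow> ('a,'m) sitecat \<Rightarrow>
    'a \<times> 'a \<times> ('a set \<Rightarrow> 'm set) \<Rightarrow> 'a \<times> 'a \<times> ('a set \<Rightarrow> 'm set)" where
  "star_inv X C m = (fst (snd m), fst m, (SOME \<psi>. \<psi> \<in> stalk2 X C (fst (snd m)) (fst m) \<and>
      star_cmp_fam X C (fst m) (fst (snd m)) (fst m) \<psi> (snd (snd m)) = star_idfam X C (fst m) \<and>
      star_cmp_fam X C (fst (snd m)) (fst m) (fst (snd m)) (snd (snd m)) \<psi> = star_idfam X C (fst (snd m))))"

text \<open>Etale space topology of the presheaf C(-,X), transported to the morphisms of C-star via
  the projection to the X-component (condition (2)): basic opens are the sets of all morphisms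
  whose X-component is a germ of a fixed f in C(U,X) at a point of U.\<close>
definition star_basic :: "'a topology \<Rightarrow> ('a,'m) sitecat \<Rightarrow> 'm \<Rightarrow> ('a \<times> 'a \<times> ('a set \<Rightarrow> 'm set)) set" where
  "star_basic X C f = {m \<in> star_mor X C. fst m \<in> sdom C f \<and> snd (snd m) (topspace X) = germ X C (fst m) f}"

definition star_top :: "'a topology \<Rightarrow> ('a,'m) sitecat \<Rightarrow> ('a \<times> 'a \<times> ('a set \<Rightarrow> 'm set)) topology" where
  "star_top X C = subtopology
     (topology_generated_by {star_basic X C f | f. f \<in> shom C (sdom C f) (topspace X)})
     (star_mor X C)"

definition pre_pseudogroup :: "'a topology \<Rightarrow> ('a,'m) sitecat \<Rightarrow> bool" where
  "pre_pseudogroup X C \<longleftrightarrow> is_sitecat X C \<and>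
     (\<forall>V x. openin X V \<and> x \<in> topspace X \<longrightarrow>
        bij_betw (\<lambda>(y, \<phi>). \<phi> V) (SIGMA y:V. stalk2 X C x y) (stalk X C x V)) \<and>
     (\<forall>m \<in> star_mor X C. \<exists>\<psi> \<in> stalk2 X C (fst (snd m)) (fst m).
        star_cmp_fam X C (fst m) (fst (snd m)) (fst m) \<psi> (snd (snd m)) = star_idfam X C (fst m) \<and>
        star_cmp_fam X C (fst (snd m)) (fst m) (fst (snd m)) (snd (snd m)) \<psi> = star_idfam X C (fst (snd m)))"

definition sheaf_cond :: "'a topology \<Rightarrow> ('a,'m) sitecat \<Rightarrow> bool" where
  "sheaf_cond X C \<longleftrightarrow>
     (\<forall>V U \<U> F. openin X V \<and> openin X U \<and> (\<forall>A\<in>\<U>. openin X A) \<and> \<Union>\<U> = U \<and>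
        (\<forall>A\<in>\<U>. F A \<in> shom C A V) \<and>
        (\<forall>A\<in>\<U>. \<forall>B\<in>\<U>. scmp C (F A) (sinc C (A \<inter> B) A) = scmp C (F B) (sinc C (A \<inter> B) B))
      \<longrightarrow> (\<exists>!f. f \<in> shom C U V \<and> (\<forall>A\<in>\<U>. scmp C f (sinc C A U) = F A)))"

definition pseudogroup_sheaf :: "'a topology \<Rightarrow> ('a,'m) sitecat \<Rightarrow> bool" where
  "pseudogroup_sheaf X C \<longleftrightarrow> pre_pseudogroup X C \<and> sheaf_cond X C"

definition local_homeo :: "'g topology \<Rightarrow> 'a topology \<Rightarrow> ('g \<Rightarrow> 'a) \<Rightarrow> bool" where
  "local_homeo G X p \<longleftrightarrow> continuous_map G X p \<and>
     (\<forall>g\<in>topspace G. \<exists>W. openin G W \<and> g \<in> W \<and> openin X (p ` W) \<and>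
        homeomorphic_map (subtopology G W) (subtopology X (p ` W)) p)"

text \<open>mc g f is the composite g after f, defined when s g = t f.\<close>
definition etale_groupoid :: "'a topology \<Rightarrow> 'g topology \<Rightarrow> ('g \<Rightarrow> 'a) \<Rightarrow> ('g \<Rightarrow> 'a) \<Rightarrow>
    ('a \<Rightarrow> 'g) \<Rightarrow> ('g \<Rightarrow> 'g) \<Rightarrow> ('g \<Rightarrow> 'g \<Rightarrow> 'g) \<Rightarrow> bool" where
  "etale_groupoid X G s t i iv mc \<longleftrightarrow>
     (\<forall>x\<in>topspace X. i x \<in> topspace G \<and> s (i x) = x \<and> t (i x) = x) \<and>
     (\<forall>f\<in>topspace G. \<forall>g\<in>topspace G. s g = t f \<longrightarrow>
        mc g f \<in> topspace G \<and> s (mc g f) = s f \<and> t (mc g f) = t g) \<and>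
     (\<forall>f\<in>topspace G. \<forall>g\<in>topspace G. \<forall>h\<in>topspace G. s g = t f \<and> s h = t g \<longrightarrow>
        mc h (mc g f) = mc (mc h g) f) \<and>
     (\<forall>f\<in>topspace G. mc (i (t f)) f = f \<and> mc f (i (s f)) = f) \<and>
     (\<forall>f\<in>topspace G. iv f \<in> topspace G \<and> s (iv f) = t f \<and> t (iv f) = s f \<and>
        mc (iv f) f = i (s f) \<and> mc f (iv f) = i (t f)) \<and>
     continuous_map G X s \<and> continuous_map G X t \<and> continuous_map X G i \<and>
     continuous_map G G iv \<and>
     continuous_map (subtopology (prod_topology G G) {(g, f). s g = t f}) G (\<lambda>(g, f). mc g f) \<and>
     local_homeo G X s \<and> local_homeo G X t"

definition groupoid_iso_over :: "'a topology \<Rightarrow>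
    'g topology \<Rightarrow> ('g \<Rightarrow> 'a) \<Rightarrow> ('g \<Rightarrow> 'a) \<Rightarrow> ('a \<Rightarrow> 'g) \<Rightarrow> ('g \<Rightarrow> 'g) \<Rightarrow> ('g \<Rightarrow> 'g \<Rightarrow> 'g) \<Rightarrow>
    'h topology \<Rightarrow> ('h \<Rightarrow> 'a) \<Rightarrow> ('h \<Rightarrow> 'a) \<Rightarrow> ('a \<Rightarrow> 'h) \<Rightarrow> ('h \<Rightarrow> 'h) \<Rightarrow> ('h \<Rightarrow> 'h \<Rightarrow> 'h) \<Rightarrow>
    ('g \<Rightarrow> 'h) \<Rightarrow> bool" where
  "groupoid_iso_over X G s t i iv mc H s' t' i' iv' mc' \<Phi> \<longleftrightarrow>
     homeomorphic_map G H \<Phi> \<and>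
     (\<forall>f\<in>topspace G. s' (\<Phi> f) = s f \<and> t' (\<Phi> f) = t f \<and> \<Phi> (iv f) = iv' (\<Phi> f)) \<and>
     (\<forall>x\<in>topspace X. \<Phi> (i x) = i' x) \<and>
     (\<forall>f\<in>topspace G. \<forall>g\<in>topspace G. s g = t f \<longrightarrow> \<Phi> (mc g f) = mc' (\<Phi> g) (\<Phi> f))"

text \<open>Morphisms U -> V: triples (U, V, f) with f a continuous section of s over U landing in
  t^{-1}(V); f is taken extensional (undefined outside U).\<close>
definition hat_cat :: "'a topology \<Rightarrow> 'g topology \<Rightarrow> ('g \<Rightarrow> 'a) \<Rightarrow> ('g \<Rightarrow> 'a) \<Rightarrow>
    ('a \<Rightarrow> 'g) \<Rightarrow> ('g \<Rightarrow> 'g \<Rightarrow> 'g) \<Rightarrow> ('a, 'a set \<times> 'a set \<times> ('a \<Rightarrow> 'g)) sitecat" where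
  "hat_cat X G s t i mc =
    \<lparr> smor = {(U, V, f). openin X U \<and> openin X V \<and> f \<in> extensional U \<and>
                 continuous_map (subtopology X U) (subtopology G {g \<in> topspace G. t g \<in> V}) f \<and>
                 (\<forall>x\<in>U. s (f x) = x)},
      sdom = (\<lambda>m. fst m),
      scod = (\<lambda>m. fst (snd m)),
      scmp = (\<lambda>n m. (fst m, fst (snd n),
                 restrict (\<lambda>x. mc (snd (snd n) (t (snd (snd m) x))) (snd (snd m) x)) (fst m))),
      sidn = (\<lambda>U. (U, U, restrict i U)),
      sinc = (\<lambda>U V. (U, V, restrict i U)) \<rparr>"

definition sitecat_iso :: "'a topology \<Rightarrow> ('a,'n) sitecat \<Rightarrow> ('a,'m) sitecat \<Rightarrow> ('n \<Rightarrow> 'm) \<Rightarrow> bool" where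
  "sitecat_iso X D C F \<longleftrightarrow>
     bij_betw F (smor D) (smor C) \<and>
     (\<forall>f\<in>smor D. sdom C (F f) = sdom D f \<and> scod C (F f) = scod D f) \<and>
     (\<forall>f\<in>smor D. \<forall>g\<in>smor D. sdom D g = scod D f \<longrightarrow> F (scmp D g f) = scmp C (F g) (F f)) \<and>
     (\<forall>U. openin X U \<longrightarrow> F (sidn D U) = sidn C U) \<and>
     (\<forall>U V. openin X U \<and> openin X V \<and> U \<subseteq> V \<longrightarrow> F (sinc D U V) = sinc C U V)"

end

theory Submission
  imports Defs
begin


locale sc =
  fixes X :: "'a topology" and C :: "('a,'m) sitecat"
  assumes sc: "is_sitecat X C"
begin

lemmas scd0 = sc[unfolded is_sitecat_def]
lemmas scd1 = scd0[THEN conjunct1]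
lemmas scd2 = scd0[THEN conjunct2, THEN conjunct1]
lemmas scd3 = scd0[THEN conjunct2, THEN conjunct2, THEN conjunct1]
lemmas scd4 = scd0[THEN conjunct2, THEN conjunct2, THEN conjunct2, THEN conjunct1]
lemmas scd5 = scd0[THEN conjunct2, THEN conjunct2, THEN conjunct2, THEN conjunct2, THEN conjunct1]
lemmas scd6 = scd0[THEN conjunct2, THEN conjunct2, THEN conjunct2, THEN conjunct2, THEN conjunct2, THEN conjunct1]
lemmas scd7 = scd0[THEN conjunct2, THEN conjunct2, THEN conjunct2, THEN conjunct2, THEN conjunct2, THEN conjunct2, THEN conjunct1]
lemmas scd8 = scd0[THEN conjunct2, THEN conjunct2, THEN conjunct2, THEN conjunct2, THEN conjunct2, THEN conjunct2, THEN conjunct2]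

lemma mor_open: "f \<in> smor C \<Longrightarrow> openin X (sdom C f) \<and> openin X (scod C f)"
  using scd1 by blast

lemma idn_hom: "openin X U \<Longrightarrow> sidn C U \<in> smor C \<and> sdom C (sidn C U) = U \<and> scod C (sidn C U) = U"
  using scd2 unfolding shom_def by blast

lemma cmp_hom: "f \<in> smor C \<Longrightarrow> g \<in> smor C \<Longrightarrow> sdom C g = scod C f \<Longrightarrow>
   scmp C g f \<in> smor C \<and> sdom C (scmp C g f) = sdom C f \<and> scod C (scmp C g f) = scod C g"
proof -
  assume a: "f \<in> smor C" "g \<in> smor C" "sdom C g = scod C f"
  have "f \<in> shom C (sdom C f) (scod C f)" "g \<in> shom C (scod C f) (scod C g)"
    using a unfolding shom_def by auto
  then have "scmp C g f \<in> shom C (sdom C f) (scod C g)"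
    using scd3 by blast
  then show ?thesis unfolding shom_def by blast
qed

lemma idl: "f \<in> smor C \<Longrightarrow> scmp C (sidn C (scod C f)) f = f"
  using scd4 by blast
lemma idr: "f \<in> smor C \<Longrightarrow> scmp C f (sidn C (sdom C f)) = f"
  using scd4 by blast

lemma assoc: "f \<in> smor C \<Longrightarrow> g \<in> smor C \<Longrightarrow> h \<in> smor C \<Longrightarrow> sdom C g = scod C f \<Longrightarrow>
   sdom C h = scod C g \<Longrightarrow> scmp C h (scmp C g f) = scmp C (scmp C h g) f"
proof -
  assume a: "f \<in> smor C" "g \<in> smor C" "h \<in> smor C" "sdom C g = scod C f" "sdom C h = scod C g"
  have "f \<in> shom C (sdom C f) (scod C f)" "g \<in> shom C (scod C f) (scod C g)" "h \<in> shom C (scod C g) (scod C h)"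
    using a unfolding shom_def by auto
  then show ?thesis using scd5 by blast
qed

lemma inc_hom: "openin X U \<Longrightarrow> openin X V \<Longrightarrow> U \<subseteq> V \<Longrightarrow>
   sinc C U V \<in> smor C \<and> sdom C (sinc C U V) = U \<and> scod C (sinc C U V) = V"
  using scd6 unfolding shom_def by blast

lemma inc_refl: "openin X U \<Longrightarrow> sinc C U U = sidn C U"
  using scd7 by blast

lemma inc_inc: "openin X U \<Longrightarrow> openin X V \<Longrightarrow> openin X W \<Longrightarrow> U \<subseteq> V \<Longrightarrow> V \<subseteq> W \<Longrightarrow>
        scmp C (sinc C V W) (sinc C U V) = sinc C U W"
  using scd8 by blast

definition restr :: "'m \<Rightarrow> 'a set \<Rightarrow> 'm" where
  "restr f W = scmp C f (sinc C W (sdom C f))"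

lemma restr_hom: "f \<in> smor C \<Longrightarrow> openin X W \<Longrightarrow> W \<subseteq> sdom C f \<Longrightarrow>
   restr f W \<in> smor C \<and> sdom C (restr f W) = W \<and> scod C (restr f W) = scod C f"
proof -
  assume a: "f \<in> smor C" "openin X W" "W \<subseteq> sdom C f"
  have i: "sinc C W (sdom C f) \<in> smor C \<and> sdom C (sinc C W (sdom C f)) = W \<and> scod C (sinc C W (sdom C f)) = sdom C f"
    using inc_hom a mor_open by blast
  show ?thesis unfolding restr_def using cmp_hom[of "sinc C W (sdom C f)" f] i a by simp
qed

lemma restr_restr: "f \<in> smor C \<Longrightarrow> openin X W \<Longrightarrow> W \<subseteq> sdom C f \<Longrightarrow> openin X W' \<Longrightarrow> W' \<subseteq> W \<Longrightarrow>
   restr (restr f W) W' = restr f W'"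
proof -
  assume a: "f \<in> smor C" "openin X W" "W \<subseteq> sdom C f" "openin X W'" "W' \<subseteq> W"
  have o: "openin X (sdom C f)" using a mor_open by blast
  have "restr (restr f W) W' = scmp C (scmp C f (sinc C W (sdom C f))) (sinc C W' W)"
    using restr_hom[OF a(1-3)] unfolding restr_def by simp
  also have "\<dots> = scmp C f (scmp C (sinc C W (sdom C f)) (sinc C W' W))"
    using assoc[of "sinc C W' W" "sinc C W (sdom C f)" f] inc_hom[of W' W] inc_hom[of W "sdom C f"] a o by simp
  also have "\<dots> = restr f W'" unfolding restr_def using inc_inc a o by simp
  finally show ?thesis .
qed

lemma restr_full: "f \<in> smor C \<Longrightarrow> restr f (sdom C f) = f"
  unfolding restr_def using inc_refl[of "sdom C f"] idr[of f] mor_open[of f] by simp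

lemma restr_cmp: "f \<in> smor C \<Longrightarrow> g \<in> smor C \<Longrightarrow> sdom C g = scod C f \<Longrightarrow> openin X W \<Longrightarrow> W \<subseteq> sdom C f \<Longrightarrow>
   restr (scmp C g f) W = scmp C g (restr f W)"
proof -
  assume a: "f \<in> smor C" "g \<in> smor C" "sdom C g = scod C f" "openin X W" "W \<subseteq> sdom C f"
  have i: "sinc C W (sdom C f) \<in> smor C \<and> sdom C (sinc C W (sdom C f)) = W \<and> scod C (sinc C W (sdom C f)) = sdom C f"
    using inc_hom a mor_open by blast
  show ?thesis unfolding restr_def using cmp_hom[OF a(1-3)] assoc[of "sinc C W (sdom C f)" f g] i a by simp
qed

lemma germ_iff: "germ X C x f = {g \<in> smor C. scod C g = scod C f \<and> x \<in> sdom C g \<and>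
      (\<exists>W. openin X W \<and> x \<in> W \<and> W \<subseteq> sdom C f \<inter> sdom C g \<and> restr f W = restr g W)}"
  unfolding germ_def restr_def by simp

lemma germ_refl: "f \<in> smor C \<Longrightarrow> x \<in> sdom C f \<Longrightarrow> f \<in> germ X C x f"
  unfolding germ_iff using mor_open by blast

lemma germ_sym: "g \<in> germ X C x f \<Longrightarrow> f \<in> smor C \<Longrightarrow> x \<in> sdom C f \<Longrightarrow> f \<in> germ X C x g"
proof -
  assume a: "g \<in> germ X C x f" "f \<in> smor C" "x \<in> sdom C f"
  then obtain W where W: "openin X W" "x \<in> W" "W \<subseteq> sdom C f \<inter> sdom C g" "restr f W = restr g W"
    "scod C g = scod C f" unfolding germ_iff by blast
  show ?thesis unfolding germ_iff
    by (rule CollectI, intro conjI exI[of _ W]) (use W a in auto)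
qed

lemma germ_trans: "f \<in> smor C \<Longrightarrow> g \<in> germ X C x f \<Longrightarrow> h \<in> germ X C x g \<Longrightarrow> h \<in> germ X C x f"
proof -
  assume f: "f \<in> smor C" and a: "g \<in> germ X C x f" "h \<in> germ X C x g"
  obtain W1 where W1: "openin X W1" "x \<in> W1" "W1 \<subseteq> sdom C f \<inter> sdom C g" "restr f W1 = restr g W1"
    using a(1) unfolding germ_iff by blast
  obtain W2 where W2: "openin X W2" "x \<in> W2" "W2 \<subseteq> sdom C g \<inter> sdom C h" "restr g W2 = restr h W2"
    using a(2) unfolding germ_iff by blast
  have m: "g \<in> smor C" "h \<in> smor C" "scod C h = scod C f" "x \<in> sdom C h" using a unfolding germ_iff by auto
  define W where "W = W1 \<inter> W2"
  have W: "openin X W" "x \<in> W" "W \<subseteq> sdom C f \<inter> sdom C h" using W1 W2 unfolding W_def by auto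
  have s1: "W \<subseteq> W1" "W \<subseteq> W2" unfolding W_def by auto
  have "restr f W = restr (restr f W1) W" using restr_restr[of f W1 W] f W1 W s1 by simp
  also have "\<dots> = restr (restr g W1) W" using W1 by simp
  also have "\<dots> = restr g W" using restr_restr[of g W1 W] m W1 W s1 by simp
  also have "\<dots> = restr (restr g W2) W" using restr_restr[of g W2 W] m W2 W s1 by simp
  also have "\<dots> = restr (restr h W2) W" using W2 by simp
  also have "\<dots> = restr h W" using restr_restr[of h W2 W] m W2 W s1 by simp
  finally show ?thesis unfolding germ_iff using m W by blast
qed


lemma germ_mem: "g \<in> germ X C x f \<Longrightarrow> g \<in> smor C \<and> scod C g = scod C f \<and> x \<in> sdom C g \<and> x \<in> sdom C f"
  unfolding germ_iff by blast

lemma germ_eq_iff: "f \<in> smor C \<Longrightarrow> g \<in> smor C \<Longrightarrow> x \<in> sdom C f \<Longrightarrow> x \<in> sdom C g \<Longrightarrow>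
   germ X C x f = germ X C x g \<longleftrightarrow> g \<in> germ X C x f"
proof
  assume a: "f \<in> smor C" "g \<in> smor C" "x \<in> sdom C f" "x \<in> sdom C g"
  { assume "germ X C x f = germ X C x g" then show "g \<in> germ X C x f" using germ_refl a by simp }
  { assume b: "g \<in> germ X C x f"
    show "germ X C x f = germ X C x g"
    proof
      show "germ X C x f \<subseteq> germ X C x g"
      proof
        fix h assume "h \<in> germ X C x f"
        moreover have "f \<in> germ X C x g" using germ_sym b a by blast
        ultimately show "h \<in> germ X C x g" using germ_trans a by blast
      qed
      show "germ X C x g \<subseteq> germ X C x f"
      proof
        fix h assume "h \<in> germ X C x g"
        then show "h \<in> germ X C x f" using germ_trans b a by blast
      qed
    qed }
qed

lemma germ_eqI: "f \<in> smor C \<Longrightarrow> g \<in> germ X C x f \<Longrightarrow> germ X C x f = germ X C x g"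
proof -
  assume a: "f \<in> smor C" "g \<in> germ X C x f"
  then have "g \<in> smor C" "x \<in> sdom C f" "x \<in> sdom C g" using germ_mem by auto
  then show ?thesis using germ_eq_iff a by blast
qed

lemma germ_restr: "f \<in> smor C \<Longrightarrow> openin X W \<Longrightarrow> W \<subseteq> sdom C f \<Longrightarrow> x \<in> W \<Longrightarrow> restr f W \<in> germ X C x f"
proof -
  assume a: "f \<in> smor C" "openin X W" "W \<subseteq> sdom C f" "x \<in> W"
  have r: "restr f W \<in> smor C \<and> sdom C (restr f W) = W \<and> scod C (restr f W) = scod C f" using restr_hom a by blast
  have "restr (restr f W) W = restr f W" using restr_restr[of f W W] a by simp
  then show ?thesis unfolding germ_iff
    by (rule_tac CollectI, intro conjI exI[of _ W]) (use a r in auto)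
qed

lemma germ_restr_eq: "f \<in> smor C \<Longrightarrow> openin X W \<Longrightarrow> W \<subseteq> sdom C f \<Longrightarrow> x \<in> W \<Longrightarrow>
    germ X C x (restr f W) = germ X C x f"
  using germ_eqI[OF _ germ_restr] by simp

lemma germ_cmp: "f \<in> smor C \<Longrightarrow> g \<in> smor C \<Longrightarrow> sdom C g = scod C f \<Longrightarrow> f' \<in> germ X C x f \<Longrightarrow>
   scmp C g f' \<in> germ X C x (scmp C g f)"
proof -
  assume a: "f \<in> smor C" "g \<in> smor C" "sdom C g = scod C f" "f' \<in> germ X C x f"
  obtain W where W: "openin X W" "x \<in> W" "W \<subseteq> sdom C f \<inter> sdom C f'" "restr f W = restr f' W"
    and f': "f' \<in> smor C" "scod C f' = scod C f" "x \<in> sdom C f'" using a(4) unfolding germ_iff by blast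
  have c1: "scmp C g f \<in> smor C \<and> sdom C (scmp C g f) = sdom C f \<and> scod C (scmp C g f) = scod C g"
    using cmp_hom a by blast
  have c2: "scmp C g f' \<in> smor C \<and> sdom C (scmp C g f') = sdom C f' \<and> scod C (scmp C g f') = scod C g"
    using cmp_hom a f' by simp
  have "restr (scmp C g f) W = scmp C g (restr f W)" using restr_cmp a W by simp
  also have "\<dots> = scmp C g (restr f' W)" using W by simp
  also have "\<dots> = restr (scmp C g f') W" using restr_cmp[of f' g W] a W f' by simp
  finally have e: "restr (scmp C g f) W = restr (scmp C g f') W" .
  show ?thesis unfolding germ_iff
    by (rule_tac CollectI, intro conjI exI[of _ W]) (use W c1 c2 e f' in auto)
qed

lemma germ_cmp_eq: "f \<in> smor C \<Longrightarrow> g \<in> smor C \<Longrightarrow> sdom C g = scod C f \<Longrightarrow> f' \<in> smor C \<Longrightarrow>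
   x \<in> sdom C f \<Longrightarrow> x \<in> sdom C f' \<Longrightarrow> germ X C x f = germ X C x f' \<Longrightarrow>
   germ X C x (scmp C g f) = germ X C x (scmp C g f')"
proof -
  assume a: "f \<in> smor C" "g \<in> smor C" "sdom C g = scod C f" "f' \<in> smor C"
   "x \<in> sdom C f" "x \<in> sdom C f'" "germ X C x f = germ X C x f'"
  have "f' \<in> germ X C x f" using a germ_refl by simp
  then have "scmp C g f' \<in> germ X C x (scmp C g f)" using germ_cmp a by blast
  then show ?thesis using germ_eqI cmp_hom a by blast
qed

lemma germ_open: "g \<in> germ X C x f \<Longrightarrow> \<exists>W. openin X W \<and> x \<in> W \<and> W \<subseteq> sdom C f \<inter> sdom C g \<and>
   (\<forall>x'\<in>W. g \<in> germ X C x' f)"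
proof -
  assume a: "g \<in> germ X C x f"
  obtain W where W: "openin X W" "x \<in> W" "W \<subseteq> sdom C f \<inter> sdom C g" "restr f W = restr g W"
    and g: "g \<in> smor C" "scod C g = scod C f" "x \<in> sdom C g" using a unfolding germ_iff by blast
  have "\<forall>x'\<in>W. g \<in> germ X C x' f"
  proof
    fix x' assume x': "x' \<in> W"
    show "g \<in> germ X C x' f" unfolding germ_iff
      by (rule_tac CollectI, intro conjI exI[of _ W]) (use W g x' in auto)
  qed
  then show ?thesis using W by blast
qed

end


context sc begin

definition rep :: "'a \<Rightarrow> ('a set \<Rightarrow> 'm set) \<Rightarrow> 'a set \<Rightarrow> 'm \<Rightarrow> bool" where
  "rep x \<phi> V f \<longleftrightarrow> f \<in> smor C \<and> scod C f = V \<and> x \<in> sdom C f \<and> germ X C x f = \<phi> V"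

lemma stalk2_rep: "\<phi> \<in> stalk2 X C x y \<Longrightarrow> openin X V \<Longrightarrow> y \<in> V \<Longrightarrow> \<exists>f. rep x \<phi> V f"
proof -
  assume a: "\<phi> \<in> stalk2 X C x y" "openin X V" "y \<in> V"
  then have "\<phi> V \<in> stalk X C x V" unfolding stalk2_def by blast
  then obtain f where "f \<in> smor C" "scod C f = V" "x \<in> sdom C f" "\<phi> V = germ X C x f"
    unfolding stalk_def by blast
  then show ?thesis unfolding rep_def by metis
qed

lemma stalk2_out: "\<phi> \<in> stalk2 X C x y \<Longrightarrow> \<not> (openin X V \<and> y \<in> V) \<Longrightarrow> \<phi> V = {}"
  unfolding stalk2_def by blast

lemma stalk2_compat: "\<phi> \<in> stalk2 X C x y \<Longrightarrow> openin X V \<Longrightarrow> openin X V' \<Longrightarrow> y \<in> V \<Longrightarrow> V \<subseteq> V' \<Longrightarrow>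
   rep x \<phi> V f \<Longrightarrow> germ X C x (scmp C (sinc C V V') f) = \<phi> V'"
  unfolding stalk2_def rep_def by blast

lemma stalk2_compat_rep: "\<phi> \<in> stalk2 X C x y \<Longrightarrow> openin X V \<Longrightarrow> openin X V' \<Longrightarrow> y \<in> V \<Longrightarrow> V \<subseteq> V' \<Longrightarrow>
   rep x \<phi> V f \<Longrightarrow> rep x \<phi> V' (scmp C (sinc C V V') f)"
proof -
  assume a: "\<phi> \<in> stalk2 X C x y" "openin X V" "openin X V'" "y \<in> V" "V \<subseteq> V'" "rep x \<phi> V f"
  have "scmp C (sinc C V V') f \<in> smor C \<and> sdom C (scmp C (sinc C V V') f) = sdom C f \<and>
     scod C (scmp C (sinc C V V') f) = V'"
    using cmp_hom[of f "sinc C V V'"] inc_hom[of V V'] a unfolding rep_def by auto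
  then show ?thesis using stalk2_compat[OF a] a(6) unfolding rep_def by auto
qed

lemma rep_mor: "rep x \<phi> V f \<Longrightarrow> f \<in> smor C \<and> scod C f = V \<and> x \<in> sdom C f \<and> germ X C x f = \<phi> V"
  unfolding rep_def by blast

lemma stalk2_I:
  assumes "\<And>V. openin X V \<Longrightarrow> y \<in> V \<Longrightarrow> \<exists>f. rep x \<phi> V f"
    and "\<And>V. \<not> (openin X V \<and> y \<in> V) \<Longrightarrow> \<phi> V = {}"
    and "\<And>V V' f. openin X V \<Longrightarrow> openin X V' \<Longrightarrow> y \<in> V \<Longrightarrow> V \<subseteq> V' \<Longrightarrow> rep x \<phi> V f \<Longrightarrow>
       germ X C x (scmp C (sinc C V V') f) = \<phi> V'"
  shows "\<phi> \<in> stalk2 X C x y"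
proof -
  have "\<forall>V. openin X V \<and> y \<in> V \<longrightarrow> \<phi> V \<in> stalk X C x V"
  proof (intro allI impI)
    fix V assume "openin X V \<and> y \<in> V"
    then obtain f where "rep x \<phi> V f" using assms(1) by blast
    then show "\<phi> V \<in> stalk X C x V" unfolding rep_def stalk_def by blast
  qed
  moreover have "\<forall>V V' f. openin X V \<and> openin X V' \<and> y \<in> V \<and> V \<subseteq> V' \<and>
        f \<in> smor C \<and> scod C f = V \<and> x \<in> sdom C f \<and> germ X C x f = \<phi> V \<longrightarrow>
        germ X C x (scmp C (sinc C V V') f) = \<phi> V'"
    using assms(3) unfolding rep_def by blast
  ultimately show ?thesis unfolding stalk2_def using assms(2) by blast
qed

lemma stalk2_eqI: "\<phi> \<in> stalk2 X C x y \<Longrightarrow> \<psi> \<in> stalk2 X C x y \<Longrightarrow>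
   (\<And>V. openin X V \<Longrightarrow> y \<in> V \<Longrightarrow> \<phi> V = \<psi> V) \<Longrightarrow> \<phi> = \<psi>"
proof
  fix V assume a: "\<phi> \<in> stalk2 X C x y" "\<psi> \<in> stalk2 X C x y" "\<And>V. openin X V \<Longrightarrow> y \<in> V \<Longrightarrow> \<phi> V = \<psi> V"
  show "\<phi> V = \<psi> V"
  proof (cases "openin X V \<and> y \<in> V")
    case True then show ?thesis using a by blast
  next
    case False then show ?thesis using stalk2_out a by metis
  qed
qed

lemma scf_indep:
  assumes \<phi>: "\<phi> \<in> stalk2 X C x y"
    and g: "g \<in> smor C" "scod C g = W" "y \<in> sdom C g"
    and g': "g' \<in> smor C" "scod C g' = W" "y \<in> sdom C g'"
    and gg: "germ X C y g = germ X C y g'"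
    and f: "rep x \<phi> (sdom C g) f" and f': "rep x \<phi> (sdom C g') f'"
  shows "germ X C x (scmp C g f) = germ X C x (scmp C g' f')"
proof -
  have "g' \<in> germ X C y g" using gg germ_refl g' by simp
  then obtain N where N: "openin X N" "y \<in> N" "N \<subseteq> sdom C g \<inter> sdom C g'" "restr g N = restr g' N"
    unfolding germ_iff by blast
  obtain k where k: "rep x \<phi> N k" using stalk2_rep[OF \<phi> N(1,2)] by blast
  have k': "k \<in> smor C" "scod C k = N" "x \<in> sdom C k" using k unfolding rep_def by auto
  have og: "openin X (sdom C g)" "openin X (sdom C g')" using mor_open g g' by auto
  have i1: "sinc C N (sdom C g) \<in> smor C \<and> sdom C (sinc C N (sdom C g)) = N \<and> scod C (sinc C N (sdom C g)) = sdom C g"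
    using inc_hom N og by blast
  have i2: "sinc C N (sdom C g') \<in> smor C \<and> sdom C (sinc C N (sdom C g')) = N \<and> scod C (sinc C N (sdom C g')) = sdom C g'"
    using inc_hom N og by blast
  have c1: "rep x \<phi> (sdom C g) (scmp C (sinc C N (sdom C g)) k)"
    using stalk2_compat_rep[OF \<phi> N(1) og(1) N(2) _ k] N by blast
  have c2: "rep x \<phi> (sdom C g') (scmp C (sinc C N (sdom C g')) k)"
    using stalk2_compat_rep[OF \<phi> N(1) og(2) N(2) _ k] N by blast
  have e1: "germ X C x (scmp C g f) = germ X C x (scmp C g (scmp C (sinc C N (sdom C g)) k))"
    using germ_cmp_eq[of f g "scmp C (sinc C N (sdom C g)) k" x] f c1 g unfolding rep_def by auto
  have e2: "germ X C x (scmp C g' f') = germ X C x (scmp C g' (scmp C (sinc C N (sdom C g')) k))"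
    using germ_cmp_eq[of f' g' "scmp C (sinc C N (sdom C g')) k" x] f' c2 g' unfolding rep_def by auto
  have "scmp C g (scmp C (sinc C N (sdom C g)) k) = scmp C (restr g N) k"
    unfolding restr_def using assoc[of k "sinc C N (sdom C g)" g] i1 k' g by simp
  also have "\<dots> = scmp C (restr g' N) k" using N by simp
  also have "\<dots> = scmp C g' (scmp C (sinc C N (sdom C g')) k)"
    unfolding restr_def using assoc[of k "sinc C N (sdom C g')" g'] i2 k' g' by simp
  finally show ?thesis using e1 e2 by simp
qed

definition cwit :: "'a \<Rightarrow> 'a \<Rightarrow> ('a set \<Rightarrow> 'm set) \<Rightarrow> ('a set \<Rightarrow> 'm set) \<Rightarrow> 'a set \<Rightarrow> 'm \<Rightarrow> 'm \<Rightarrow> bool" where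
  "cwit x y \<psi> \<phi> W g f \<longleftrightarrow> rep y \<psi> W g \<and> rep x \<phi> (sdom C g) f"

lemma cwit_ex: "\<psi> \<in> stalk2 X C y z \<Longrightarrow> \<phi> \<in> stalk2 X C x y \<Longrightarrow> openin X W \<Longrightarrow> z \<in> W \<Longrightarrow>
   \<exists>g f. cwit x y \<psi> \<phi> W g f"
proof -
  assume a: "\<psi> \<in> stalk2 X C y z" "\<phi> \<in> stalk2 X C x y" "openin X W" "z \<in> W"
  obtain g where g: "rep y \<psi> W g" using stalk2_rep a by blast
  then have "openin X (sdom C g)" "y \<in> sdom C g" using mor_open unfolding rep_def by auto
  then obtain f where "rep x \<phi> (sdom C g) f" using stalk2_rep a by blast
  then show ?thesis using g unfolding cwit_def by blast
qed

lemma scf_eq: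
  assumes \<psi>: "\<psi> \<in> stalk2 X C y z" and \<phi>: "\<phi> \<in> stalk2 X C x y" and W: "openin X W" "z \<in> W"
    and w: "cwit x y \<psi> \<phi> W g f"
  shows "star_cmp_fam X C x y z \<psi> \<phi> W = germ X C x (scmp C g f)"
proof -
  let ?P = "\<lambda>h. \<exists>g f. g \<in> smor C \<and> scod C g = W \<and> y \<in> sdom C g \<and> germ X C y g = \<psi> W \<and>
                    f \<in> smor C \<and> scod C f = sdom C g \<and> x \<in> sdom C f \<and> germ X C x f = \<phi> (sdom C g) \<and>
                    h = germ X C x (scmp C g f)"
  have "?P (germ X C x (scmp C g f))" using w unfolding cwit_def rep_def by blast
  then have "?P (SOME h. ?P h)" by (rule someI)
  then obtain g' f' where w': "cwit x y \<psi> \<phi> W g' f'" and h: "(SOME h. ?P h) = germ X C x (scmp C g' f')"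
    unfolding cwit_def rep_def by blast
  have "germ X C x (scmp C g' f') = germ X C x (scmp C g f)"
    using scf_indep[OF \<phi>, of g' W g f' f] w w' unfolding cwit_def rep_def by auto
  then show ?thesis unfolding star_cmp_fam_def using W h by simp
qed

lemma scf_out: "\<not> (openin X W \<and> z \<in> W) \<Longrightarrow> star_cmp_fam X C x y z \<psi> \<phi> W = {}"
  unfolding star_cmp_fam_def by auto

lemma cwit_mor: "cwit x y \<psi> \<phi> W g f \<Longrightarrow> scmp C g f \<in> smor C \<and> sdom C (scmp C g f) = sdom C f \<and>
   scod C (scmp C g f) = W \<and> x \<in> sdom C f"
  unfolding cwit_def rep_def using cmp_hom by auto

lemma scf_stalk2: "\<psi> \<in> stalk2 X C y z \<Longrightarrow> \<phi> \<in> stalk2 X C x y \<Longrightarrow> star_cmp_fam X C x y z \<psi> \<phi> \<in> stalk2 X C x z"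
proof (rule stalk2_I)
  assume \<psi>: "\<psi> \<in> stalk2 X C y z" and \<phi>: "\<phi> \<in> stalk2 X C x y"
  { fix W assume W: "openin X W" "z \<in> W"
    obtain g f where w: "cwit x y \<psi> \<phi> W g f" using cwit_ex \<psi> \<phi> W by blast
    have "rep x (star_cmp_fam X C x y z \<psi> \<phi>) W (scmp C g f)"
      using scf_eq[OF \<psi> \<phi> W w] cwit_mor[OF w] unfolding rep_def by auto
    then show "\<exists>h. rep x (star_cmp_fam X C x y z \<psi> \<phi>) W h" by blast }
  { fix W assume "\<not> (openin X W \<and> z \<in> W)"
    then show "star_cmp_fam X C x y z \<psi> \<phi> W = {}" by (rule scf_out) }
  { fix W W' h assume W: "openin X W" "openin X W'" "z \<in> W" "W \<subseteq> W'"
      and h: "rep x (star_cmp_fam X C x y z \<psi> \<phi>) W h"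
    obtain g f where w: "cwit x y \<psi> \<phi> W g f" using cwit_ex \<psi> \<phi> W by blast
    have g: "rep y \<psi> W g" and f: "rep x \<phi> (sdom C g) f" using w unfolding cwit_def by auto
    have i: "sinc C W W' \<in> smor C \<and> sdom C (sinc C W W') = W \<and> scod C (sinc C W W') = W'"
      using inc_hom W by blast
    have g2: "rep y \<psi> W' (scmp C (sinc C W W') g)" using stalk2_compat_rep[OF \<psi> W(1,2,3,4) g] .
    have sd: "sdom C (scmp C (sinc C W W') g) = sdom C g" using cmp_hom i g unfolding rep_def by auto
    have w2: "cwit x y \<psi> \<phi> W' (scmp C (sinc C W W') g) f" using g2 f sd unfolding cwit_def by simp
    have e1: "star_cmp_fam X C x y z \<psi> \<phi> W' = germ X C x (scmp C (scmp C (sinc C W W') g) f)"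
      using scf_eq[OF \<psi> \<phi> W(2) _ w2] W by blast
    have e0: "germ X C x h = germ X C x (scmp C g f)"
      using h scf_eq[OF \<psi> \<phi> W(1,3) w] unfolding rep_def by simp
    have gf: "scmp C g f \<in> smor C \<and> sdom C (scmp C g f) = sdom C f \<and> scod C (scmp C g f) = W \<and> x \<in> sdom C f"
      using cwit_mor w by blast
    have "germ X C x (scmp C (sinc C W W') h) = germ X C x (scmp C (sinc C W W') (scmp C g f))"
      using germ_cmp_eq[of h "sinc C W W'" "scmp C g f" x] h gf i e0 unfolding rep_def by auto
    also have "\<dots> = germ X C x (scmp C (scmp C (sinc C W W') g) f)"
      using assoc[of f g "sinc C W W'"] g f i unfolding rep_def by auto
    finally show "germ X C x (scmp C (sinc C W W') h) = star_cmp_fam X C x y z \<psi> \<phi> W'" using e1 by simp }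
qed


lemma germ_inc_idn: "openin X V \<Longrightarrow> openin X V' \<Longrightarrow> V \<subseteq> V' \<Longrightarrow> x \<in> V \<Longrightarrow>
   germ X C x (sinc C V V') = germ X C x (sidn C V')"
proof -
  assume a: "openin X V" "openin X V'" "V \<subseteq> V'" "x \<in> V"
  have i: "sinc C V V' \<in> smor C \<and> sdom C (sinc C V V') = V \<and> scod C (sinc C V V') = V'" using inc_hom a by blast
  have d: "sidn C V' \<in> smor C \<and> sdom C (sidn C V') = V' \<and> scod C (sidn C V') = V'" using idn_hom a by blast
  have "restr (sidn C V') V = sinc C V V'" unfolding restr_def using idl[of "sinc C V V'"] i d by simp
  then have "germ X C x (sidn C V') = germ X C x (sinc C V V')" using germ_restr_eq[of "sidn C V'" V x] d a by simp
  then show ?thesis by simp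
qed

lemma idfam_stalk2: "star_idfam X C x \<in> stalk2 X C x x"
proof (rule stalk2_I)
  { fix V assume V: "openin X V" "x \<in> V"
    show "\<exists>f. rep x (star_idfam X C x) V f"
      using idn_hom[OF V(1)] V unfolding rep_def star_idfam_def by (intro exI[of _ "sidn C V"]) auto }
  { fix V assume "\<not> (openin X V \<and> x \<in> V)" then show "star_idfam X C x V = {}" unfolding star_idfam_def by auto }
  { fix V V' f assume V: "openin X V" "openin X V'" "x \<in> V" "V \<subseteq> V'" and f: "rep x (star_idfam X C x) V f"
    have f': "f \<in> smor C" "scod C f = V" "x \<in> sdom C f" "germ X C x f = germ X C x (sidn C V)"
      using f V unfolding rep_def star_idfam_def by auto
    have i: "sinc C V V' \<in> smor C \<and> sdom C (sinc C V V') = V \<and> scod C (sinc C V V') = V'" using inc_hom V by blast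
    have d: "sidn C V \<in> smor C \<and> sdom C (sidn C V) = V \<and> scod C (sidn C V) = V" using idn_hom V by blast
    have "germ X C x (scmp C (sinc C V V') f) = germ X C x (scmp C (sinc C V V') (sidn C V))"
      using germ_cmp_eq[of f "sinc C V V'" "sidn C V" x] f' i d V by auto
    also have "\<dots> = germ X C x (sinc C V V')" using idr[of "sinc C V V'"] i by simp
    also have "\<dots> = germ X C x (sidn C V')" using germ_inc_idn V by blast
    finally show "germ X C x (scmp C (sinc C V V') f) = star_idfam X C x V'" unfolding star_idfam_def using V by auto }
qed

lemma rep_idfam: "openin X V \<Longrightarrow> x \<in> V \<Longrightarrow> rep x (star_idfam X C x) V (sidn C V)"
  using idn_hom unfolding rep_def star_idfam_def by auto

lemma scf_idl: "\<phi> \<in> stalk2 X C x y \<Longrightarrow> star_cmp_fam X C x y y (star_idfam X C y) \<phi> = \<phi>"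
proof (rule stalk2_eqI)
  assume \<phi>: "\<phi> \<in> stalk2 X C x y"
  show "star_cmp_fam X C x y y (star_idfam X C y) \<phi> \<in> stalk2 X C x y" using scf_stalk2 idfam_stalk2 \<phi> by blast
  fix W assume W: "openin X W" "y \<in> W"
  obtain f where f: "rep x \<phi> W f" using stalk2_rep \<phi> W by blast
  have w: "cwit x y (star_idfam X C y) \<phi> W (sidn C W) f"
    unfolding cwit_def using rep_idfam[OF W] idn_hom[OF W(1)] f by simp
  have "star_cmp_fam X C x y y (star_idfam X C y) \<phi> W = germ X C x (scmp C (sidn C W) f)"
    using scf_eq[OF idfam_stalk2 \<phi> W w] .
  also have "\<dots> = \<phi> W" using idl[of f] f unfolding rep_def by auto
  finally show "star_cmp_fam X C x y y (star_idfam X C y) \<phi> W = \<phi> W" .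
qed

lemma scf_idr: "\<phi> \<in> stalk2 X C x y \<Longrightarrow> star_cmp_fam X C x x y \<phi> (star_idfam X C x) = \<phi>"
proof (rule stalk2_eqI)
  assume \<phi>: "\<phi> \<in> stalk2 X C x y"
  show "star_cmp_fam X C x x y \<phi> (star_idfam X C x) \<in> stalk2 X C x y" using scf_stalk2 idfam_stalk2 \<phi> by blast
  fix W assume W: "openin X W" "y \<in> W"
  obtain g where g: "rep x \<phi> W g" using stalk2_rep \<phi> W by blast
  have g': "g \<in> smor C" "openin X (sdom C g)" "x \<in> sdom C g" using g mor_open unfolding rep_def by auto
  have w: "cwit x x \<phi> (star_idfam X C x) W g (sidn C (sdom C g))"
    unfolding cwit_def using rep_idfam[OF g'(2,3)] g by simp
  have "star_cmp_fam X C x x y \<phi> (star_idfam X C x) W = germ X C x (scmp C g (sidn C (sdom C g)))"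
    using scf_eq[OF \<phi> idfam_stalk2 W w] .
  also have "\<dots> = \<phi> W" using idr[of g] g unfolding rep_def by auto
  finally show "star_cmp_fam X C x x y \<phi> (star_idfam X C x) W = \<phi> W" .
qed

lemma scf_assoc:
  assumes \<phi>: "\<phi> \<in> stalk2 X C a b" and \<psi>: "\<psi> \<in> stalk2 X C b c" and \<theta>: "\<theta> \<in> stalk2 X C c d"
  shows "star_cmp_fam X C a c d \<theta> (star_cmp_fam X C a b c \<psi> \<phi>) = star_cmp_fam X C a b d (star_cmp_fam X C b c d \<theta> \<psi>) \<phi>"
proof (rule stalk2_eqI)
  show "star_cmp_fam X C a c d \<theta> (star_cmp_fam X C a b c \<psi> \<phi>) \<in> stalk2 X C a d"
    using scf_stalk2 \<phi> \<psi> \<theta> by blast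
  show "star_cmp_fam X C a b d (star_cmp_fam X C b c d \<theta> \<psi>) \<phi> \<in> stalk2 X C a d"
    using scf_stalk2 \<phi> \<psi> \<theta> by blast
  fix W assume W: "openin X W" "d \<in> W"
  obtain h where h: "rep c \<theta> W h" using stalk2_rep \<theta> W by blast
  have h': "h \<in> smor C" "openin X (sdom C h)" "c \<in> sdom C h" "scod C h = W" using h mor_open unfolding rep_def by auto
  obtain g where g: "rep b \<psi> (sdom C h) g" using stalk2_rep \<psi> h' by blast
  have g': "g \<in> smor C" "openin X (sdom C g)" "b \<in> sdom C g" "scod C g = sdom C h" using g mor_open unfolding rep_def by auto
  obtain f where f: "rep a \<phi> (sdom C g) f" using stalk2_rep \<phi> g' by blast
  have f': "f \<in> smor C" "a \<in> sdom C f" "scod C f = sdom C g" using f unfolding rep_def by auto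
  have w1: "cwit a b \<psi> \<phi> (sdom C h) g f" unfolding cwit_def using g f by simp
  have e1: "star_cmp_fam X C a b c \<psi> \<phi> (sdom C h) = germ X C a (scmp C g f)" using scf_eq[OF \<psi> \<phi> h'(2,3) w1] .
  have gf: "scmp C g f \<in> smor C \<and> sdom C (scmp C g f) = sdom C f \<and> scod C (scmp C g f) = sdom C h"
    using cmp_hom f' g' by simp
  have w2: "cwit a c \<theta> (star_cmp_fam X C a b c \<psi> \<phi>) W h (scmp C g f)"
    unfolding cwit_def rep_def using rep_mor[OF h] e1 gf f' by simp
  have L: "star_cmp_fam X C a c d \<theta> (star_cmp_fam X C a b c \<psi> \<phi>) W = germ X C a (scmp C h (scmp C g f))"
    using scf_eq[OF \<theta> scf_stalk2[OF \<psi> \<phi>] W w2] .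
  have w3: "cwit b c \<theta> \<psi> W h g" unfolding cwit_def using g h by simp
  have e3: "star_cmp_fam X C b c d \<theta> \<psi> W = germ X C b (scmp C h g)" using scf_eq[OF \<theta> \<psi> W w3] .
  have hg: "scmp C h g \<in> smor C \<and> sdom C (scmp C h g) = sdom C g \<and> scod C (scmp C h g) = W"
    using cmp_hom g' h' by simp
  have w4: "cwit a b (star_cmp_fam X C b c d \<theta> \<psi>) \<phi> W (scmp C h g) f"
    unfolding cwit_def rep_def using hg e3 f g' f' unfolding rep_def by simp
  have R: "star_cmp_fam X C a b d (star_cmp_fam X C b c d \<theta> \<psi>) \<phi> W = germ X C a (scmp C (scmp C h g) f)"
    using scf_eq[OF scf_stalk2[OF \<theta> \<psi>] \<phi> W w4] .
  show "star_cmp_fam X C a c d \<theta> (star_cmp_fam X C a b c \<psi> \<phi>) W = star_cmp_fam X C a b d (star_cmp_fam X C b c d \<theta> \<psi>) \<phi> W"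
    using L R assoc[of f g h] f' g' h' by simp
qed

lemma inv_unique:
  assumes \<phi>: "\<phi> \<in> stalk2 X C x y" and \<psi>: "\<psi> \<in> stalk2 X C y x" and \<psi>': "\<psi>' \<in> stalk2 X C y x"
    and l: "star_cmp_fam X C x y x \<psi> \<phi> = star_idfam X C x"
    and r: "star_cmp_fam X C y x y \<phi> \<psi>' = star_idfam X C y"
  shows "\<psi> = \<psi>'"
proof -
  have "\<psi> = star_cmp_fam X C y y x \<psi> (star_idfam X C y)" using scf_idr \<psi> by simp
  also have "\<dots> = star_cmp_fam X C y y x \<psi> (star_cmp_fam X C y x y \<phi> \<psi>')" using r by simp
  also have "\<dots> = star_cmp_fam X C y x x (star_cmp_fam X C x y x \<psi> \<phi>) \<psi>'" using scf_assoc[OF \<psi>' \<phi> \<psi>] .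
  also have "\<dots> = \<psi>'" using l scf_idl \<psi>' by simp
  finally show ?thesis .
qed

end


locale pp = sc X C for X :: "'a topology" and C :: "('a,'m) sitecat" +
  assumes pp: "pre_pseudogroup X C"
begin

lemma pp_bij: "openin X V \<Longrightarrow> x \<in> topspace X \<Longrightarrow>
   bij_betw (\<lambda>(y, \<phi>). \<phi> V) (SIGMA y:V. stalk2 X C x y) (stalk X C x V)"
  using pp unfolding pre_pseudogroup_def by blast

lemma pp_inv: "m \<in> star_mor X C \<Longrightarrow> \<exists>\<psi> \<in> stalk2 X C (fst (snd m)) (fst m).
        star_cmp_fam X C (fst m) (fst (snd m)) (fst m) \<psi> (snd (snd m)) = star_idfam X C (fst m) \<and>
        star_cmp_fam X C (fst (snd m)) (fst m) (fst (snd m)) (snd (snd m)) \<psi> = star_idfam X C (fst (snd m))"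
  using pp unfolding pre_pseudogroup_def by blast

lemma inj_at: "openin X V \<Longrightarrow> x \<in> topspace X \<Longrightarrow> y \<in> V \<Longrightarrow> y' \<in> V \<Longrightarrow> \<phi> \<in> stalk2 X C x y \<Longrightarrow>
   \<phi>' \<in> stalk2 X C x y' \<Longrightarrow> \<phi> V = \<phi>' V \<Longrightarrow> y = y' \<and> \<phi> = \<phi>'"
proof -
  assume a: "openin X V" "x \<in> topspace X" "y \<in> V" "y' \<in> V" "\<phi> \<in> stalk2 X C x y"
   "\<phi>' \<in> stalk2 X C x y'" "\<phi> V = \<phi>' V"
  have "inj_on (\<lambda>(y, \<phi>). \<phi> V) (SIGMA y:V. stalk2 X C x y)" using pp_bij a bij_betw_def by blast
  then have "(y, \<phi>) = (y', \<phi>')" using a unfolding inj_on_def by auto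
  then show ?thesis by simp
qed

lemma surj_at: "openin X V \<Longrightarrow> f \<in> smor C \<Longrightarrow> scod C f = V \<Longrightarrow> x \<in> sdom C f \<Longrightarrow>
   \<exists>y \<phi>. y \<in> V \<and> \<phi> \<in> stalk2 X C x y \<and> \<phi> V = germ X C x f"
proof -
  assume a: "openin X V" "f \<in> smor C" "scod C f = V" "x \<in> sdom C f"
  have x: "x \<in> topspace X" using a mor_open openin_subset by blast
  have "germ X C x f \<in> stalk X C x V" unfolding stalk_def using a by blast
  then have "germ X C x f \<in> (\<lambda>(y, \<phi>). \<phi> V) ` (SIGMA y:V. stalk2 X C x y)" using pp_bij[OF a(1) x]
    unfolding bij_betw_def by simp
  then show ?thesis by force
qed

lemma top_open: "openin X (topspace X)" by simp

lemma lift: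
  assumes \<phi>: "\<phi> \<in> stalk2 X C x y" and y: "y \<in> topspace X" and V: "openin X V"
    and k: "k \<in> smor C" "scod C k = V" "x \<in> sdom C k"
    and e: "\<phi> (topspace X) = germ X C x (scmp C (sinc C V (topspace X)) k)"
  shows "y \<in> V \<and> \<phi> V = germ X C x k"
proof -
  have x: "x \<in> topspace X" using k mor_open openin_subset by blast
  obtain y' \<theta> where t: "y' \<in> V" "\<theta> \<in> stalk2 X C x y'" "\<theta> V = germ X C x k" using surj_at[OF V k] by blast
  have VX: "V \<subseteq> topspace X" using V openin_subset by blast
  have "\<theta> (topspace X) = germ X C x (scmp C (sinc C V (topspace X)) k)"
    using stalk2_compat[OF t(2) V top_open t(1) VX] t k unfolding rep_def by simp
  then have "y' = y \<and> \<theta> = \<phi>" using inj_at[OF top_open x _ y t(2) \<phi>] e t(1) VX by auto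
  then show ?thesis using t by simp
qed

definition pt :: "'m \<Rightarrow> 'a \<Rightarrow> 'a \<times> 'a \<times> ('a set \<Rightarrow> 'm set)" where
  "pt f x = (x, SOME p. p \<in> (SIGMA y:scod C f. stalk2 X C x y) \<and> snd p (scod C f) = germ X C x f)"

lemma pt_props: "f \<in> smor C \<Longrightarrow> x \<in> sdom C f \<Longrightarrow>
   fst (pt f x) = x \<and> fst (snd (pt f x)) \<in> scod C f \<and> snd (snd (pt f x)) \<in> stalk2 X C x (fst (snd (pt f x))) \<and>
   snd (snd (pt f x)) (scod C f) = germ X C x f"
proof -
  assume a: "f \<in> smor C" "x \<in> sdom C f"
  obtain y \<phi> where "y \<in> scod C f \<and> \<phi> \<in> stalk2 X C x y \<and> \<phi> (scod C f) = germ X C x f"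
    using surj_at[OF _ a(1) refl a(2)] mor_open a by blast
  then have "\<exists>p. p \<in> (SIGMA y:scod C f. stalk2 X C x y) \<and> snd p (scod C f) = germ X C x f" by auto
  from someI_ex[OF this] show ?thesis unfolding pt_def by auto
qed

lemma pt_unique: "f \<in> smor C \<Longrightarrow> x \<in> sdom C f \<Longrightarrow> y \<in> scod C f \<Longrightarrow> \<phi> \<in> stalk2 X C x y \<Longrightarrow>
   \<phi> (scod C f) = germ X C x f \<Longrightarrow> pt f x = (x, y, \<phi>)"
proof -
  assume a: "f \<in> smor C" "x \<in> sdom C f" "y \<in> scod C f" "\<phi> \<in> stalk2 X C x y" "\<phi> (scod C f) = germ X C x f"
  have p: "fst (pt f x) = x \<and> fst (snd (pt f x)) \<in> scod C f \<and> snd (snd (pt f x)) \<in> stalk2 X C x (fst (snd (pt f x))) \<and>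
   snd (snd (pt f x)) (scod C f) = germ X C x f" using pt_props a by blast
  have x: "x \<in> topspace X" using a mor_open openin_subset by blast
  have o: "openin X (scod C f)" using a mor_open by blast
  have "fst (snd (pt f x)) = y \<and> snd (snd (pt f x)) = \<phi>"
    using inj_at[OF o x _ a(3) _ a(4), of "fst (snd (pt f x))" "snd (snd (pt f x))"] p a(5) by simp
  then show ?thesis using p by (simp add: prod_eq_iff)
qed

lemma star_mor_iff: "(x, y, \<phi>) \<in> star_mor X C \<longleftrightarrow> x \<in> topspace X \<and> y \<in> topspace X \<and> \<phi> \<in> stalk2 X C x y"
  unfolding star_mor_def by simp

lemma pt_star_mor: "f \<in> smor C \<Longrightarrow> x \<in> sdom C f \<Longrightarrow> pt f x \<in> star_mor X C"
proof -
  assume a: "f \<in> smor C" "x \<in> sdom C f"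
  have p: "fst (pt f x) = x \<and> fst (snd (pt f x)) \<in> scod C f \<and> snd (snd (pt f x)) \<in> stalk2 X C x (fst (snd (pt f x)))"
    using pt_props a by blast
  have "x \<in> topspace X" "scod C f \<subseteq> topspace X" using a mor_open openin_subset by auto
  then have "fst (pt f x) \<in> topspace X \<and> fst (snd (pt f x)) \<in> topspace X \<and> snd (snd (pt f x)) \<in> stalk2 X C (fst (pt f x)) (fst (snd (pt f x)))"
    using p by auto
  then show ?thesis unfolding star_mor_def by (cases "pt f x") auto
qed

lemma pt_X: "f \<in> smor C \<Longrightarrow> x \<in> sdom C f \<Longrightarrow>
   snd (snd (pt f x)) (topspace X) = germ X C x (scmp C (sinc C (scod C f) (topspace X)) f)"
proof -
  assume a: "f \<in> smor C" "x \<in> sdom C f"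
  have p: "fst (pt f x) = x \<and> fst (snd (pt f x)) \<in> scod C f \<and> snd (snd (pt f x)) \<in> stalk2 X C x (fst (snd (pt f x))) \<and>
   snd (snd (pt f x)) (scod C f) = germ X C x f" using pt_props a by blast
  have o: "openin X (scod C f)" "scod C f \<subseteq> topspace X" using a mor_open openin_subset by auto
  show ?thesis using stalk2_compat[OF _ o(1) top_open _ o(2), of "snd (snd (pt f x))" x "fst (snd (pt f x))" f]
    p a unfolding rep_def by auto
qed


abbreviation XM :: "'m \<Rightarrow> bool" where "XM f \<equiv> f \<in> smor C \<and> scod C f = topspace X"

lemma GS_iff: "f \<in> shom C (sdom C f) (topspace X) \<longleftrightarrow> XM f"
  unfolding shom_def by auto

lemma basic_iff: "m \<in> star_basic X C f \<longleftrightarrow> m \<in> star_mor X C \<and> fst m \<in> sdom C f \<and> snd (snd m) (topspace X) = germ X C (fst m) f"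
  unfolding star_basic_def by blast

lemma basic_sub: "star_basic X C f \<subseteq> star_mor X C"
  unfolding star_basic_def by blast

lemma basic_pt: "XM f \<Longrightarrow> star_basic X C f = pt f ` sdom C f"
proof
  assume f: "XM f"
  show "pt f ` sdom C f \<subseteq> star_basic X C f"
  proof
    fix m assume "m \<in> pt f ` sdom C f"
    then obtain x where x: "x \<in> sdom C f" "m = pt f x" by blast
    have p: "fst (pt f x) = x" "snd (snd (pt f x)) (topspace X) = germ X C x f" "pt f x \<in> star_mor X C"
      using pt_props[of f x] pt_star_mor[of f x] f x by auto
    show "m \<in> star_basic X C f" unfolding basic_iff using x p by simp
  qed
  show "star_basic X C f \<subseteq> pt f ` sdom C f"
  proof
    fix m assume m: "m \<in> star_basic X C f"
    obtain x y \<phi> where e: "m = (x, y, \<phi>)" by (cases m) auto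
    have "x \<in> sdom C f" "y \<in> topspace X" "\<phi> \<in> stalk2 X C x y" "\<phi> (topspace X) = germ X C x f"
      using m unfolding basic_iff e star_mor_iff by auto
    then have "pt f x = m" using pt_unique[of f x y \<phi>] f e by auto
    then show "m \<in> pt f ` sdom C f" using \<open>x \<in> sdom C f\<close> by blast
  qed
qed

lemma cover: "m \<in> star_mor X C \<Longrightarrow> \<exists>f. XM f \<and> m \<in> star_basic X C f"
proof -
  assume m: "m \<in> star_mor X C"
  obtain x y \<phi> where e: "m = (x, y, \<phi>)" by (cases m) auto
  have s: "x \<in> topspace X" "y \<in> topspace X" "\<phi> \<in> stalk2 X C x y" using m e star_mor_iff by auto
  obtain f where f: "rep x \<phi> (topspace X) f" using stalk2_rep[OF s(3) top_open s(2)] by blast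
  then show ?thesis unfolding basic_iff rep_def using m e by auto
qed

definition GS where "GS = {star_basic X C f | f. f \<in> shom C (sdom C f) (topspace X)}"

lemma star_top_eq: "star_top X C = subtopology (topology_generated_by GS) (star_mor X C)"
  unfolding star_top_def GS_def by simp

lemma topspace_star: "topspace (star_top X C) = star_mor X C"
proof -
  have "star_mor X C \<subseteq> \<Union>GS"
  proof
    fix m assume "m \<in> star_mor X C"
    then obtain f where "XM f" "m \<in> star_basic X C f" using cover by blast
    then show "m \<in> \<Union>GS" unfolding GS_def using GS_iff by blast
  qed
  then show ?thesis unfolding star_top_eq by auto
qed

lemma basic_open: "XM f \<Longrightarrow> openin (star_top X C) (star_basic X C f)"
proof -
  assume f: "XM f"
  have "star_basic X C f \<in> GS" unfolding GS_def using f GS_iff by blast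
  then have "openin (topology_generated_by GS) (star_basic X C f)" by (rule topology_generated_by_Basis)
  then show ?thesis unfolding star_top_eq openin_subtopology using basic_sub by blast
qed

lemma germ_openE: assumes "g \<in> germ X C x f"
  obtains W where "openin X W" "x \<in> W" "W \<subseteq> sdom C f \<inter> sdom C g" "\<forall>x'\<in>W. g \<in> germ X C x' f"
proof -
  from germ_open[OF assms] obtain W where "openin X W \<and> x \<in> W \<and> W \<subseteq> sdom C f \<inter> sdom C g \<and> (\<forall>x'\<in>W. g \<in> germ X C x' f)"
    by (rule exE)
  then show ?thesis using that by (elim conjE) assumption
qed

lemma germ_eq_open: "f \<in> smor C \<Longrightarrow> g \<in> smor C \<Longrightarrow> scod C f = scod C g \<Longrightarrow>
   openin X {x \<in> sdom C f \<inter> sdom C g. germ X C x f = germ X C x g}"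
proof (subst openin_subopen, intro ballI)
  assume a: "f \<in> smor C" "g \<in> smor C" "scod C f = scod C g"
  fix x assume x: "x \<in> {x \<in> sdom C f \<inter> sdom C g. germ X C x f = germ X C x g}"
  then have xx: "x \<in> sdom C f" "x \<in> sdom C g" "germ X C x f = germ X C x g" by auto
  have "g \<in> germ X C x f" by (rule iffD1[OF germ_eq_iff[OF a(1,2) xx(1,2)] xx(3)])
  then obtain W where W: "openin X W" "x \<in> W" "W \<subseteq> sdom C f \<inter> sdom C g" "\<forall>x'\<in>W. g \<in> germ X C x' f"
    by (rule germ_openE)
  have "W \<subseteq> {x \<in> sdom C f \<inter> sdom C g. germ X C x f = germ X C x g}"
  proof
    fix x' assume x': "x' \<in> W"
    then have "germ X C x' f = germ X C x' g" using W(4) germ_eqI[OF a(1)] by simp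
    then show "x' \<in> {x \<in> sdom C f \<inter> sdom C g. germ X C x f = germ X C x g}" using x' W(3) by auto
  qed
  then show "\<exists>T. openin X T \<and> x \<in> T \<and> T \<subseteq> {x \<in> sdom C f \<inter> sdom C g. germ X C x f = germ X C x g}"
    using W by blast
qed

lemma basic_int: "XM f \<Longrightarrow> XM g \<Longrightarrow> m \<in> star_basic X C f \<Longrightarrow> m \<in> star_basic X C g \<Longrightarrow>
   \<exists>h. XM h \<and> m \<in> star_basic X C h \<and> star_basic X C h \<subseteq> star_basic X C f \<inter> star_basic X C g"
proof -
  assume f: "XM f" and g: "XM g" and mf: "m \<in> star_basic X C f" and mg: "m \<in> star_basic X C g"
  define N where "N = {x \<in> sdom C f \<inter> sdom C g. germ X C x f = germ X C x g}"
  have N: "openin X N" unfolding N_def using germ_eq_open f g by simp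
  have Nf: "N \<subseteq> sdom C f" unfolding N_def by auto
  define h where "h = restr f N"
  have h: "XM h" "sdom C h = N" unfolding h_def using restr_hom f N Nf by auto
  have gh: "\<And>x. x \<in> N \<Longrightarrow> germ X C x h = germ X C x f \<and> germ X C x h = germ X C x g"
    unfolding h_def using germ_restr_eq f N Nf unfolding N_def by auto
  have "fst m \<in> N" using mf mg unfolding basic_iff N_def by auto
  then have "m \<in> star_basic X C h" using mf gh unfolding basic_iff h(2) by auto
  moreover have "star_basic X C h \<subseteq> star_basic X C f \<inter> star_basic X C g"
  proof
    fix m' assume "m' \<in> star_basic X C h"
    then have m': "m' \<in> star_mor X C" "fst m' \<in> N" "snd (snd m') (topspace X) = germ X C (fst m') h"
      unfolding basic_iff h(2) by auto
    have "fst m' \<in> sdom C f" "fst m' \<in> sdom C g" using m'(2) unfolding N_def by auto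
    moreover have e: "germ X C (fst m') f = germ X C (fst m') g" "germ X C (fst m') h = germ X C (fst m') f"
      using gh[OF m'(2)] by auto
    ultimately show "m' \<in> star_basic X C f \<inter> star_basic X C g" using m' by (simp add: basic_iff)
  qed
  ultimately show ?thesis using h by blast
qed

lemma star_open_iff: "openin (star_top X C) A \<longleftrightarrow>
   A \<subseteq> star_mor X C \<and> (\<forall>m\<in>A. \<exists>f. XM f \<and> m \<in> star_basic X C f \<and> star_basic X C f \<subseteq> A)"
proof
  assume A: "openin (star_top X C) A"
  then obtain B where B: "openin (topology_generated_by GS) B" "A = B \<inter> star_mor X C"
    unfolding star_top_eq openin_subtopology by blast
  have "generate_topology_on GS B" using B(1) openin_topology_generated_by by blast
  then have "\<forall>m\<in>B \<inter> star_mor X C. \<exists>f. XM f \<and> m \<in> star_basic X C f \<and> star_basic X C f \<subseteq> B"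
  proof induct
    case Empty then show ?case by simp
  next
    case (Int a b)
    show ?case
    proof
      fix m assume m: "m \<in> a \<inter> b \<inter> star_mor X C"
      obtain f1 where f1: "XM f1" "m \<in> star_basic X C f1" "star_basic X C f1 \<subseteq> a" using Int m by blast
      obtain f2 where f2: "XM f2" "m \<in> star_basic X C f2" "star_basic X C f2 \<subseteq> b" using Int m by blast
      obtain h where "XM h" "m \<in> star_basic X C h" "star_basic X C h \<subseteq> star_basic X C f1 \<inter> star_basic X C f2"
        using basic_int[OF f1(1) f2(1) f1(2) f2(2)] by blast
      then show "\<exists>f. XM f \<and> m \<in> star_basic X C f \<and> star_basic X C f \<subseteq> a \<inter> b" using f1 f2 by blast
    qed
  next
    case (UN K) then show ?case by blast
  next
    case (Basis s)
    then obtain f where "XM f" "s = star_basic X C f" unfolding GS_def using GS_iff by blast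
    then show ?case by blast
  qed
  then show "A \<subseteq> star_mor X C \<and> (\<forall>m\<in>A. \<exists>f. XM f \<and> m \<in> star_basic X C f \<and> star_basic X C f \<subseteq> A)"
    using B(2) basic_sub by blast
next
  assume A: "A \<subseteq> star_mor X C \<and> (\<forall>m\<in>A. \<exists>f. XM f \<and> m \<in> star_basic X C f \<and> star_basic X C f \<subseteq> A)"
  have "openin (star_top X C) (\<Union>{star_basic X C f | f. XM f \<and> star_basic X C f \<subseteq> A})"
    using basic_open by (intro openin_Union) blast
  moreover have "\<Union>{star_basic X C f | f. XM f \<and> star_basic X C f \<subseteq> A} = A" using A by blast
  ultimately show "openin (star_top X C) A" by simp
qed

lemma cont_into_star:
  assumes "\<And>z. z \<in> topspace T \<Longrightarrow> h z \<in> star_mor X C"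
    and "\<And>f. XM f \<Longrightarrow> openin T {z \<in> topspace T. h z \<in> star_basic X C f}"
  shows "continuous_map T (star_top X C) h"
  unfolding star_top_eq
proof (rule continuous_map_into_subtopology)
  show "h \<in> topspace T \<rightarrow> star_mor X C" using assms(1) by blast
  show "continuous_map T (topology_generated_by GS) h"
  proof (rule continuous_on_generated_topo)
    fix U assume "U \<in> GS"
    then obtain f where f: "XM f" "U = star_basic X C f" unfolding GS_def using GS_iff by blast
    have "h -` U \<inter> topspace T = {z \<in> topspace T. h z \<in> star_basic X C f}" using f by auto
    then show "openin T (h -` U \<inter> topspace T)" using assms(2) f by simp
  next
    show "h ` topspace T \<subseteq> \<Union>GS"
    proof
      fix m assume "m \<in> h ` topspace T"
      then have "m \<in> star_mor X C" using assms(1) by blast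
      then obtain f where "XM f" "m \<in> star_basic X C f" using cover by blast
      then show "m \<in> \<Union>GS" unfolding GS_def using GS_iff by blast
    qed
  qed
qed

end


lemma cmap_mem: "continuous_map A B f \<Longrightarrow> x \<in> topspace A \<Longrightarrow> f x \<in> topspace B"
  unfolding continuous_map_def by blast

lemma local_homeo_via_inv:
  assumes s: "local_homeo G X s" and iv: "homeomorphic_map G G iv"
    and ivi: "\<And>g. g \<in> topspace G \<Longrightarrow> iv (iv g) = g"
    and t: "\<And>g. g \<in> topspace G \<Longrightarrow> t g = s (iv g)"
  shows "local_homeo G X t"
  unfolding local_homeo_def
proof (intro conjI ballI)
  have sc: "continuous_map G X s" using s unfolding local_homeo_def by blast
  have ic: "continuous_map G G iv" using iv homeomorphic_imp_continuous_map by blast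
  show "continuous_map G X t"
    by (rule continuous_map_eq[OF continuous_map_compose[OF ic sc]]) (simp add: t)
  fix g assume g: "g \<in> topspace G"
  have ig: "iv g \<in> topspace G" using cmap_mem[OF ic g] .
  obtain W where W: "openin G W" "iv g \<in> W" "openin X (s ` W)"
    "homeomorphic_map (subtopology G W) (subtopology X (s ` W)) s"
    using s ig unfolding local_homeo_def by blast
  define W' where "W' = {x \<in> topspace G. iv x \<in> W}"
  have W': "openin G W'" unfolding W'_def using openin_continuous_map_preimage[OF ic W(1)] .
  have WG: "W \<subseteq> topspace G" using W(1) openin_subset by blast
  have img: "iv ` (topspace G \<inter> W') = topspace G \<inter> W"
  proof
    show "iv ` (topspace G \<inter> W') \<subseteq> topspace G \<inter> W" unfolding W'_def using cmap_mem[OF ic] by auto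
    show "topspace G \<inter> W \<subseteq> iv ` (topspace G \<inter> W')"
    proof
      fix h assume h: "h \<in> topspace G \<inter> W"
      have "iv h \<in> topspace G" using cmap_mem[OF ic] h by auto
      then have "iv h \<in> topspace G \<inter> W'" unfolding W'_def using ivi h by auto
      then show "h \<in> iv ` (topspace G \<inter> W')" using ivi h by force
    qed
  qed
  have h1: "homeomorphic_map (subtopology G W') (subtopology G W) iv"
    using homeomorphic_map_subtopologies[OF iv img] .
  have h2: "homeomorphic_map (subtopology G W') (subtopology X (s ` W)) (s \<circ> iv)"
    using homeomorphic_map_compose[OF h1 W(4)] .
  have tW: "t ` W' = s ` W"
  proof
    show "t ` W' \<subseteq> s ` W" unfolding W'_def using t by auto
    show "s ` W \<subseteq> t ` W'"
    proof
      fix y assume "y \<in> s ` W"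
      then obtain h where h: "h \<in> W" "y = s h" by blast
      have "h \<in> topspace G" using h WG by blast
      then have "iv h \<in> W'" "t (iv h) = y" unfolding W'_def using ivi t h cmap_mem[OF ic] by auto
      then show "y \<in> t ` W'" by force
    qed
  qed
  show "\<exists>W. openin G W \<and> g \<in> W \<and> openin X (t ` W) \<and> homeomorphic_map (subtopology G W) (subtopology X (t ` W)) t"
  proof (intro exI conjI)
    show "openin G W'" by (rule W')
    show "g \<in> W'" unfolding W'_def using g W(2) by simp
    show "openin X (t ` W')" using tW W(3) by simp
    show "homeomorphic_map (subtopology G W') (subtopology X (t ` W')) t"
      using homeomorphic_map_eq[OF h2] t tW W'_def by (simp add: topspace_subtopology)
  qed
qed

context pp begin

lemma inv_spec: "(x, y, \<phi>) \<in> star_mor X C \<Longrightarrow> \<exists>\<psi>. star_inv X C (x, y, \<phi>) = (y, x, \<psi>) \<and> \<psi> \<in> stalk2 X C y x \<and>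
   star_cmp_fam X C x y x \<psi> \<phi> = star_idfam X C x \<and> star_cmp_fam X C y x y \<phi> \<psi> = star_idfam X C y"
proof -
  assume m: "(x, y, \<phi>) \<in> star_mor X C"
  let ?P = "\<lambda>\<psi>. \<psi> \<in> stalk2 X C y x \<and>
   star_cmp_fam X C x y x \<psi> \<phi> = star_idfam X C x \<and> star_cmp_fam X C y x y \<phi> \<psi> = star_idfam X C y"
  have "\<exists>\<psi>. ?P \<psi>" using pp_inv[OF m] by auto
  then have "?P (SOME \<psi>. ?P \<psi>)" by (rule someI_ex)
  moreover have "star_inv X C (x, y, \<phi>) = (y, x, SOME \<psi>. ?P \<psi>)" unfolding star_inv_def by simp
  ultimately show ?thesis by blast
qed

lemma inv_left_unique: "(x, y, \<phi>) \<in> star_mor X C \<Longrightarrow> \<theta> \<in> stalk2 X C y x \<Longrightarrow>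
   star_cmp_fam X C x y x \<theta> \<phi> = star_idfam X C x \<Longrightarrow> star_inv X C (x, y, \<phi>) = (y, x, \<theta>)"
proof -
  assume m: "(x, y, \<phi>) \<in> star_mor X C" and t: "\<theta> \<in> stalk2 X C y x" "star_cmp_fam X C x y x \<theta> \<phi> = star_idfam X C x"
  obtain \<psi> where p: "star_inv X C (x, y, \<phi>) = (y, x, \<psi>)" "\<psi> \<in> stalk2 X C y x"
     "star_cmp_fam X C y x y \<phi> \<psi> = star_idfam X C y" using inv_spec[OF m] by blast
  have "\<phi> \<in> stalk2 X C x y" using m star_mor_iff by blast
  then have "\<theta> = \<psi>" using inv_unique[OF _ t(1) p(2) t(2) p(3)] by blast
  then show ?thesis using p by simp
qed

lemma inv_mor: "(x, y, \<phi>) \<in> star_mor X C \<Longrightarrow> star_inv X C (x, y, \<phi>) \<in> star_mor X C"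
proof -
  assume m: "(x, y, \<phi>) \<in> star_mor X C"
  obtain \<psi> where p: "star_inv X C (x, y, \<phi>) = (y, x, \<psi>)" "\<psi> \<in> stalk2 X C y x" using inv_spec[OF m] by blast
  then show ?thesis using m star_mor_iff by simp
qed

lemma inv_inv: "m \<in> star_mor X C \<Longrightarrow> star_inv X C (star_inv X C m) = m"
proof -
  assume m: "m \<in> star_mor X C"
  obtain x y \<phi> where e: "m = (x, y, \<phi>)" by (cases m) auto
  have m': "(x, y, \<phi>) \<in> star_mor X C" using m e by simp
  obtain \<psi> where p: "star_inv X C (x, y, \<phi>) = (y, x, \<psi>)" "\<psi> \<in> stalk2 X C y x"
     "star_cmp_fam X C y x y \<phi> \<psi> = star_idfam X C y" using inv_spec[OF m'] by blast
  have "(y, x, \<psi>) \<in> star_mor X C" using inv_mor[OF m'] p by simp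
  then have "star_inv X C (y, x, \<psi>) = (x, y, \<phi>)"
    using inv_left_unique[of y x \<psi> \<phi>] p m' star_mor_iff by blast
  then show ?thesis using e p by simp
qed

lemma star_cmp_eq: "star_cmp X C (y', z, \<psi>) (x, y, \<phi>) = (x, z, star_cmp_fam X C x y z \<psi> \<phi>)"
  unfolding star_cmp_def by simp

lemma cmp_mor: "(y, z, \<psi>) \<in> star_mor X C \<Longrightarrow> (x, y, \<phi>) \<in> star_mor X C \<Longrightarrow>
   (x, z, star_cmp_fam X C x y z \<psi> \<phi>) \<in> star_mor X C"
  using scf_stalk2 star_mor_iff by simp

lemma unit_mor: "x \<in> topspace X \<Longrightarrow> star_unit X C x \<in> star_mor X C"
  unfolding star_unit_def using idfam_stalk2 star_mor_iff by simp


lemma star_mor_cases: "m \<in> star_mor X C \<Longrightarrow> (\<And>x y \<phi>. m = (x, y, \<phi>) \<Longrightarrow> x \<in> topspace X \<Longrightarrow> y \<in> topspace X \<Longrightarrow>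
    \<phi> \<in> stalk2 X C x y \<Longrightarrow> P) \<Longrightarrow> P"
  using star_mor_iff by (cases m) auto

lemma src_cont: "continuous_map (star_top X C) X star_src"
  unfolding continuous_map_def
proof (intro conjI allI impI)
  show "star_src \<in> topspace (star_top X C) \<rightarrow> topspace X"
    unfolding topspace_star star_src_def using star_mor_iff by auto
  fix Op assume Op: "openin X Op"
  show "openin (star_top X C) {m \<in> topspace (star_top X C). star_src m \<in> Op}"
    unfolding star_open_iff topspace_star
  proof (intro conjI ballI)
    show "{m \<in> star_mor X C. star_src m \<in> Op} \<subseteq> star_mor X C" by blast
    fix m assume m: "m \<in> {m \<in> star_mor X C. star_src m \<in> Op}"
    then obtain f where f: "XM f" "m \<in> star_basic X C f" using cover by blast
    have of: "openin X (sdom C f)" using f mor_open by blast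
    define h where "h = restr f (Op \<inter> sdom C f)"
    have h: "XM h" "sdom C h = Op \<inter> sdom C f" unfolding h_def using restr_hom[of f "Op \<inter> sdom C f"] f Op of by auto
    have "fst m \<in> Op" using m unfolding star_src_def by simp
    then have "m \<in> star_basic X C h"
      using f(2) germ_restr_eq[of f "Op \<inter> sdom C f" "fst m"] f Op of h(2) openin_Int[OF Op of] unfolding h_def basic_iff by auto
    moreover have "star_basic X C h \<subseteq> {m \<in> star_mor X C. star_src m \<in> Op}"
      using h by (auto simp: basic_iff star_src_def)
    ultimately show "\<exists>f. XM f \<and> m \<in> star_basic X C f \<and> star_basic X C f \<subseteq> {m \<in> star_mor X C. star_src m \<in> Op}"
      using h by blast
  qed
qed

lemma unit_cont: "continuous_map X (star_top X C) (star_unit X C)"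
proof (rule cont_into_star)
  show "\<And>z. z \<in> topspace X \<Longrightarrow> star_unit X C z \<in> star_mor X C" using unit_mor by blast
  fix f assume f: "XM f"
  have d: "sidn C (topspace X) \<in> smor C" "sdom C (sidn C (topspace X)) = topspace X" "scod C (sidn C (topspace X)) = topspace X"
    using idn_hom top_open by auto
  have "{z \<in> topspace X. star_unit X C z \<in> star_basic X C f} =
     {x \<in> sdom C (sidn C (topspace X)) \<inter> sdom C f. germ X C x (sidn C (topspace X)) = germ X C x f}"
  proof (intro Collect_cong iffI)
    fix z assume "z \<in> topspace X \<and> star_unit X C z \<in> star_basic X C f"
    then show "z \<in> sdom C (sidn C (topspace X)) \<inter> sdom C f \<and> germ X C z (sidn C (topspace X)) = germ X C z f"
      unfolding basic_iff star_unit_def star_idfam_def using d by auto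
  next
    fix z assume z: "z \<in> sdom C (sidn C (topspace X)) \<inter> sdom C f \<and> germ X C z (sidn C (topspace X)) = germ X C z f"
    then have "z \<in> topspace X" using d by auto
    then show "z \<in> topspace X \<and> star_unit X C z \<in> star_basic X C f"
      unfolding basic_iff using z unit_mor unfolding star_unit_def star_idfam_def by auto
  qed
  then show "openin X {z \<in> topspace X. star_unit X C z \<in> star_basic X C f}"
    using germ_eq_open[of "sidn C (topspace X)" f] d f by simp
qed

lemma inv_nbhd:
  assumes m0: "m0 \<in> star_mor X C" and g: "XM g" and ig: "star_inv X C m0 \<in> star_basic X C g"
  shows "\<exists>h. XM h \<and> m0 \<in> star_basic X C h \<and> (\<forall>m'\<in>star_basic X C h. star_inv X C m' \<in> star_basic X C g)"
proof -
  obtain x y \<phi> where e: "m0 = (x, y, \<phi>)" "x \<in> topspace X" "y \<in> topspace X" "\<phi> \<in> stalk2 X C x y"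
    using star_mor_cases[OF m0] by metis
  obtain \<psi> where p: "star_inv X C (x, y, \<phi>) = (y, x, \<psi>)" "\<psi> \<in> stalk2 X C y x"
    "star_cmp_fam X C x y x \<psi> \<phi> = star_idfam X C x" using inv_spec m0 e by blast
  have yg: "y \<in> sdom C g" "\<psi> (topspace X) = germ X C y g" using ig p e unfolding basic_iff by auto
  have og: "openin X (sdom C g)" using g mor_open by blast
  obtain f' where f': "rep x \<phi> (sdom C g) f'" using stalk2_rep[OF e(4) og yg(1)] by blast
  have f'm: "f' \<in> smor C" "scod C f' = sdom C g" "x \<in> sdom C f'" "germ X C x f' = \<phi> (sdom C g)"
    using f' unfolding rep_def by auto
  have w: "cwit x y \<psi> \<phi> (topspace X) g f'" unfolding cwit_def rep_def using g yg f'm by simp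
  have k1: "germ X C x (scmp C g f') = germ X C x (sidn C (topspace X))"
    using scf_eq[OF p(2) e(4) top_open e(2) w] p(3) e(2) unfolding star_idfam_def by simp
  define k where "k = scmp C g f'"
  have k: "k \<in> smor C" "sdom C k = sdom C f'" "scod C k = topspace X" unfolding k_def using cmp_hom f'm g by auto
  have d: "sidn C (topspace X) \<in> smor C" "sdom C (sidn C (topspace X)) = topspace X" "scod C (sidn C (topspace X)) = topspace X"
    using idn_hom top_open by auto
  define N where "N = {z \<in> sdom C k \<inter> sdom C (sidn C (topspace X)). germ X C z k = germ X C z (sidn C (topspace X))}"
  have N: "openin X N" unfolding N_def by (rule germ_eq_open) (use k d in auto)
  have xN: "x \<in> N" unfolding N_def using k1 k f'm e d unfolding k_def by auto
  have Nf: "N \<subseteq> sdom C f'" unfolding N_def using k by auto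
  have gX: "sdom C g \<subseteq> topspace X" using og openin_subset by blast
  define ee where "ee = scmp C (sinc C (sdom C g) (topspace X)) f'"
  have ee: "XM ee" "sdom C ee = sdom C f'" unfolding ee_def using cmp_hom[of f' "sinc C (sdom C g) (topspace X)"]
     inc_hom[OF og top_open gX] f'm by auto
  define h where "h = restr ee N"
  have h: "XM h" "sdom C h = N" unfolding h_def using restr_hom[of ee N] ee N Nf by auto
  have hg: "\<And>z. z \<in> N \<Longrightarrow> germ X C z h = germ X C z ee"
    unfolding h_def using germ_restr_eq[of ee N] ee N Nf by auto
  have "\<phi> (topspace X) = germ X C x ee"
    unfolding ee_def using stalk2_compat[OF e(4) og top_open yg(1) gX f'] by simp
  then have "m0 \<in> star_basic X C h" using m0 e xN hg h(2) unfolding basic_iff by simp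
  moreover have "\<forall>m'\<in>star_basic X C h. star_inv X C m' \<in> star_basic X C g"
  proof
    fix m' assume m': "m' \<in> star_basic X C h"
    then have m'm: "m' \<in> star_mor X C" using basic_sub by blast
    obtain x' y' \<phi>' where e': "m' = (x', y', \<phi>')" "x' \<in> topspace X" "y' \<in> topspace X" "\<phi>' \<in> stalk2 X C x' y'"
      using star_mor_cases[OF m'm] by metis
    have x'N: "x' \<in> N" "\<phi>' (topspace X) = germ X C x' h" using m' e' h unfolding basic_iff by auto
    have "\<phi>' (topspace X) = germ X C x' ee" using x'N hg by simp
    then have l: "y' \<in> sdom C g" "\<phi>' (sdom C g) = germ X C x' f'"
      using lift[OF e'(4) e'(3) og f'm(1,2), of] x'N(1) Nf unfolding ee_def by auto
    obtain w \<theta> where th: "w \<in> topspace X" "\<theta> \<in> stalk2 X C y' w" "\<theta> (topspace X) = germ X C y' g"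
      using surj_at[OF top_open _ _ l(1)] g by blast
    have w': "cwit x' y' \<theta> \<phi>' (topspace X) g f'"
      unfolding cwit_def rep_def using g l th f'm x'N Nf by auto
    have c1: "star_cmp_fam X C x' y' w \<theta> \<phi>' (topspace X) = germ X C x' (scmp C g f')"
      using scf_eq[OF th(2) e'(4) top_open th(1) w'] .
    also have "\<dots> = germ X C x' (sidn C (topspace X))" using x'N(1) unfolding N_def k_def by simp
    also have "\<dots> = star_idfam X C x' (topspace X)" unfolding star_idfam_def using e'(2) by simp
    finally have c: "star_cmp_fam X C x' y' w \<theta> \<phi>' (topspace X) = star_idfam X C x' (topspace X)" .
    have "w = x' \<and> star_cmp_fam X C x' y' w \<theta> \<phi>' = star_idfam X C x'"
      using inj_at[OF top_open e'(2) th(1) e'(2) scf_stalk2[OF th(2) e'(4)] idfam_stalk2 c] .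
    then have "star_inv X C m' = (y', x', \<theta>)"
      using inv_left_unique[of x' y' \<phi>' \<theta>] m'm e' th by auto
    then show "star_inv X C m' \<in> star_basic X C g"
      using inv_mor[of x' y' \<phi>'] m'm e' l th unfolding basic_iff by auto
  qed
  ultimately show ?thesis using h by blast
qed

lemma inv_cont: "continuous_map (star_top X C) (star_top X C) (star_inv X C)"
proof (rule cont_into_star)
  show "\<And>z. z \<in> topspace (star_top X C) \<Longrightarrow> star_inv X C z \<in> star_mor X C"
    unfolding topspace_star using inv_mor star_mor_cases by metis
  fix g assume g: "XM g"
  show "openin (star_top X C) {z \<in> topspace (star_top X C). star_inv X C z \<in> star_basic X C g}"
    unfolding star_open_iff topspace_star
  proof (intro conjI ballI)
    show "{z \<in> star_mor X C. star_inv X C z \<in> star_basic X C g} \<subseteq> star_mor X C" by blast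
    fix m assume m: "m \<in> {z \<in> star_mor X C. star_inv X C z \<in> star_basic X C g}"
    obtain h where "XM h" "m \<in> star_basic X C h" "\<forall>m'\<in>star_basic X C h. star_inv X C m' \<in> star_basic X C g"
      using inv_nbhd[of m g] m g by blast
    then show "\<exists>f. XM f \<and> m \<in> star_basic X C f \<and> star_basic X C f \<subseteq> {z \<in> star_mor X C. star_inv X C z \<in> star_basic X C g}"
      using basic_sub by blast
  qed
qed

end


context pp begin

lemma cmp_nbhd:
  assumes n0: "(y, z, \<psi>) \<in> star_mor X C" and m0: "(x, y, \<phi>) \<in> star_mor X C" and h: "XM h"
    and c: "star_cmp X C (y, z, \<psi>) (x, y, \<phi>) \<in> star_basic X C h"
  shows "\<exists>g k. XM g \<and> XM k \<and> (y, z, \<psi>) \<in> star_basic X C g \<and> (x, y, \<phi>) \<in> star_basic X C k \<and>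
     (\<forall>n' m'. n' \<in> star_basic X C g \<longrightarrow> m' \<in> star_basic X C k \<longrightarrow> fst n' = fst (snd m') \<longrightarrow>
        star_cmp X C n' m' \<in> star_basic X C h)"
proof -
  have s: "y \<in> topspace X" "z \<in> topspace X" "\<psi> \<in> stalk2 X C y z" "x \<in> topspace X" "\<phi> \<in> stalk2 X C x y"
    using n0 m0 star_mor_iff by auto
  have ch: "x \<in> sdom C h" "star_cmp_fam X C x y z \<psi> \<phi> (topspace X) = germ X C x h"
    using c unfolding star_cmp_eq basic_iff by auto
  obtain g where g: "rep y \<psi> (topspace X) g" using stalk2_rep[OF s(3) top_open s(2)] by blast
  have gm: "XM g" "y \<in> sdom C g" "germ X C y g = \<psi> (topspace X)" using g unfolding rep_def by auto
  have og: "openin X (sdom C g)" using gm mor_open by blast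
  have gX: "sdom C g \<subseteq> topspace X" using og openin_subset by blast
  obtain f where f: "rep x \<phi> (sdom C g) f" using stalk2_rep[OF s(5) og gm(2)] by blast
  have fm: "f \<in> smor C" "scod C f = sdom C g" "x \<in> sdom C f" "germ X C x f = \<phi> (sdom C g)"
    using f unfolding rep_def by auto
  have w: "cwit x y \<psi> \<phi> (topspace X) g f" unfolding cwit_def using g f by simp
  have e1: "germ X C x (scmp C g f) = germ X C x h" using scf_eq[OF s(3,5) top_open s(2) w] ch by simp
  define kk where "kk = scmp C g f"
  have kk: "kk \<in> smor C" "sdom C kk = sdom C f" "scod C kk = topspace X" unfolding kk_def using cmp_hom fm gm by auto
  define N where "N = {w \<in> sdom C kk \<inter> sdom C h. germ X C w kk = germ X C w h}"
  have N: "openin X N" unfolding N_def by (rule germ_eq_open) (use kk h in auto)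
  have xN: "x \<in> N" unfolding N_def using e1 kk fm ch unfolding kk_def by auto
  have Nf: "N \<subseteq> sdom C f" unfolding N_def using kk by auto
  define ee where "ee = scmp C (sinc C (sdom C g) (topspace X)) f"
  have ee: "XM ee" "sdom C ee = sdom C f" unfolding ee_def using cmp_hom[of f "sinc C (sdom C g) (topspace X)"]
     inc_hom[OF og top_open gX] fm by auto
  define k where "k = restr ee N"
  have k: "XM k" "sdom C k = N" unfolding k_def using restr_hom[of ee N] ee N Nf by auto
  have kg: "\<And>w. w \<in> N \<Longrightarrow> germ X C w k = germ X C w ee"
    unfolding k_def using germ_restr_eq[of ee N] ee N Nf by auto
  have "\<phi> (topspace X) = germ X C x ee"
    unfolding ee_def using stalk2_compat[OF s(5) og top_open gm(2) gX f] by simp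
  then have mk: "(x, y, \<phi>) \<in> star_basic X C k" using m0 xN kg k(2) unfolding basic_iff by simp
  have ng: "(y, z, \<psi>) \<in> star_basic X C g" using n0 gm unfolding basic_iff by simp
  have "\<forall>n' m'. n' \<in> star_basic X C g \<longrightarrow> m' \<in> star_basic X C k \<longrightarrow> fst n' = fst (snd m') \<longrightarrow>
        star_cmp X C n' m' \<in> star_basic X C h"
  proof (intro allI impI)
    fix n' m' assume n': "n' \<in> star_basic X C g" and m': "m' \<in> star_basic X C k" and st: "fst n' = fst (snd m')"
    have n'm: "n' \<in> star_mor X C" and m'm: "m' \<in> star_mor X C" using n' m' basic_sub by auto
    obtain x' y' \<phi>' where e': "m' = (x', y', \<phi>')" "x' \<in> topspace X" "y' \<in> topspace X" "\<phi>' \<in> stalk2 X C x' y'"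
      using star_mor_cases[OF m'm] by metis
    obtain y2 z' \<psi>' where e2: "n' = (y2, z', \<psi>')" "y2 \<in> topspace X" "z' \<in> topspace X" "\<psi>' \<in> stalk2 X C y2 z'"
      using star_mor_cases[OF n'm] by metis
    have yy: "y2 = y'" using st e' e2 by simp
    have x'N: "x' \<in> N" "\<phi>' (topspace X) = germ X C x' k" using m' e' k unfolding basic_iff by auto
    have "\<phi>' (topspace X) = germ X C x' ee" using x'N kg by simp
    then have l: "y' \<in> sdom C g" "\<phi>' (sdom C g) = germ X C x' f"
      using lift[OF e'(4) e'(3) og fm(1,2)] x'N(1) Nf unfolding ee_def by auto
    have ps: "\<psi>' (topspace X) = germ X C y' g" "\<psi>' \<in> stalk2 X C y' z'" using n' e2 yy unfolding basic_iff by auto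
    have w': "cwit x' y' \<psi>' \<phi>' (topspace X) g f"
      unfolding cwit_def rep_def using gm l ps fm x'N Nf by auto
    have "star_cmp_fam X C x' y' z' \<psi>' \<phi>' (topspace X) = germ X C x' (scmp C g f)"
      using scf_eq[OF ps(2) e'(4) top_open e2(3) w'] .
    also have "\<dots> = germ X C x' h" using x'N(1) unfolding N_def kk_def by simp
    finally have "star_cmp_fam X C x' y' z' \<psi>' \<phi>' (topspace X) = germ X C x' h" .
    moreover have "x' \<in> sdom C h" using x'N(1) unfolding N_def by simp
    moreover have "(x', z', star_cmp_fam X C x' y' z' \<psi>' \<phi>') \<in> star_mor X C"
      using cmp_mor[of y' z' \<psi>' x' \<phi>'] n'm m'm e' e2 yy by simp
    ultimately show "star_cmp X C n' m' \<in> star_basic X C h"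
      unfolding e' e2 yy star_cmp_eq basic_iff by simp
  qed
  then show ?thesis using gm k mk ng by blast
qed

lemma cmp_cont: "continuous_map (subtopology (prod_topology (star_top X C) (star_top X C)) {(g, f). star_src g = star_tgt f})
     (star_top X C) (\<lambda>(g, f). star_cmp X C g f)"
  (is "continuous_map ?D _ _")
proof (rule cont_into_star)
  have tD: "topspace ?D = (star_mor X C \<times> star_mor X C) \<inter> {(g, f). star_src g = star_tgt f}"
    by (simp add: topspace_star)
  show "\<And>z. z \<in> topspace ?D \<Longrightarrow> (case z of (g, f) \<Rightarrow> star_cmp X C g f) \<in> star_mor X C"
  proof -
    fix z assume "z \<in> topspace ?D"
    then obtain n m where z: "z = (n, m)" "n \<in> star_mor X C" "m \<in> star_mor X C" "fst n = fst (snd m)"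
      by (auto simp: topspace_star star_src_def star_tgt_def)
    obtain x y \<phi> where e: "m = (x, y, \<phi>)" using prod_cases3 by blast
    obtain y2 z' \<psi> where e2: "n = (y2, z', \<psi>)" using prod_cases3 by blast
    show "(case z of (g, f) \<Rightarrow> star_cmp X C g f) \<in> star_mor X C"
      using cmp_mor[of y z' \<psi> x \<phi>] z e e2 by (simp add: star_cmp_eq)
  qed
  fix h assume h: "XM h"
  show "openin ?D {z \<in> topspace ?D. (case z of (g, f) \<Rightarrow> star_cmp X C g f) \<in> star_basic X C h}"
  proof (subst openin_subopen, intro ballI)
    fix z assume zz: "z \<in> {z \<in> topspace ?D. (case z of (g, f) \<Rightarrow> star_cmp X C g f) \<in> star_basic X C h}"
    then obtain n m where z: "z = (n, m)" "n \<in> star_mor X C" "m \<in> star_mor X C" "fst n = fst (snd m)"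
      "star_cmp X C n m \<in> star_basic X C h"
      by (auto simp: topspace_star star_src_def star_tgt_def)
    obtain x y \<phi> where e: "m = (x, y, \<phi>)" using prod_cases3 by blast
    obtain y2 z' \<psi> where e2: "n = (y2, z', \<psi>)" using prod_cases3 by blast
    have yy: "y2 = y" using z e e2 by simp
    obtain g k where gk: "XM g" "XM k" "n \<in> star_basic X C g" "m \<in> star_basic X C k"
      "\<forall>n' m'. n' \<in> star_basic X C g \<longrightarrow> m' \<in> star_basic X C k \<longrightarrow> fst n' = fst (snd m') \<longrightarrow>
        star_cmp X C n' m' \<in> star_basic X C h"
      using cmp_nbhd[of y z' \<psi> x \<phi> h] z e e2 yy h by auto
    let ?U = "(star_basic X C g \<times> star_basic X C k) \<inter> {(g, f). star_src g = star_tgt f}"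
    have "openin (prod_topology (star_top X C) (star_top X C)) (star_basic X C g \<times> star_basic X C k)"
      using openin_prod_Times_iff basic_open gk by blast
    then have "openin ?D ?U" by (rule openin_subtopology_Int)
    moreover have "z \<in> ?U" using z gk unfolding star_src_def star_tgt_def by auto
    moreover have "?U \<subseteq> {z \<in> topspace ?D. (case z of (g, f) \<Rightarrow> star_cmp X C g f) \<in> star_basic X C h}"
      using gk basic_sub[THEN subsetD] by (auto simp: topspace_star star_src_def star_tgt_def)
    ultimately show "\<exists>T. openin ?D T \<and> z \<in> T \<and> T \<subseteq> {z \<in> topspace ?D. (case z of (g, f) \<Rightarrow> star_cmp X C g f) \<in> star_basic X C h}"
      by blast
  qed
qed

lemma src_lh: "local_homeo (star_top X C) X star_src"
  unfolding local_homeo_def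
proof (intro conjI ballI)
  show sc: "continuous_map (star_top X C) X star_src" by (rule src_cont)
  fix m assume "m \<in> topspace (star_top X C)"
  then have "m \<in> star_mor X C" by (simp add: topspace_star)
  then obtain f where f: "XM f" "m \<in> star_basic X C f" using cover by blast
  have of: "openin X (sdom C f)" using f mor_open by blast
  have fX: "sdom C f \<subseteq> topspace X" using of openin_subset by blast
  have ps: "\<And>x. x \<in> sdom C f \<Longrightarrow> star_src (pt f x) = x \<and> pt f x \<in> star_basic X C f"
  proof -
    fix x assume x: "x \<in> sdom C f"
    then show "star_src (pt f x) = x \<and> pt f x \<in> star_basic X C f"
      using pt_props[OF _ x] f basic_pt[OF f(1)] unfolding star_src_def by auto
  qed
  have img: "star_src ` star_basic X C f = sdom C f"
  proof
    show "star_src ` star_basic X C f \<subseteq> sdom C f" by (auto simp: basic_iff star_src_def)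
    show "sdom C f \<subseteq> star_src ` star_basic X C f"
    proof
      fix x assume "x \<in> sdom C f"
      then show "x \<in> star_src ` star_basic X C f" using ps by (metis image_eqI)
    qed
  qed
  have Bo: "openin (star_top X C) (star_basic X C f)" using basic_open f by blast
  have BT: "star_basic X C f \<subseteq> topspace (star_top X C)" using basic_sub topspace_star by simp
  show "\<exists>W. openin (star_top X C) W \<and> m \<in> W \<and> openin X (star_src ` W) \<and>
     homeomorphic_map (subtopology (star_top X C) W) (subtopology X (star_src ` W)) star_src"
  proof (intro exI conjI)
    show "openin (star_top X C) (star_basic X C f)" by (rule Bo)
    show "m \<in> star_basic X C f" by (rule f(2))
    show "openin X (star_src ` star_basic X C f)" using img of by simp
    show "homeomorphic_map (subtopology (star_top X C) (star_basic X C f)) (subtopology X (star_src ` star_basic X C f)) star_src"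
      unfolding img
    proof (rule bijective_open_imp_homeomorphic_map)
      show "continuous_map (subtopology (star_top X C) (star_basic X C f)) (subtopology X (sdom C f)) star_src"
        by (rule continuous_map_into_subtopology[OF continuous_map_from_subtopology[OF sc]])
          (auto simp: basic_iff star_src_def)
      show "star_src ` topspace (subtopology (star_top X C) (star_basic X C f)) = topspace (subtopology X (sdom C f))"
        using img BT fX by (simp add: topspace_subtopology Int_absorb1 Int_absorb2)
      show "inj_on star_src (topspace (subtopology (star_top X C) (star_basic X C f)))"
      proof (rule inj_onI)
        fix a b assume a: "a \<in> topspace (subtopology (star_top X C) (star_basic X C f))"
          and b: "b \<in> topspace (subtopology (star_top X C) (star_basic X C f))" and e: "star_src a = star_src b"
        have "a \<in> pt f ` sdom C f" "b \<in> pt f ` sdom C f" using a b basic_pt[OF f(1)] by auto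
        then show "a = b" using e ps by auto
      qed
      show "open_map (subtopology (star_top X C) (star_basic X C f)) (subtopology X (sdom C f)) star_src"
        unfolding open_map_def
      proof (intro allI impI)
        fix U assume U: "openin (subtopology (star_top X C) (star_basic X C f)) U"
        have Uo: "openin (star_top X C) U" using openin_trans_full[OF U Bo] .
        have UB: "U \<subseteq> star_basic X C f" using U openin_subset by (fastforce simp: topspace_subtopology)
        have "openin X (star_src ` U)"
        proof (subst openin_subopen, intro ballI)
          fix x assume "x \<in> star_src ` U"
          then obtain m' where m': "m' \<in> U" "x = star_src m'" by blast
          obtain h where h: "XM h" "m' \<in> star_basic X C h" "star_basic X C h \<subseteq> U"
            using Uo m'(1) unfolding star_open_iff by blast
          define N where "N = {z \<in> sdom C h \<inter> sdom C f. germ X C z h = germ X C z f}"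
          have N: "openin X N" unfolding N_def by (rule germ_eq_open) (use h f in auto)
          have mf: "m' \<in> star_basic X C f" using m' UB by blast
          have xN: "x \<in> N" using h(2) mf m'(2) unfolding N_def star_src_def by (auto simp: basic_iff)
          have "N \<subseteq> star_src ` U"
          proof
            fix z assume z: "z \<in> N"
            then have zf: "z \<in> sdom C f" unfolding N_def by simp
            have p: "star_src (pt f z) = z" "pt f z \<in> star_basic X C f" using ps[OF zf] by auto
            have "pt f z \<in> star_basic X C h" using p z unfolding N_def by (auto simp: basic_iff star_src_def)
            then show "z \<in> star_src ` U" using h(3) p by (metis image_eqI subsetD)
          qed
          then show "\<exists>T. openin X T \<and> x \<in> T \<and> T \<subseteq> star_src ` U" using N xN by blast
        qed
        moreover have "star_src ` U \<subseteq> sdom C f" using UB img by blast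
        ultimately show "openin (subtopology X (sdom C f)) (star_src ` U)"
          using openin_open_subtopology[OF of] by blast
      qed
    qed
  qed
qed


lemma tgt_inv: "m \<in> star_mor X C \<Longrightarrow> star_tgt m = star_src (star_inv X C m)"
proof -
  assume m: "m \<in> star_mor X C"
  obtain x y \<phi> where e: "m = (x, y, \<phi>)" using prod_cases3 by blast
  obtain \<psi> where "star_inv X C (x, y, \<phi>) = (y, x, \<psi>)" using inv_spec m e by blast
  then show ?thesis using e unfolding star_src_def star_tgt_def by simp
qed

lemma inv_homeo: "homeomorphic_map (star_top X C) (star_top X C) (star_inv X C)"
  by (rule homeomorphic_map_involution[OF inv_cont]) (simp add: inv_inv topspace_star)

lemma tgt_cont: "continuous_map (star_top X C) X star_tgt"
  by (rule continuous_map_eq[OF continuous_map_compose[OF inv_cont src_cont]]) (simp add: tgt_inv topspace_star)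

lemma tgt_lh: "local_homeo (star_top X C) X star_tgt"
  by (rule local_homeo_via_inv[OF src_lh inv_homeo]) (simp_all add: inv_inv tgt_inv topspace_star)

theorem star_etale: "etale_groupoid X (star_top X C) star_src star_tgt (star_unit X C) (star_inv X C) (star_cmp X C)"
  unfolding etale_groupoid_def topspace_star
proof (intro conjI ballI impI)
  fix x assume x: "x \<in> topspace X"
  show "star_unit X C x \<in> star_mor X C" using unit_mor x by blast
  show "star_src (star_unit X C x) = x" unfolding star_unit_def star_src_def by simp
  show "star_tgt (star_unit X C x) = x" unfolding star_unit_def star_tgt_def by simp
next
  fix f g assume f: "f \<in> star_mor X C" and g: "g \<in> star_mor X C" and st: "star_src g = star_tgt f"
  obtain a b \<phi> where e: "f = (a, b, \<phi>)" using prod_cases3 by blast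
  obtain b' c \<psi> where e2: "g = (b', c, \<psi>)" using prod_cases3 by blast
  have bb: "b' = b" using st e e2 unfolding star_src_def star_tgt_def by simp
  show "star_cmp X C g f \<in> star_mor X C" using cmp_mor[of b c \<psi> a \<phi>] f g e e2 bb by (simp add: star_cmp_eq)
  show "star_src (star_cmp X C g f) = star_src f" using e e2 by (simp add: star_cmp_eq star_src_def)
  show "star_tgt (star_cmp X C g f) = star_tgt g" using e e2 by (simp add: star_cmp_eq star_tgt_def)
next
  fix f g h assume f: "f \<in> star_mor X C" and g: "g \<in> star_mor X C" and h: "h \<in> star_mor X C"
    and st: "star_src g = star_tgt f \<and> star_src h = star_tgt g"
  obtain a b \<phi> where e: "f = (a, b, \<phi>)" using prod_cases3 by blast
  obtain b' c \<psi> where e2: "g = (b', c, \<psi>)" using prod_cases3 by blast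
  obtain c' d \<theta> where e3: "h = (c', d, \<theta>)" using prod_cases3 by blast
  have bb: "b' = b" "c' = c" using st e e2 e3 unfolding star_src_def star_tgt_def by auto
  have s: "\<phi> \<in> stalk2 X C a b" "\<psi> \<in> stalk2 X C b c" "\<theta> \<in> stalk2 X C c d" using f g h e e2 e3 bb star_mor_iff by auto
  show "star_cmp X C h (star_cmp X C g f) = star_cmp X C (star_cmp X C h g) f"
    using e e2 e3 bb scf_assoc[OF s] by (simp add: star_cmp_eq)
next
  fix f assume f: "f \<in> star_mor X C"
  obtain a b \<phi> where e: "f = (a, b, \<phi>)" using prod_cases3 by blast
  have s: "\<phi> \<in> stalk2 X C a b" using f e star_mor_iff by auto
  show "star_cmp X C (star_unit X C (star_tgt f)) f = f"
    using e scf_idl[OF s] by (simp add: star_cmp_eq star_unit_def star_tgt_def)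
  show "star_cmp X C f (star_unit X C (star_src f)) = f"
    using e scf_idr[OF s] by (simp add: star_cmp_eq star_unit_def star_src_def)
  obtain \<psi> where p: "star_inv X C (a, b, \<phi>) = (b, a, \<psi>)" "\<psi> \<in> stalk2 X C b a"
   "star_cmp_fam X C a b a \<psi> \<phi> = star_idfam X C a" "star_cmp_fam X C b a b \<phi> \<psi> = star_idfam X C b"
    using inv_spec f e by blast
  show "star_inv X C f \<in> star_mor X C" using inv_mor f e by simp
  show "star_src (star_inv X C f) = star_tgt f" using p e by (simp add: star_src_def star_tgt_def)
  show "star_tgt (star_inv X C f) = star_src f" using p e by (simp add: star_src_def star_tgt_def)
  show "star_cmp X C (star_inv X C f) f = star_unit X C (star_src f)"
    using p e by (simp add: star_cmp_eq star_unit_def star_src_def)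
  show "star_cmp X C f (star_inv X C f) = star_unit X C (star_tgt f)"
    using p e by (simp add: star_cmp_eq star_unit_def star_tgt_def)
next
  show "continuous_map (star_top X C) X star_src" by (rule src_cont)
  show "continuous_map (star_top X C) X star_tgt" by (rule tgt_cont)
  show "continuous_map X (star_top X C) (star_unit X C)" by (rule unit_cont)
  show "continuous_map (star_top X C) (star_top X C) (star_inv X C)" by (rule inv_cont)
  show "continuous_map (subtopology (prod_topology (star_top X C) (star_top X C)) {(g, f). star_src g = star_tgt f})
     (star_top X C) (\<lambda>(g, f). star_cmp X C g f)" by (rule cmp_cont)
  show "local_homeo (star_top X C) X star_src" by (rule src_lh)
  show "local_homeo (star_top X C) X star_tgt" by (rule tgt_lh)
qed

end


locale ps = pp X C for X :: "'a topology" and C :: "('a,'m) sitecat" +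
  assumes sh: "sheaf_cond X C"
begin

lemma glue:
  assumes "openin X V" "openin X U" "\<forall>A\<in>\<U>. openin X A" "\<Union>\<U> = U" "\<forall>A\<in>\<U>. F A \<in> shom C A V"
    "\<forall>A\<in>\<U>. \<forall>B\<in>\<U>. scmp C (F A) (sinc C (A \<inter> B) A) = scmp C (F B) (sinc C (A \<inter> B) B)"
  shows "\<exists>!f. f \<in> shom C U V \<and> (\<forall>A\<in>\<U>. scmp C f (sinc C A U) = F A)"
proof -
  have "(openin X V \<and> openin X U \<and> (\<forall>A\<in>\<U>. openin X A) \<and> \<Union>\<U> = U \<and>
        (\<forall>A\<in>\<U>. F A \<in> shom C A V) \<and>
        (\<forall>A\<in>\<U>. \<forall>B\<in>\<U>. scmp C (F A) (sinc C (A \<inter> B) A) = scmp C (F B) (sinc C (A \<inter> B) B)))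
      \<longrightarrow> (\<exists>!f. f \<in> shom C U V \<and> (\<forall>A\<in>\<U>. scmp C f (sinc C A U) = F A))"
    using sh unfolding sheaf_cond_def by (rule spec[of _ F, OF spec[of _ \<U>, OF spec[of _ U, OF spec[of _ V]]]])
  moreover have "openin X V \<and> openin X U \<and> (\<forall>A\<in>\<U>. openin X A) \<and> \<Union>\<U> = U \<and>
        (\<forall>A\<in>\<U>. F A \<in> shom C A V) \<and>
        (\<forall>A\<in>\<U>. \<forall>B\<in>\<U>. scmp C (F A) (sinc C (A \<inter> B) A) = scmp C (F B) (sinc C (A \<inter> B) B))"
    using assms by (intro conjI)
  ultimately show ?thesis by (rule mp)
qed

lemma shom_iff: "f \<in> shom C U V \<longleftrightarrow> f \<in> smor C \<and> sdom C f = U \<and> scod C f = V"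
  unfolding shom_def by simp

lemma loc_unique:
  assumes h: "h \<in> shom C U V" and h': "h' \<in> shom C U V"
    and g: "\<And>x. x \<in> U \<Longrightarrow> germ X C x h = germ X C x h'"
  shows "h = h'"
proof -
  have hm: "h \<in> smor C" "sdom C h = U" "scod C h = V" "h' \<in> smor C" "sdom C h' = U" "scod C h' = V"
    using h h' shom_iff by auto
  have oU: "openin X U" "openin X V" using hm mor_open by auto
  define \<U> where "\<U> = {N. openin X N \<and> N \<subseteq> U \<and> restr h N = restr h' N}"
  have cov: "\<Union>\<U> = U"
  proof
    show "\<Union>\<U> \<subseteq> U" unfolding \<U>_def by blast
    show "U \<subseteq> \<Union>\<U>"
    proof
      fix x assume x: "x \<in> U"
      have "h' \<in> germ X C x h" using g[OF x] germ_refl hm x by metis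
      then obtain W where "openin X W" "x \<in> W" "W \<subseteq> sdom C h \<inter> sdom C h'" "restr h W = restr h' W"
        unfolding germ_iff by blast
      then show "x \<in> \<Union>\<U>" unfolding \<U>_def using hm by blast
    qed
  qed
  define F where "F A = restr h A" for A
  have op: "\<forall>A\<in>\<U>. openin X A" unfolding \<U>_def by blast
  have Fh: "\<forall>A\<in>\<U>. F A \<in> shom C A V" unfolding F_def \<U>_def shom_iff using restr_hom hm by auto
  have comp: "\<forall>A\<in>\<U>. \<forall>B\<in>\<U>. scmp C (F A) (sinc C (A \<inter> B) A) = scmp C (F B) (sinc C (A \<inter> B) B)"
  proof (intro ballI)
    fix A B assume A: "A \<in> \<U>" and B: "B \<in> \<U>"
    have AB: "openin X A" "openin X B" "A \<subseteq> U" "B \<subseteq> U" using A B unfolding \<U>_def by auto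
    have dA: "sdom C (F A) = A" "sdom C (F B) = B" unfolding F_def using restr_hom hm AB by auto
    have "scmp C (F A) (sinc C (A \<inter> B) A) = restr (F A) (A \<inter> B)"
      by (simp add: restr_def dA)
    also have "\<dots> = restr h (A \<inter> B)" unfolding F_def using restr_restr[of h A "A \<inter> B"] hm AB openin_Int[OF AB(1,2)] by auto
    also have "\<dots> = restr (F B) (A \<inter> B)" unfolding F_def using restr_restr[of h B "A \<inter> B"] hm AB openin_Int[OF AB(1,2)] by auto
    also have "\<dots> = scmp C (F B) (sinc C (A \<inter> B) B)"
      by (simp add: restr_def dA)
    finally show "scmp C (F A) (sinc C (A \<inter> B) A) = scmp C (F B) (sinc C (A \<inter> B) B)" .
  qed
  have u: "\<exists>!f. f \<in> shom C U V \<and> (\<forall>A\<in>\<U>. scmp C f (sinc C A U) = F A)"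
    using glue[OF oU(2) oU(1) op cov Fh comp] .
  have "\<forall>A\<in>\<U>. scmp C h (sinc C A U) = F A" unfolding F_def restr_def using hm by simp
  moreover have "\<forall>A\<in>\<U>. scmp C h' (sinc C A U) = F A" unfolding F_def \<U>_def restr_def using hm by simp
  ultimately show ?thesis using u h h' by blast
qed

lemma pt_germ: "h \<in> smor C \<Longrightarrow> h' \<in> smor C \<Longrightarrow> scod C h = scod C h' \<Longrightarrow> x \<in> sdom C h \<Longrightarrow> x \<in> sdom C h' \<Longrightarrow>
   germ X C x h = germ X C x h' \<Longrightarrow> pt h x = pt h' x"
proof -
  assume a: "h \<in> smor C" "h' \<in> smor C" "scod C h = scod C h'" "x \<in> sdom C h" "x \<in> sdom C h'"
    "germ X C x h = germ X C x h'"
  have p: "fst (snd (pt h x)) \<in> scod C h" "snd (snd (pt h x)) \<in> stalk2 X C x (fst (snd (pt h x)))"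
    "snd (snd (pt h x)) (scod C h) = germ X C x h" "fst (pt h x) = x" using pt_props[OF a(1,4)] by auto
  have "pt h' x = (x, fst (snd (pt h x)), snd (snd (pt h x)))"
    using pt_unique[OF a(2,5)] p a by simp
  then show ?thesis using p by (simp add: prod_eq_iff)
qed

lemma pt_germ_eq: "h \<in> smor C \<Longrightarrow> h' \<in> smor C \<Longrightarrow> scod C h = scod C h' \<Longrightarrow> x \<in> sdom C h \<Longrightarrow> x \<in> sdom C h' \<Longrightarrow>
   pt h x = pt h' x \<Longrightarrow> germ X C x h = germ X C x h'"
  using pt_props by metis


abbreviation Dc where "Dc \<equiv> hat_cat X (star_top X C) star_src star_tgt (star_unit X C) (star_cmp X C)"

lemma Dc_mor_iff: "(U, V, \<sigma>) \<in> smor Dc \<longleftrightarrow> openin X U \<and> openin X V \<and> \<sigma> \<in> extensional U \<and>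
   continuous_map (subtopology X U) (subtopology (star_top X C) {g \<in> topspace (star_top X C). star_tgt g \<in> V}) \<sigma> \<and>
   (\<forall>x\<in>U. star_src (\<sigma> x) = x)"
  unfolding hat_cat_def by simp

definition Sec :: "'m \<Rightarrow> 'a set \<times> 'a set \<times> ('a \<Rightarrow> 'a \<times> 'a \<times> ('a set \<Rightarrow> 'm set))" where
  "Sec h = (sdom C h, scod C h, restrict (pt h) (sdom C h))"

lemma Sec_mor: "h \<in> smor C \<Longrightarrow> Sec h \<in> smor Dc"
proof -
  assume h: "h \<in> smor C"
  define U where "U = sdom C h"
  define V where "V = scod C h"
  have oU: "openin X U" "openin X V" using h mor_open unfolding U_def V_def by auto
  have UX: "U \<subseteq> topspace X" "V \<subseteq> topspace X" using oU openin_subset by auto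
  have tU: "topspace (subtopology X U) = U" using UX by (simp add: topspace_subtopology Int_absorb1)
  have ptp: "\<And>z. z \<in> U \<Longrightarrow> pt h z \<in> star_mor X C \<and> star_src (pt h z) = z \<and> star_tgt (pt h z) \<in> V"
    using pt_props[OF h] pt_star_mor[OF h] unfolding U_def V_def star_src_def star_tgt_def by auto
  define ee where "ee = scmp C (sinc C V (topspace X)) h"
  have ee: "XM ee" "sdom C ee = U" unfolding ee_def U_def V_def
    using cmp_hom[OF h, of "sinc C V (topspace X)"] inc_hom[OF oU(2) top_open UX(2)] V_def by auto
  have ptX: "\<And>z. z \<in> U \<Longrightarrow> snd (snd (pt h z)) (topspace X) = germ X C z ee"
    using pt_X[OF h] unfolding ee_def U_def V_def by simp
  have c1: "continuous_map (subtopology X U) (star_top X C) (restrict (pt h) U)"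
  proof (rule cont_into_star)
    show "\<And>z. z \<in> topspace (subtopology X U) \<Longrightarrow> restrict (pt h) U z \<in> star_mor X C" using ptp tU by simp
    fix f assume f: "XM f"
    have "{z \<in> topspace (subtopology X U). restrict (pt h) U z \<in> star_basic X C f} =
      {z \<in> sdom C ee \<inter> sdom C f. germ X C z ee = germ X C z f}"
    proof (intro Collect_cong iffI)
      fix z assume "z \<in> topspace (subtopology X U) \<and> restrict (pt h) U z \<in> star_basic X C f"
      then show "z \<in> sdom C ee \<inter> sdom C f \<and> germ X C z ee = germ X C z f"
        using ptp ptX ee tU by (auto simp: basic_iff star_src_def)
    next
      fix z assume "z \<in> sdom C ee \<inter> sdom C f \<and> germ X C z ee = germ X C z f"
      then show "z \<in> topspace (subtopology X U) \<and> restrict (pt h) U z \<in> star_basic X C f"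
        using ptp ptX ee tU by (auto simp: basic_iff star_src_def)
    qed
    moreover have "openin X {z \<in> sdom C ee \<inter> sdom C f. germ X C z ee = germ X C z f}"
      by (rule germ_eq_open) (use ee f in auto)
    moreover have "{z \<in> sdom C ee \<inter> sdom C f. germ X C z ee = germ X C z f} \<subseteq> U" using ee by auto
    ultimately show "openin (subtopology X U) {z \<in> topspace (subtopology X U). restrict (pt h) U z \<in> star_basic X C f}"
      using openin_open_subtopology[OF oU(1)] by simp
  qed
  have c2: "continuous_map (subtopology X U) (subtopology (star_top X C) {g \<in> topspace (star_top X C). star_tgt g \<in> V}) (restrict (pt h) U)"
    by (rule continuous_map_into_subtopology[OF c1]) (use ptp tU topspace_star in auto)
  show ?thesis unfolding Sec_def U_def[symmetric] V_def[symmetric] Dc_mor_iff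
    using oU c2 ptp by auto
qed

lemma Sec_inj: "h \<in> smor C \<Longrightarrow> h' \<in> smor C \<Longrightarrow> Sec h = Sec h' \<Longrightarrow> h = h'"
proof -
  assume h: "h \<in> smor C" and h': "h' \<in> smor C" and e: "Sec h = Sec h'"
  have d: "sdom C h = sdom C h'" "scod C h = scod C h'" "restrict (pt h) (sdom C h) = restrict (pt h') (sdom C h)"
    using e unfolding Sec_def by auto
  have "\<And>x. x \<in> sdom C h \<Longrightarrow> germ X C x h = germ X C x h'"
  proof -
    fix x assume x: "x \<in> sdom C h"
    have "pt h x = pt h' x" using d(3) x by (metis restrict_apply')
    then show "germ X C x h = germ X C x h'" using pt_germ_eq[OF h h' d(2) x] d(1) x by simp
  qed
  then show "h = h'" using loc_unique[of h "sdom C h" "scod C h" h'] h h' d by (simp add: shom_iff)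
qed


lemma local_rep:
  assumes d: "(U, V, \<sigma>) \<in> smor Dc" and x: "x \<in> U"
  shows "\<exists>N k. openin X N \<and> x \<in> N \<and> N \<subseteq> U \<and> k \<in> shom C N V \<and> (\<forall>z\<in>N. \<sigma> z = pt k z)"
proof -
  have dd: "openin X U" "openin X V" "\<sigma> \<in> extensional U"
   "continuous_map (subtopology X U) (subtopology (star_top X C) {g \<in> topspace (star_top X C). star_tgt g \<in> V}) \<sigma>"
   "\<forall>x\<in>U. star_src (\<sigma> x) = x" using d Dc_mor_iff by auto
  have UX: "U \<subseteq> topspace X" "V \<subseteq> topspace X" using dd openin_subset by auto
  have tU: "topspace (subtopology X U) = U" using UX by (simp add: topspace_subtopology Int_absorb1)
  have sm: "\<And>z. z \<in> U \<Longrightarrow> \<sigma> z \<in> star_mor X C \<and> star_tgt (\<sigma> z) \<in> V \<and> star_src (\<sigma> z) = z"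
    using cmap_mem[OF dd(4)] tU dd(5) by (auto simp: topspace_star)
  have c: "continuous_map (subtopology X U) (star_top X C) \<sigma>" using continuous_map_into_fulltopology[OF dd(4)] .
  obtain y \<phi> where e: "\<sigma> x = (x, y, \<phi>)" using sm[OF x] unfolding star_src_def by (metis prod.collapse)
  have s: "y \<in> V" "\<phi> \<in> stalk2 X C x y" "y \<in> topspace X" using sm[OF x] e star_mor_iff unfolding star_tgt_def by auto
  obtain k0 where k0: "rep x \<phi> V k0" using stalk2_rep[OF s(2) dd(2) s(1)] by blast
  have k0m: "k0 \<in> smor C" "scod C k0 = V" "x \<in> sdom C k0" "germ X C x k0 = \<phi> V" using k0 unfolding rep_def by auto
  define ek where "ek = scmp C (sinc C V (topspace X)) k0"
  have ek: "XM ek" "sdom C ek = sdom C k0" unfolding ek_def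
    using cmp_hom[OF k0m(1), of "sinc C V (topspace X)"] inc_hom[OF dd(2) top_open UX(2)] k0m by auto
  have phX: "\<phi> (topspace X) = germ X C x ek"
    unfolding ek_def using stalk2_compat[OF s(2) dd(2) top_open s(1) UX(2) k0] by simp
  define P where "P = {z \<in> topspace (subtopology X U). \<sigma> z \<in> star_basic X C ek}"
  have P: "openin X P" unfolding P_def
    using openin_trans_full[OF openin_continuous_map_preimage[OF c basic_open[OF ek(1)]] dd(1)] .
  define N where "N = P \<inter> sdom C k0"
  have N: "openin X N" unfolding N_def using P k0m mor_open by blast
  have xN: "x \<in> N" unfolding N_def P_def using x tU sm[OF x] e phX k0m ek by (auto simp: basic_iff)
  have NU: "N \<subseteq> U" unfolding N_def P_def using tU by auto
  have Nk: "N \<subseteq> sdom C k0" unfolding N_def by auto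
  have pz: "\<And>z. z \<in> N \<Longrightarrow> \<sigma> z = pt k0 z"
  proof -
    fix z assume z: "z \<in> N"
    have zU: "z \<in> U" using z NU by blast
    obtain y' \<phi>' where e': "\<sigma> z = (z, y', \<phi>')" using sm[OF zU] unfolding star_src_def by (metis prod.collapse)
    have s': "\<phi>' \<in> stalk2 X C z y'" "y' \<in> topspace X" using sm[OF zU] e' star_mor_iff by auto
    have "\<phi>' (topspace X) = germ X C z ek" using z e' unfolding N_def P_def by (auto simp: basic_iff)
    then have l: "y' \<in> V \<and> \<phi>' V = germ X C z k0"
      using lift[OF s'(1,2) dd(2) k0m(1,2)] z Nk unfolding ek_def by auto
    show "\<sigma> z = pt k0 z" using pt_unique[OF k0m(1), of z y' \<phi>'] z Nk l s' e' k0m by auto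
  qed
  define k where "k = restr k0 N"
  have k: "k \<in> shom C N V" unfolding k_def shom_iff using restr_hom[OF k0m(1) N Nk] k0m by simp
  have "\<forall>z\<in>N. \<sigma> z = pt k z"
  proof
    fix z assume z: "z \<in> N"
    have km: "k \<in> smor C" "sdom C k = N" "scod C k = V" using k shom_iff by auto
    have "germ X C z k = germ X C z k0" unfolding k_def using germ_restr_eq[OF k0m(1) N Nk z] .
    then have "pt k z = pt k0 z" using pt_germ[OF km(1) k0m(1)] km k0m z Nk by auto
    then show "\<sigma> z = pt k z" using pz z by simp
  qed
  then show ?thesis using N xN NU k by blast
qed

lemma Sec_surj: "d \<in> smor Dc \<Longrightarrow> \<exists>h\<in>smor C. Sec h = d"
proof -
  assume d0: "d \<in> smor Dc"
  obtain U V \<sigma> where e: "d = (U, V, \<sigma>)" using prod_cases3 by blast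
  have d: "(U, V, \<sigma>) \<in> smor Dc" using d0 e by simp
  have dd: "openin X U" "openin X V" "\<sigma> \<in> extensional U" using d Dc_mor_iff by auto
  define \<U> where "\<U> = {N. openin X N \<and> N \<subseteq> U \<and> (\<exists>k. k \<in> shom C N V \<and> (\<forall>z\<in>N. \<sigma> z = pt k z))}"
  define F where "F A = (SOME k. k \<in> shom C A V \<and> (\<forall>z\<in>A. \<sigma> z = pt k z))" for A
  have FA: "\<And>A. A \<in> \<U> \<Longrightarrow> F A \<in> shom C A V \<and> (\<forall>z\<in>A. \<sigma> z = pt (F A) z)"
  proof -
    fix A assume "A \<in> \<U>"
    then have "\<exists>k. k \<in> shom C A V \<and> (\<forall>z\<in>A. \<sigma> z = pt k z)" unfolding \<U>_def by blast
    then show "F A \<in> shom C A V \<and> (\<forall>z\<in>A. \<sigma> z = pt (F A) z)" unfolding F_def by (rule someI_ex)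
  qed
  have op: "\<forall>A\<in>\<U>. openin X A" unfolding \<U>_def by blast
  have cov: "\<Union>\<U> = U"
  proof
    show "\<Union>\<U> \<subseteq> U" unfolding \<U>_def by blast
    show "U \<subseteq> \<Union>\<U>"
    proof
      fix x assume x: "x \<in> U"
      obtain N k where "openin X N" "x \<in> N" "N \<subseteq> U" "k \<in> shom C N V" "\<forall>z\<in>N. \<sigma> z = pt k z"
        using local_rep[OF d x] by blast
      then show "x \<in> \<Union>\<U>" unfolding \<U>_def by blast
    qed
  qed
  have Fh: "\<forall>A\<in>\<U>. F A \<in> shom C A V" using FA by blast
  have comp: "\<forall>A\<in>\<U>. \<forall>B\<in>\<U>. scmp C (F A) (sinc C (A \<inter> B) A) = scmp C (F B) (sinc C (A \<inter> B) B)"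
  proof (intro ballI)
    fix A B assume A: "A \<in> \<U>" and B: "B \<in> \<U>"
    have AB: "openin X A" "openin X B" "A \<subseteq> U" "B \<subseteq> U" using A B unfolding \<U>_def by auto
    have oAB: "openin X (A \<inter> B)" using AB by blast
    have fa: "F A \<in> smor C" "sdom C (F A) = A" "scod C (F A) = V" "\<forall>z\<in>A. \<sigma> z = pt (F A) z" using FA[OF A] shom_iff by auto
    have fb: "F B \<in> smor C" "sdom C (F B) = B" "scod C (F B) = V" "\<forall>z\<in>B. \<sigma> z = pt (F B) z" using FA[OF B] shom_iff by auto
    have ra: "restr (F A) (A \<inter> B) \<in> shom C (A \<inter> B) V" using restr_hom[OF fa(1) oAB] fa shom_iff by auto
    have rb: "restr (F B) (A \<inter> B) \<in> shom C (A \<inter> B) V" using restr_hom[OF fb(1) oAB] fb shom_iff by auto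
    have "restr (F A) (A \<inter> B) = restr (F B) (A \<inter> B)"
    proof (rule loc_unique[OF ra rb])
      fix z assume z: "z \<in> A \<inter> B"
      have "pt (F A) z = pt (F B) z" using fa(4) fb(4) z by auto
      then have "germ X C z (F A) = germ X C z (F B)" using pt_germ_eq[OF fa(1) fb(1)] fa fb z by auto
      then show "germ X C z (restr (F A) (A \<inter> B)) = germ X C z (restr (F B) (A \<inter> B))"
        using germ_restr_eq[OF fa(1) oAB _ z] germ_restr_eq[OF fb(1) oAB _ z] fa fb by auto
    qed
    then show "scmp C (F A) (sinc C (A \<inter> B) A) = scmp C (F B) (sinc C (A \<inter> B) B)"
      unfolding restr_def using fa fb by simp
  qed
  obtain h where h: "h \<in> shom C U V" "\<forall>A\<in>\<U>. scmp C h (sinc C A U) = F A"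
    using glue[OF dd(2) dd(1) op cov Fh comp] by blast
  have hm: "h \<in> smor C" "sdom C h = U" "scod C h = V" using h shom_iff by auto
  have pth: "\<And>z. z \<in> U \<Longrightarrow> pt h z = \<sigma> z"
  proof -
    fix z assume z: "z \<in> U"
    then obtain A where A: "A \<in> \<U>" "z \<in> A" using cov by blast
    have AU: "openin X A" "A \<subseteq> U" using A unfolding \<U>_def by auto
    have fa: "F A \<in> smor C" "sdom C (F A) = A" "scod C (F A) = V" "\<forall>z\<in>A. \<sigma> z = pt (F A) z" using FA[OF A(1)] shom_iff by auto
    have r: "restr h A = F A" using h(2) A(1) hm unfolding restr_def by simp
    have "germ X C z h = germ X C z (F A)" using germ_restr_eq[OF hm(1) AU(1) _ A(2)] r hm AU by simp
    then have "pt h z = pt (F A) z" using pt_germ[OF hm(1) fa(1)] hm fa z A by simp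
    then show "pt h z = \<sigma> z" using fa(4) A by simp
  qed
  have "restrict (pt h) U = \<sigma>"
  proof
    fix z show "restrict (pt h) U z = \<sigma> z"
      using pth dd(3) by (cases "z \<in> U") (auto simp: extensional_def)
  qed
  then have "Sec h = d" unfolding Sec_def using hm e by simp
  then show ?thesis using hm by blast
qed


lemma Dc_cmp: "scmp Dc n m = (fst m, fst (snd n),
   restrict (\<lambda>x. star_cmp X C (snd (snd n) (star_tgt (snd (snd m) x))) (snd (snd m) x)) (fst m))"
  unfolding hat_cat_def by simp

lemma Sec_cmp: "h1 \<in> smor C \<Longrightarrow> h2 \<in> smor C \<Longrightarrow> sdom C h2 = scod C h1 \<Longrightarrow>
   Sec (scmp C h2 h1) = scmp Dc (Sec h2) (Sec h1)"
proof -
  assume h1: "h1 \<in> smor C" and h2: "h2 \<in> smor C" and d: "sdom C h2 = scod C h1"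
  have c: "scmp C h2 h1 \<in> smor C" "sdom C (scmp C h2 h1) = sdom C h1" "scod C (scmp C h2 h1) = scod C h2"
    using cmp_hom[OF h1 h2 d] by auto
  have pe: "\<And>x. x \<in> sdom C h1 \<Longrightarrow>
     star_cmp X C (restrict (pt h2) (sdom C h2) (star_tgt (restrict (pt h1) (sdom C h1) x))) (restrict (pt h1) (sdom C h1) x)
     = pt (scmp C h2 h1) x"
  proof -
    fix x assume x: "x \<in> sdom C h1"
    obtain y \<phi> where e1: "pt h1 x = (x, y, \<phi>)" using pt_props[OF h1 x] by (metis prod.collapse)
    have p1: "y \<in> scod C h1" "\<phi> \<in> stalk2 X C x y" "\<phi> (scod C h1) = germ X C x h1" using pt_props[OF h1 x] e1 by auto
    have yd: "y \<in> sdom C h2" using p1 d by simp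
    obtain z \<psi> where e2: "pt h2 y = (y, z, \<psi>)" using pt_props[OF h2 yd] by (metis prod.collapse)
    have p2: "z \<in> scod C h2" "\<psi> \<in> stalk2 X C y z" "\<psi> (scod C h2) = germ X C y h2" using pt_props[OF h2 yd] e2 by auto
    have oW: "openin X (scod C h2)" using h2 mor_open by blast
    have w: "cwit x y \<psi> \<phi> (scod C h2) h2 h1" unfolding cwit_def rep_def using h1 h2 d p1 p2 yd x by simp
    have sv: "star_cmp_fam X C x y z \<psi> \<phi> (scod C h2) = germ X C x (scmp C h2 h1)"
      using scf_eq[OF p2(2) p1(2) oW p2(1) w] .
    have "pt (scmp C h2 h1) x = (x, z, star_cmp_fam X C x y z \<psi> \<phi>)"
      using pt_unique[OF c(1), of x z "star_cmp_fam X C x y z \<psi> \<phi>"] c x p2 scf_stalk2[OF p2(2) p1(2)] sv by simp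
    then show "star_cmp X C (restrict (pt h2) (sdom C h2) (star_tgt (restrict (pt h1) (sdom C h1) x))) (restrict (pt h1) (sdom C h1) x)
     = pt (scmp C h2 h1) x"
      using x e1 e2 yd by (simp add: star_tgt_def star_cmp_eq)
  qed
  have r: "restrict (\<lambda>x. star_cmp X C (restrict (pt h2) (sdom C h2) (star_tgt (restrict (pt h1) (sdom C h1) x))) (restrict (pt h1) (sdom C h1) x)) (sdom C h1) = restrict (pt (scmp C h2 h1)) (sdom C h1)"
    by (rule restrict_ext) (rule pe)
  show ?thesis by (simp only: Dc_cmp Sec_def fst_conv snd_conv c(2,3) r)
qed

lemma pt_idfam: "openin X V \<Longrightarrow> f \<in> smor C \<Longrightarrow> scod C f = V \<Longrightarrow> x \<in> sdom C f \<Longrightarrow> x \<in> V \<Longrightarrow>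
   germ X C x f = germ X C x (sidn C V) \<Longrightarrow> pt f x = star_unit X C x"
proof -
  assume a: "openin X V" "f \<in> smor C" "scod C f = V" "x \<in> sdom C f" "x \<in> V" "germ X C x f = germ X C x (sidn C V)"
  have "pt f x = (x, x, star_idfam X C x)"
    using pt_unique[OF a(2,4), of x "star_idfam X C x"] a idfam_stalk2 unfolding star_idfam_def by simp
  then show ?thesis unfolding star_unit_def .
qed

lemma Sec_idn: "openin X U \<Longrightarrow> Sec (sidn C U) = sidn Dc U"
proof -
  assume U: "openin X U"
  have d: "sidn C U \<in> smor C" "sdom C (sidn C U) = U" "scod C (sidn C U) = U" using idn_hom U by auto
  have "\<And>x. x \<in> U \<Longrightarrow> pt (sidn C U) x = star_unit X C x" using pt_idfam[OF U d(1)] d by simp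
  then show ?thesis unfolding Sec_def hat_cat_def using d by (auto intro!: restrict_ext)
qed

lemma Sec_inc: "openin X U \<Longrightarrow> openin X V \<Longrightarrow> U \<subseteq> V \<Longrightarrow> Sec (sinc C U V) = sinc Dc U V"
proof -
  assume U: "openin X U" and V: "openin X V" and UV: "U \<subseteq> V"
  have d: "sinc C U V \<in> smor C" "sdom C (sinc C U V) = U" "scod C (sinc C U V) = V" using inc_hom U V UV by auto
  have "\<And>x. x \<in> U \<Longrightarrow> pt (sinc C U V) x = star_unit X C x"
    using pt_idfam[OF V d(1)] d germ_inc_idn[OF U V UV] UV by auto
  then show ?thesis unfolding Sec_def hat_cat_def using d by (auto intro!: restrict_ext)
qed

lemma Sec_bij: "bij_betw Sec (smor C) (smor Dc)"
  unfolding bij_betw_def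
proof
  show "inj_on Sec (smor C)" using Sec_inj by (meson inj_onI)
  show "Sec ` smor C = smor Dc" using Sec_mor Sec_surj by blast
qed

theorem hat_star_iso: "\<exists>F. sitecat_iso X Dc C F"
proof -
  define F where "F = the_inv_into (smor C) Sec"
  have bF: "bij_betw F (smor Dc) (smor C)" unfolding F_def using bij_betw_the_inv_into[OF Sec_bij] .
  have inj: "inj_on Sec (smor C)" using Sec_bij bij_betw_def by blast
  have SF: "\<And>d. d \<in> smor Dc \<Longrightarrow> F d \<in> smor C \<and> Sec (F d) = d"
    unfolding F_def using Sec_bij f_the_inv_into_f_bij_betw the_inv_into_into[OF inj] bij_betw_def by (metis subset_refl)
  have FS: "\<And>h. h \<in> smor C \<Longrightarrow> F (Sec h) = h" unfolding F_def using the_inv_into_f_f[OF inj] by blast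
  have dc: "\<And>d. d \<in> smor Dc \<Longrightarrow> sdom C (F d) = sdom Dc d \<and> scod C (F d) = scod Dc d"
  proof -
    fix d assume d: "d \<in> smor Dc"
    obtain U V \<sigma> where e: "d = (U, V, \<sigma>)" using prod_cases3 by blast
    have "Sec (F d) = (U, V, \<sigma>)" using SF d e by blast
    then have "sdom C (F d) = U" "scod C (F d) = V" unfolding Sec_def by simp_all
    then show "sdom C (F d) = sdom Dc d \<and> scod C (F d) = scod Dc d" using e unfolding hat_cat_def by simp
  qed
  show ?thesis unfolding sitecat_iso_def
  proof (intro exI conjI ballI allI impI)
    show "bij_betw F (smor Dc) (smor C)" by (rule bF)
    fix f assume f: "f \<in> smor Dc"
    show "sdom C (F f) = sdom Dc f" using dc f by blast
    show "scod C (F f) = scod Dc f" using dc f by blast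
  next
    fix f g assume f: "f \<in> smor Dc" and g: "g \<in> smor Dc" and fg: "sdom Dc g = scod Dc f"
    have a: "F f \<in> smor C" "Sec (F f) = f" "F g \<in> smor C" "Sec (F g) = g" using SF f g by auto
    have "sdom C (F g) = scod C (F f)" using dc f g fg by simp
    then have "Sec (scmp C (F g) (F f)) = scmp Dc g f" using Sec_cmp[OF a(1,3)] a by simp
    then show "F (scmp Dc g f) = scmp C (F g) (F f)" using FS cmp_hom a \<open>sdom C (F g) = scod C (F f)\<close> by metis
  next
    fix U assume U: "openin X U"
    show "F (sidn Dc U) = sidn C U" using Sec_idn[OF U] FS idn_hom[OF U] by metis
  next
    fix U V assume UV: "openin X U \<and> openin X V \<and> U \<subseteq> V"
    show "F (sinc Dc U V) = sinc C U V" using Sec_inc FS inc_hom UV by metis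
  qed
qed

end


locale eg =
  fixes X :: "'a topology" and G :: "'g topology" and s t :: "'g \<Rightarrow> 'a" and i :: "'a \<Rightarrow> 'g"
    and iv :: "'g \<Rightarrow> 'g" and mc :: "'g \<Rightarrow> 'g \<Rightarrow> 'g"
  assumes eg: "etale_groupoid X G s t i iv mc"
    and T1: "t1_space X"
begin

lemmas egd = eg[unfolded etale_groupoid_def]
lemmas eg1 = egd[THEN conjunct1]
lemmas eg2 = egd[THEN conjunct2, THEN conjunct1]
lemmas eg3 = egd[THEN conjunct2, THEN conjunct2, THEN conjunct1]
lemmas eg4 = egd[THEN conjunct2, THEN conjunct2, THEN conjunct2, THEN conjunct1]
lemmas eg5 = egd[THEN conjunct2, THEN conjunct2, THEN conjunct2, THEN conjunct2, THEN conjunct1]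
lemmas eg6 = egd[THEN conjunct2, THEN conjunct2, THEN conjunct2, THEN conjunct2, THEN conjunct2, THEN conjunct1]
lemmas eg7 = egd[THEN conjunct2, THEN conjunct2, THEN conjunct2, THEN conjunct2, THEN conjunct2, THEN conjunct2, THEN conjunct1]
lemmas eg8 = egd[THEN conjunct2, THEN conjunct2, THEN conjunct2, THEN conjunct2, THEN conjunct2, THEN conjunct2, THEN conjunct2, THEN conjunct1]
lemmas eg9 = egd[THEN conjunct2, THEN conjunct2, THEN conjunct2, THEN conjunct2, THEN conjunct2, THEN conjunct2, THEN conjunct2, THEN conjunct2, THEN conjunct1]
lemmas eg10 = egd[THEN conjunct2, THEN conjunct2, THEN conjunct2, THEN conjunct2, THEN conjunct2, THEN conjunct2, THEN conjunct2, THEN conjunct2, THEN conjunct2, THEN conjunct1]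
lemmas eg11 = egd[THEN conjunct2, THEN conjunct2, THEN conjunct2, THEN conjunct2, THEN conjunct2, THEN conjunct2, THEN conjunct2, THEN conjunct2, THEN conjunct2, THEN conjunct2, THEN conjunct1]
lemmas eg12 = egd[THEN conjunct2, THEN conjunct2, THEN conjunct2, THEN conjunct2, THEN conjunct2, THEN conjunct2, THEN conjunct2, THEN conjunct2, THEN conjunct2, THEN conjunct2, THEN conjunct2]

lemma e_i: "x \<in> topspace X \<Longrightarrow> i x \<in> topspace G \<and> s (i x) = x \<and> t (i x) = x"
  by (rule eg1[rule_format])
lemma e_mc: "f \<in> topspace G \<Longrightarrow> g \<in> topspace G \<Longrightarrow> s g = t f \<Longrightarrow>
   mc g f \<in> topspace G \<and> s (mc g f) = s f \<and> t (mc g f) = t g"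
  by (rule eg2[rule_format])
lemma e_assoc: "f \<in> topspace G \<Longrightarrow> g \<in> topspace G \<Longrightarrow> h \<in> topspace G \<Longrightarrow> s g = t f \<Longrightarrow> s h = t g \<Longrightarrow>
   mc h (mc g f) = mc (mc h g) f"
  by (rule eg3[rule_format]) auto
lemma e_unit: "f \<in> topspace G \<Longrightarrow> mc (i (t f)) f = f \<and> mc f (i (s f)) = f"
  by (rule eg4[rule_format])
lemma e_inv: "f \<in> topspace G \<Longrightarrow> iv f \<in> topspace G \<and> s (iv f) = t f \<and> t (iv f) = s f \<and>
        mc (iv f) f = i (s f) \<and> mc f (iv f) = i (t f)"
  by (rule eg5[rule_format])
lemmas e_cont = eg6 eg7 eg8 eg9 eg10 eg11 eg12

lemma s_top: "g \<in> topspace G \<Longrightarrow> s g \<in> topspace X" by (rule cmap_mem[OF e_cont(1)])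
lemma t_top: "g \<in> topspace G \<Longrightarrow> t g \<in> topspace X" by (rule cmap_mem[OF e_cont(2)])

abbreviation H where "H \<equiv> hat_cat X G s t i mc"

lemma H_mor_iff: "(U, V, \<sigma>) \<in> smor H \<longleftrightarrow> openin X U \<and> openin X V \<and> \<sigma> \<in> extensional U \<and>
   continuous_map (subtopology X U) (subtopology G {g \<in> topspace G. t g \<in> V}) \<sigma> \<and> (\<forall>x\<in>U. s (\<sigma> x) = x)"
  unfolding hat_cat_def by simp

lemma H_simps: "sdom H m = fst m" "scod H m = fst (snd m)"
  "scmp H n m = (fst m, fst (snd n), restrict (\<lambda>x. mc (snd (snd n) (t (snd (snd m) x))) (snd (snd m) x)) (fst m))"
  "sidn H U = (U, U, restrict i U)" "sinc H U V = (U, V, restrict i U)"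
  unfolding hat_cat_def by simp_all

lemma H_props: "(U, V, \<sigma>) \<in> smor H \<Longrightarrow> x \<in> U \<Longrightarrow> \<sigma> x \<in> topspace G \<and> t (\<sigma> x) \<in> V \<and> s (\<sigma> x) = x"
proof -
  assume m: "(U, V, \<sigma>) \<in> smor H" and x: "x \<in> U"
  have m': "openin X U" "continuous_map (subtopology X U) (subtopology G {g \<in> topspace G. t g \<in> V}) \<sigma>" "\<forall>x\<in>U. s (\<sigma> x) = x"
    using m H_mor_iff by auto
  have "x \<in> topspace (subtopology X U)" using x m'(1) openin_subset by (auto simp: topspace_subtopology)
  then have "\<sigma> x \<in> topspace (subtopology G {g \<in> topspace G. t g \<in> V})" using cmap_mem[OF m'(2)] by blast
  then show ?thesis using m'(3) x by (auto simp: topspace_subtopology)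
qed

lemma H_cont: "(U, V, \<sigma>) \<in> smor H \<Longrightarrow> continuous_map (subtopology X U) G \<sigma>"
  using H_mor_iff continuous_map_into_fulltopology by blast

lemma topU: "openin X U \<Longrightarrow> topspace (subtopology X U) = U"
  using openin_subset by (auto simp: topspace_subtopology)

lemma H_morI:
  assumes "openin X U" "openin X V" "\<sigma> \<in> extensional U" "continuous_map (subtopology X U) G \<sigma>"
    "\<And>x. x \<in> U \<Longrightarrow> t (\<sigma> x) \<in> V \<and> s (\<sigma> x) = x"
  shows "(U, V, \<sigma>) \<in> smor H"
proof -
  have "continuous_map (subtopology X U) (subtopology G {g \<in> topspace G. t g \<in> V}) \<sigma>"
    by (rule continuous_map_into_subtopology[OF assms(4)]) (use assms cmap_mem[OF assms(4)] topU in auto)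
  then show ?thesis unfolding H_mor_iff using assms by auto
qed

lemma H_cmp_mor:
  assumes m: "(U, V, \<sigma>) \<in> smor H" and n: "(V, W, \<tau>) \<in> smor H"
  shows "(U, W, restrict (\<lambda>x. mc (\<tau> (t (\<sigma> x))) (\<sigma> x)) U) \<in> smor H"
proof (rule H_morI)
  have o: "openin X U" "openin X V" "openin X W" using m n H_mor_iff by auto
  show "openin X U" "openin X W" using o by auto
  show "restrict (\<lambda>x. mc (\<tau> (t (\<sigma> x))) (\<sigma> x)) U \<in> extensional U" by simp
  have cs: "continuous_map (subtopology X U) G \<sigma>" using H_cont[OF m] .
  have ct: "continuous_map (subtopology X U) (subtopology X V) (t \<circ> \<sigma>)"
    by (rule continuous_map_into_subtopology[OF continuous_map_compose[OF cs e_cont(2)]])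
      (use H_props[OF m] topU[OF o(1)] in auto)
  have c1: "continuous_map (subtopology X U) G (\<tau> \<circ> (t \<circ> \<sigma>))" using continuous_map_compose[OF ct H_cont[OF n]] .
  have c2: "continuous_map (subtopology X U) (prod_topology G G) (\<lambda>x. (\<tau> (t (\<sigma> x)), \<sigma> x))"
    unfolding continuous_map_pairwise using c1 cs by (simp add: o_def)
  have c3: "continuous_map (subtopology X U) (subtopology (prod_topology G G) {(g, f). s g = t f}) (\<lambda>x. (\<tau> (t (\<sigma> x)), \<sigma> x))"
    by (rule continuous_map_into_subtopology[OF c2]) (use H_props[OF m] H_props[OF n] topU[OF o(1)] in auto)
  have c4: "continuous_map (subtopology X U) G ((\<lambda>(g, f). mc g f) \<circ> (\<lambda>x. (\<tau> (t (\<sigma> x)), \<sigma> x)))"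
    using continuous_map_compose[OF c3 e_cont(5)] .
  show "continuous_map (subtopology X U) G (restrict (\<lambda>x. mc (\<tau> (t (\<sigma> x))) (\<sigma> x)) U)"
    by (rule continuous_map_eq[OF c4]) (use topU[OF o(1)] in auto)
  fix x assume x: "x \<in> U"
  have a: "\<sigma> x \<in> topspace G" "t (\<sigma> x) \<in> V" "s (\<sigma> x) = x" using H_props[OF m x] by auto
  have b: "\<tau> (t (\<sigma> x)) \<in> topspace G" "t (\<tau> (t (\<sigma> x))) \<in> W" "s (\<tau> (t (\<sigma> x))) = t (\<sigma> x)" using H_props[OF n a(2)] by auto
  show "t (restrict (\<lambda>x. mc (\<tau> (t (\<sigma> x))) (\<sigma> x)) U x) \<in> W \<and> s (restrict (\<lambda>x. mc (\<tau> (t (\<sigma> x))) (\<sigma> x)) U x) = x"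
    using e_mc[OF a(1) b(1) b(3)] x a b by simp
qed

lemma H_idn_mor: "openin X U \<Longrightarrow> openin X V \<Longrightarrow> U \<subseteq> V \<Longrightarrow> (U, V, restrict i U) \<in> smor H"
proof (rule H_morI)
  assume o: "openin X U" "openin X V" "U \<subseteq> V"
  show "openin X U" "openin X V" using o by auto
  show "restrict i U \<in> extensional U" by simp
  show "continuous_map (subtopology X U) G (restrict i U)"
    by (rule continuous_map_eq[OF continuous_map_from_subtopology[OF e_cont(3)]]) (use topU[OF o(1)] in auto)
  fix x assume x: "x \<in> U"
  then have "x \<in> topspace X" using o(1) openin_subset by blast
  then show "t (restrict i U x) \<in> V \<and> s (restrict i U x) = x" using e_i[of x] o x by auto
qed


lemma restrict_eqI: "\<sigma> \<in> extensional U \<Longrightarrow> (\<And>x. x \<in> U \<Longrightarrow> f x = \<sigma> x) \<Longrightarrow> restrict f U = \<sigma>"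
  by (auto simp: extensional_def)

lemma H_mor_cases: "m \<in> smor H \<Longrightarrow> (\<And>U V \<sigma>. m = (U, V, \<sigma>) \<Longrightarrow> (U, V, \<sigma>) \<in> smor H \<Longrightarrow> P) \<Longrightarrow> P"
  by (cases m) auto

lemma H_idl: "(U, V, \<sigma>) \<in> smor H \<Longrightarrow> scmp H (sidn H V) (U, V, \<sigma>) = (U, V, \<sigma>)"
proof -
  assume m: "(U, V, \<sigma>) \<in> smor H"
  have "restrict (\<lambda>x. mc (restrict i V (t (\<sigma> x))) (\<sigma> x)) U = \<sigma>"
  proof (rule restrict_eqI)
    show "\<sigma> \<in> extensional U" using m H_mor_iff by blast
    fix x assume x: "x \<in> U"
    then show "mc (restrict i V (t (\<sigma> x))) (\<sigma> x) = \<sigma> x" using H_props[OF m x] e_unit by simp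
  qed
  then show ?thesis by (simp add: H_simps)
qed

lemma H_idr: "(U, V, \<sigma>) \<in> smor H \<Longrightarrow> scmp H (U, V, \<sigma>) (sidn H U) = (U, V, \<sigma>)"
proof -
  assume m: "(U, V, \<sigma>) \<in> smor H"
  have oU: "openin X U" using m H_mor_iff by blast
  have "restrict (\<lambda>x. mc (\<sigma> (t (restrict i U x))) (restrict i U x)) U = \<sigma>"
  proof (rule restrict_eqI)
    show "\<sigma> \<in> extensional U" using m H_mor_iff by blast
    fix x assume x: "x \<in> U"
    then have xX: "x \<in> topspace X" using oU openin_subset by blast
    have "mc (\<sigma> x) (i (s (\<sigma> x))) = \<sigma> x" using e_unit H_props[OF m x] by blast
    then show "mc (\<sigma> (t (restrict i U x))) (restrict i U x) = \<sigma> x" using x e_i[OF xX] H_props[OF m x] by simp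
  qed
  then show ?thesis by (simp add: H_simps)
qed

lemma H_assoc: "(U, V, \<sigma>) \<in> smor H \<Longrightarrow> (V, W, \<tau>) \<in> smor H \<Longrightarrow> (W, Z, \<rho>) \<in> smor H \<Longrightarrow>
   scmp H (W, Z, \<rho>) (scmp H (V, W, \<tau>) (U, V, \<sigma>)) = scmp H (scmp H (W, Z, \<rho>) (V, W, \<tau>)) (U, V, \<sigma>)"
proof -
  assume m1: "(U, V, \<sigma>) \<in> smor H" and m2: "(V, W, \<tau>) \<in> smor H" and m3: "(W, Z, \<rho>) \<in> smor H"
  have "restrict (\<lambda>x. mc (\<rho> (t (restrict (\<lambda>x. mc (\<tau> (t (\<sigma> x))) (\<sigma> x)) U x)))
            (restrict (\<lambda>x. mc (\<tau> (t (\<sigma> x))) (\<sigma> x)) U x)) U =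
        restrict (\<lambda>x. mc (restrict (\<lambda>x. mc (\<rho> (t (\<tau> x))) (\<tau> x)) V (t (\<sigma> x))) (\<sigma> x)) U"
  proof (rule restrict_ext)
    fix x assume x: "x \<in> U"
    have a: "\<sigma> x \<in> topspace G" "t (\<sigma> x) \<in> V" "s (\<sigma> x) = x" using H_props[OF m1 x] by auto
    have b: "\<tau> (t (\<sigma> x)) \<in> topspace G" "t (\<tau> (t (\<sigma> x))) \<in> W" "s (\<tau> (t (\<sigma> x))) = t (\<sigma> x)" using H_props[OF m2 a(2)] by auto
    have c: "\<rho> (t (\<tau> (t (\<sigma> x)))) \<in> topspace G" "s (\<rho> (t (\<tau> (t (\<sigma> x))))) = t (\<tau> (t (\<sigma> x)))" using H_props[OF m3 b(2)] by auto
    have tm: "t (mc (\<tau> (t (\<sigma> x))) (\<sigma> x)) = t (\<tau> (t (\<sigma> x)))" using e_mc[OF a(1) b(1) b(3)] by simp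
    show "mc (\<rho> (t (restrict (\<lambda>x. mc (\<tau> (t (\<sigma> x))) (\<sigma> x)) U x))) (restrict (\<lambda>x. mc (\<tau> (t (\<sigma> x))) (\<sigma> x)) U x) =
      mc (restrict (\<lambda>x. mc (\<rho> (t (\<tau> x))) (\<tau> x)) V (t (\<sigma> x))) (\<sigma> x)"
      using x a(2) tm e_assoc[OF a(1) b(1) c(1) b(3) c(2)] by simp
  qed
  then show ?thesis by (simp only: H_simps(3) fst_conv snd_conv)
qed

lemma H_sitecat: "is_sitecat X H"
  unfolding is_sitecat_def shom_def
proof (intro conjI allI impI ballI)
  fix f assume f: "f \<in> smor H"
  obtain U V \<sigma> where e: "f = (U, V, \<sigma>)" using prod_cases3 by blast
  show "openin X (sdom H f)" "openin X (scod H f)" using f e H_mor_iff by (auto simp: H_simps)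
next
  fix U assume U: "openin X U"
  show "sidn H U \<in> {f \<in> smor H. sdom H f = U \<and> scod H f = U}"
    using H_idn_mor[OF U U] by (simp add: H_simps)
next
  fix U V W f g assume a: "f \<in> {f \<in> smor H. sdom H f = U \<and> scod H f = V} \<and> g \<in> {f \<in> smor H. sdom H f = V \<and> scod H f = W}"
  obtain U1 V1 \<sigma> where e1: "f = (U1, V1, \<sigma>)" using prod_cases3 by blast
  obtain V2 W2 \<tau> where e2: "g = (V2, W2, \<tau>)" using prod_cases3 by blast
  have e: "f = (U, V, \<sigma>)" "g = (V, W, \<tau>)" "(U, V, \<sigma>) \<in> smor H" "(V, W, \<tau>) \<in> smor H"
    using a e1 e2 by (auto simp: H_simps)
  show "scmp H g f \<in> {f \<in> smor H. sdom H f = U \<and> scod H f = W}"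
    using H_cmp_mor[OF e(3,4)] e by (simp add: H_simps)
next
  fix f assume f: "f \<in> smor H"
  obtain U V \<sigma> where e0: "f = (U, V, \<sigma>)" using prod_cases3 by blast
  have e: "f = (U, V, \<sigma>)" "(U, V, \<sigma>) \<in> smor H" using e0 f by auto
  show "scmp H (sidn H (scod H f)) f = f" using H_idl[OF e(2)] e by (simp add: H_simps(2))
  show "scmp H f (sidn H (sdom H f)) = f" using H_idr[OF e(2)] e by (simp add: H_simps(1))
next
  fix U V W Z f g h assume a: "f \<in> {f \<in> smor H. sdom H f = U \<and> scod H f = V} \<and> g \<in> {f \<in> smor H. sdom H f = V \<and> scod H f = W} \<and>
       h \<in> {f \<in> smor H. sdom H f = W \<and> scod H f = Z}"
  obtain U1 V1 \<sigma> where e1: "f = (U1, V1, \<sigma>)" using prod_cases3 by blast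
  obtain V2 W2 \<tau> where e2: "g = (V2, W2, \<tau>)" using prod_cases3 by blast
  obtain W3 Z3 \<rho> where e3: "h = (W3, Z3, \<rho>)" using prod_cases3 by blast
  have e: "f = (U, V, \<sigma>)" "g = (V, W, \<tau>)" "h = (W, Z, \<rho>)" "(U, V, \<sigma>) \<in> smor H" "(V, W, \<tau>) \<in> smor H"
    "(W, Z, \<rho>) \<in> smor H"
    using a e1 e2 e3 by (auto simp: H_simps)
  show "scmp H h (scmp H g f) = scmp H (scmp H h g) f" using H_assoc[OF e(4,5,6)] e by simp
next
  fix U V assume a: "openin X U \<and> openin X V \<and> U \<subseteq> V"
  show "sinc H U V \<in> {f \<in> smor H. sdom H f = U \<and> scod H f = V}"
    using H_idn_mor a by (simp add: H_simps)
next
  fix U assume "openin X U"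
  show "sinc H U U = sidn H U" by (simp add: H_simps)
next
  fix U V W assume a: "openin X U \<and> openin X V \<and> openin X W \<and> U \<subseteq> V \<and> V \<subseteq> W"
  have "restrict (\<lambda>x. mc (restrict i V (t (restrict i U x))) (restrict i U x)) U = restrict i U"
  proof (rule restrict_ext)
    fix x assume x: "x \<in> U"
    then have xX: "x \<in> topspace X" using a openin_subset by blast
    have "mc (i (t (i x))) (i x) = i x" using e_unit e_i[OF xX] by blast
    then show "mc (restrict i V (t (restrict i U x))) (restrict i U x) = i x" using x a e_i[OF xX] by auto
  qed
  then show "scmp H (sinc H V W) (sinc H U V) = sinc H U W" by (simp add: H_simps)
qed


lemma H_restr: "(U, V, \<sigma>) \<in> smor H \<Longrightarrow> openin X W \<Longrightarrow> W \<subseteq> U \<Longrightarrow>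
   scmp H (U, V, \<sigma>) (sinc H W U) = (W, V, restrict \<sigma> W)"
proof -
  assume m: "(U, V, \<sigma>) \<in> smor H" and W: "openin X W" "W \<subseteq> U"
  have "restrict (\<lambda>x. mc (\<sigma> (t (restrict i W x))) (restrict i W x)) W = restrict \<sigma> W"
  proof (rule restrict_ext)
    fix x assume x: "x \<in> W"
    then have xX: "x \<in> topspace X" using W openin_subset by blast
    have "mc (\<sigma> x) (i (s (\<sigma> x))) = \<sigma> x" using e_unit H_props[OF m] x W by blast
    then show "mc (\<sigma> (t (restrict i W x))) (restrict i W x) = \<sigma> x" using x e_i[OF xX] H_props[OF m] W by auto
  qed
  then show ?thesis by (simp add: H_simps)
qed

lemma H_sheaf: "sheaf_cond X H"
  unfolding sheaf_cond_def
proof (intro allI impI)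
  fix V U \<U> F assume a: "openin X V \<and> openin X U \<and> (\<forall>A\<in>\<U>. openin X A) \<and> \<Union>\<U> = U \<and>
        (\<forall>A\<in>\<U>. F A \<in> shom H A V) \<and>
        (\<forall>A\<in>\<U>. \<forall>B\<in>\<U>. scmp H (F A) (sinc H (A \<inter> B) A) = scmp H (F B) (sinc H (A \<inter> B) B))"
  have oV: "openin X V" and oU: "openin X U" and oA: "\<And>A. A \<in> \<U> \<Longrightarrow> openin X A" and cov: "\<Union>\<U> = U"
    using a by auto
  define sg where "sg A = snd (snd (F A))" for A
  have FA: "\<And>A. A \<in> \<U> \<Longrightarrow> F A = (A, V, sg A) \<and> (A, V, sg A) \<in> smor H"
  proof -
    fix A assume A: "A \<in> \<U>"
    then have "F A \<in> smor H" "sdom H (F A) = A" "scod H (F A) = V" using a unfolding shom_def by auto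
    then show "F A = (A, V, sg A) \<and> (A, V, sg A) \<in> smor H" unfolding sg_def H_simps by (cases "F A") auto
  qed
  have agree: "\<And>A B x. A \<in> \<U> \<Longrightarrow> B \<in> \<U> \<Longrightarrow> x \<in> A \<Longrightarrow> x \<in> B \<Longrightarrow> sg A x = sg B x"
  proof -
    fix A B x assume A: "A \<in> \<U>" and B: "B \<in> \<U>" and x: "x \<in> A" "x \<in> B"
    have AB: "openin X (A \<inter> B)" using oA A B by blast
    have "scmp H (F A) (sinc H (A \<inter> B) A) = scmp H (F B) (sinc H (A \<inter> B) B)" using a A B by blast
    then have "(A \<inter> B, V, restrict (sg A) (A \<inter> B)) = (A \<inter> B, V, restrict (sg B) (A \<inter> B))"
      using H_restr[of A V "sg A" "A \<inter> B"] H_restr[of B V "sg B" "A \<inter> B"] FA[OF A] FA[OF B] AB by auto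
    then have "restrict (sg A) (A \<inter> B) x = restrict (sg B) (A \<inter> B) x" by simp
    then show "sg A x = sg B x" using x by simp
  qed
  define \<sigma> where "\<sigma> = restrict (\<lambda>x. sg (SOME A. A \<in> \<U> \<and> x \<in> A) x) U"
  have \<sigma>A: "\<And>A x. A \<in> \<U> \<Longrightarrow> x \<in> A \<Longrightarrow> \<sigma> x = sg A x"
  proof -
    fix A x assume A: "A \<in> \<U>" and x: "x \<in> A"
    have "\<exists>A. A \<in> \<U> \<and> x \<in> A" using A x by blast
    then have s1: "(SOME A. A \<in> \<U> \<and> x \<in> A) \<in> \<U> \<and> x \<in> (SOME A. A \<in> \<U> \<and> x \<in> A)" by (rule someI_ex)
    have "x \<in> U" using A x cov by blast
    then show "\<sigma> x = sg A x" unfolding \<sigma>_def using agree[OF _ A _ x] s1 by auto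
  qed
  have mem: "(U, V, \<sigma>) \<in> smor H"
  proof (rule H_morI)
    show "openin X U" "openin X V" using oU oV by auto
    show "\<sigma> \<in> extensional U" unfolding \<sigma>_def by simp
    show "continuous_map (subtopology X U) G \<sigma>"
      unfolding continuous_map_def
    proof (intro conjI allI impI)
      show "\<sigma> \<in> topspace (subtopology X U) \<rightarrow> topspace G"
      proof
        fix x assume "x \<in> topspace (subtopology X U)"
        then obtain A where A: "A \<in> \<U>" "x \<in> A" using cov topU[OF oU] by auto
        then show "\<sigma> x \<in> topspace G" using \<sigma>A H_props FA by metis
      qed
      fix Op assume Op: "openin G Op"
      have "{x \<in> topspace (subtopology X U). \<sigma> x \<in> Op} = (\<Union>A\<in>\<U>. {x \<in> topspace (subtopology X A). sg A x \<in> Op})"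
        using \<sigma>A cov topU[OF oU] topU[OF oA] by auto
      moreover have "openin X (\<Union>A\<in>\<U>. {x \<in> topspace (subtopology X A). sg A x \<in> Op})"
      proof (rule openin_Union, clarify)
        fix A assume A: "A \<in> \<U>"
        show "openin X {x \<in> topspace (subtopology X A). sg A x \<in> Op}"
          using openin_trans_full[OF openin_continuous_map_preimage[OF H_cont Op] oA[OF A]] FA[OF A] by blast
      qed
      moreover have "(\<Union>A\<in>\<U>. {x \<in> topspace (subtopology X A). sg A x \<in> Op}) \<subseteq> U"
        using cov topU[OF oA] by auto
      ultimately show "openin (subtopology X U) {x \<in> topspace (subtopology X U). \<sigma> x \<in> Op}"
        using openin_open_subtopology[OF oU] by simp
    qed
    fix x assume x: "x \<in> U"
    then obtain A where A: "A \<in> \<U>" "x \<in> A" using cov by auto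
    then show "t (\<sigma> x) \<in> V \<and> s (\<sigma> x) = x" using \<sigma>A H_props FA by metis
  qed
  have glue_ok: "\<forall>A\<in>\<U>. scmp H (U, V, \<sigma>) (sinc H A U) = F A"
  proof
    fix A assume A: "A \<in> \<U>"
    have "restrict \<sigma> A = sg A"
    proof (rule restrict_eqI)
      show "sg A \<in> extensional A" using FA[OF A] H_mor_iff by blast
      show "\<And>x. x \<in> A \<Longrightarrow> \<sigma> x = sg A x" using \<sigma>A A by blast
    qed
    then show "scmp H (U, V, \<sigma>) (sinc H A U) = F A" using H_restr[OF mem oA[OF A]] A cov FA[OF A] by auto
  qed
  show "\<exists>!f. f \<in> shom H U V \<and> (\<forall>A\<in>\<U>. scmp H f (sinc H A U) = F A)"
  proof (rule ex1I[of _ "(U, V, \<sigma>)"])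
    show "(U, V, \<sigma>) \<in> shom H U V \<and> (\<forall>A\<in>\<U>. scmp H (U, V, \<sigma>) (sinc H A U) = F A)"
      using mem glue_ok unfolding shom_def by (simp add: H_simps)
    fix f assume f: "f \<in> shom H U V \<and> (\<forall>A\<in>\<U>. scmp H f (sinc H A U) = F A)"
    obtain U' V' \<tau> where e: "f = (U', V', \<tau>)" using prod_cases3 by blast
    have f1: "f \<in> smor H" "sdom H f = U" "scod H f = V" using f unfolding shom_def by auto
    then have ee: "U' = U" "V' = V" using e by (simp_all add: H_simps)
    have fm: "(U, V, \<tau>) \<in> smor H" using f1(1) e ee by simp
    have "\<tau> = \<sigma>"
    proof (rule extensionalityI[of _ U])
      show "\<tau> \<in> extensional U" using fm H_mor_iff by blast
      show "\<sigma> \<in> extensional U" unfolding \<sigma>_def by simp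
      fix x assume x: "x \<in> U"
      then obtain A where A: "A \<in> \<U>" "x \<in> A" using cov by auto
      have "scmp H f (sinc H A U) = F A" using f A by blast
      have AU: "A \<subseteq> U" using A cov by blast
      have "scmp H (U, V, \<tau>) (sinc H A U) = F A" using \<open>scmp H f (sinc H A U) = F A\<close> e ee by simp
      then have "(A, V, restrict \<tau> A) = (A, V, sg A)" using H_restr[OF fm oA[OF A(1)] AU] FA[OF A(1)] by simp
      then have "restrict \<tau> A x = sg A x" by simp
      then show "\<tau> x = \<sigma> x" using A \<sigma>A by simp
    qed
    then show "f = (U, V, \<sigma>)" using e ee by simp
  qed
qed

end


sublocale eg \<subseteq> Hs: sc X "hat_cat X G s t i mc"
  by unfold_locales (rule H_sitecat)

context eg begin

lemma sec_ex: "g \<in> topspace G \<Longrightarrow> \<exists>U \<sigma>. openin X U \<and> s g \<in> U \<and> \<sigma> \<in> extensional U \<and>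
   continuous_map (subtopology X U) G \<sigma> \<and> (\<forall>x\<in>U. s (\<sigma> x) = x) \<and> \<sigma> (s g) = g"
proof -
  assume g: "g \<in> topspace G"
  obtain W where W: "openin G W" "g \<in> W" "openin X (s ` W)" "homeomorphic_map (subtopology G W) (subtopology X (s ` W)) s"
    using e_cont(6) g unfolding local_homeo_def by blast
  obtain r where r: "homeomorphic_maps (subtopology G W) (subtopology X (s ` W)) s r"
    using W(4) homeomorphic_map_maps by blast
  have WG: "W \<subseteq> topspace G" using W(1) openin_subset by blast
  have sW: "s ` W \<subseteq> topspace X" using W(3) openin_subset by blast
  have rc: "continuous_map (subtopology X (s ` W)) (subtopology G W) r" and
    rs: "\<And>x. x \<in> topspace (subtopology X (s ` W)) \<Longrightarrow> s (r x) = x" and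
    sr: "\<And>h. h \<in> topspace (subtopology G W) \<Longrightarrow> r (s h) = h"
    using r unfolding homeomorphic_maps_def by auto
  have rc': "continuous_map (subtopology X (s ` W)) G (restrict r (s ` W))"
    by (rule continuous_map_eq[OF continuous_map_into_fulltopology[OF rc]]) (auto simp: topspace_subtopology)
  show ?thesis
  proof (intro exI conjI ballI)
    show "openin X (s ` W)" by (rule W(3))
    show "s g \<in> s ` W" using W(2) by blast
    show "restrict r (s ` W) \<in> extensional (s ` W)" by simp
    show "continuous_map (subtopology X (s ` W)) G (restrict r (s ` W))" by (rule rc')
    fix x assume "x \<in> s ` W"
    then show "s (restrict r (s ` W) x) = x" using rs sW by (auto simp: topspace_subtopology)
  next
    show "restrict r (s ` W) (s g) = g" using sr W(2) g by (auto simp: topspace_subtopology)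
  qed
qed

lemma sec_agree:
  assumes m1: "(U1, V, \<sigma>1) \<in> smor H" and m2: "(U2, V', \<sigma>2) \<in> smor H" and x: "x \<in> U1" "x \<in> U2"
    and e: "\<sigma>1 x = \<sigma>2 x"
  shows "\<exists>N. openin X N \<and> x \<in> N \<and> N \<subseteq> U1 \<inter> U2 \<and> (\<forall>z\<in>N. \<sigma>1 z = \<sigma>2 z)"
proof -
  have g: "\<sigma>1 x \<in> topspace G" using H_props[OF m1 x(1)] by blast
  obtain W where W: "openin G W" "\<sigma>1 x \<in> W" "homeomorphic_map (subtopology G W) (subtopology X (s ` W)) s"
    using e_cont(6) g unfolding local_homeo_def by blast
  have inj: "inj_on s (topspace G \<inter> W)" using homeomorphic_imp_injective_map[OF W(3)] by (simp add: topspace_subtopology)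
  have o1: "openin X U1" "openin X U2" using m1 m2 H_mor_iff by auto
  define N where "N = {z \<in> topspace (subtopology X U1). \<sigma>1 z \<in> W} \<inter> {z \<in> topspace (subtopology X U2). \<sigma>2 z \<in> W}"
  have N: "openin X N" unfolding N_def
    using openin_trans_full[OF openin_continuous_map_preimage[OF H_cont[OF m1] W(1)] o1(1)]
      openin_trans_full[OF openin_continuous_map_preimage[OF H_cont[OF m2] W(1)] o1(2)] by blast
  have xN: "x \<in> N" unfolding N_def using x e W(2) topU o1 by auto
  have NU: "N \<subseteq> U1 \<inter> U2" unfolding N_def using topU o1 by auto
  have "\<forall>z\<in>N. \<sigma>1 z = \<sigma>2 z"
  proof
    fix z assume z: "z \<in> N"
    have a: "\<sigma>1 z \<in> topspace G \<inter> W" "\<sigma>2 z \<in> topspace G \<inter> W" "s (\<sigma>1 z) = z" "s (\<sigma>2 z) = z"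
      using z H_props[OF m1] H_props[OF m2] NU unfolding N_def by auto
    then show "\<sigma>1 z = \<sigma>2 z" using inj unfolding inj_on_def by metis
  qed
  then show ?thesis using N xN NU by blast
qed

lemma H_restr2: "m \<in> smor H \<Longrightarrow> openin X W \<Longrightarrow> W \<subseteq> fst m \<Longrightarrow>
   Hs.restr m W = (W, fst (snd m), restrict (snd (snd m)) W)"
  unfolding Hs.restr_def using H_restr by (cases m) (auto simp: H_simps)

lemma germ_char:
  assumes m1: "m1 \<in> smor H" and m2: "m2 \<in> smor H" and c: "fst (snd m1) = fst (snd m2)"
    and x: "x \<in> fst m1" "x \<in> fst m2"
  shows "germ X H x m1 = germ X H x m2 \<longleftrightarrow> snd (snd m1) x = snd (snd m2) x"
proof
  obtain U1 V \<sigma>1 where e1: "m1 = (U1, V, \<sigma>1)" using prod_cases3 by blast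
  obtain U2 V2 \<sigma>2 where e2: "m2 = (U2, V2, \<sigma>2)" using prod_cases3 by blast
  have VV: "V2 = V" using c e1 e2 by simp
  have xx: "x \<in> sdom H m1" "x \<in> sdom H m2" using x by (simp_all add: H_simps)
  {
    assume "germ X H x m1 = germ X H x m2"
    then have "m2 \<in> germ X H x m1" using Hs.germ_eq_iff[OF m1 m2 xx] by simp
    then obtain W where W: "openin X W" "x \<in> W" "W \<subseteq> sdom H m1 \<inter> sdom H m2" "Hs.restr m1 W = Hs.restr m2 W"
      unfolding Hs.germ_iff by blast
    then have "restrict \<sigma>1 W = restrict \<sigma>2 W" using H_restr2[OF m1 W(1)] H_restr2[OF m2 W(1)] e1 e2
      by (auto simp: H_simps)
    then have "restrict \<sigma>1 W x = restrict \<sigma>2 W x" by simp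
    then show "snd (snd m1) x = snd (snd m2) x" using W(2) e1 e2 by simp
  }
  {
    assume v: "snd (snd m1) x = snd (snd m2) x"
    obtain N where N: "openin X N" "x \<in> N" "N \<subseteq> U1 \<inter> U2" "\<forall>z\<in>N. \<sigma>1 z = \<sigma>2 z"
      using sec_agree[of U1 V \<sigma>1 U2 V2 \<sigma>2 x] m1 m2 e1 e2 x v by auto
    have "restrict \<sigma>1 N = restrict \<sigma>2 N" using N(4) by (auto intro: restrict_ext)
    then have "Hs.restr m1 N = Hs.restr m2 N" using H_restr2[OF m1 N(1)] H_restr2[OF m2 N(1)] e1 e2 N(3) VV by auto
    then have "m2 \<in> germ X H x m1" unfolding Hs.germ_iff
      using m2 N e1 e2 VV x by (auto simp: H_simps)
    then show "germ X H x m1 = germ X H x m2" using Hs.germ_eq_iff[OF m1 m2 xx] by simp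
  }
qed


definition thru :: "'g \<Rightarrow> 'a set \<Rightarrow> 'a set \<times> 'a set \<times> ('a \<Rightarrow> 'g) \<Rightarrow> bool" where
  "thru g V m \<longleftrightarrow> m \<in> smor H \<and> fst (snd m) = V \<and> s g \<in> fst m \<and> snd (snd m) (s g) = g"

lemma thru_ex: "g \<in> topspace G \<Longrightarrow> openin X V \<Longrightarrow> t g \<in> V \<Longrightarrow> \<exists>m. thru g V m"
proof -
  assume g: "g \<in> topspace G" and V: "openin X V" "t g \<in> V"
  obtain U \<sigma> where u: "openin X U" "s g \<in> U" "\<sigma> \<in> extensional U" "continuous_map (subtopology X U) G \<sigma>"
    "\<forall>x\<in>U. s (\<sigma> x) = x" "\<sigma> (s g) = g" using sec_ex[OF g] by blast
  define U' where "U' = {x \<in> topspace (subtopology X U). t (\<sigma> x) \<in> V}"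
  have U': "openin X U'" unfolding U'_def
    using openin_trans_full[OF openin_continuous_map_preimage[OF continuous_map_compose[OF u(4) e_cont(2)] V(1)] u(1)]
    by simp
  have U'U: "U' \<subseteq> U" unfolding U'_def using topU[OF u(1)] by auto
  have "(U', V, restrict \<sigma> U') \<in> smor H"
  proof (rule H_morI)
    show "openin X U'" "openin X V" using U' V by auto
    show "restrict \<sigma> U' \<in> extensional U'" by simp
    show "continuous_map (subtopology X U') G (restrict \<sigma> U')"
      by (rule continuous_map_eq[OF continuous_map_from_subtopology_mono[OF u(4) U'U]]) (use topU[OF U'] in auto)
    fix x assume "x \<in> U'"
    then show "t (restrict \<sigma> U' x) \<in> V \<and> s (restrict \<sigma> U' x) = x" using u(5) U'U unfolding U'_def by auto
  qed
  moreover have "s g \<in> U'" unfolding U'_def using u topU[OF u(1)] V by auto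
  ultimately show ?thesis unfolding thru_def using u(6) by (intro exI[of _ "(U', V, restrict \<sigma> U')"]) auto
qed

definition fam :: "'g \<Rightarrow> 'a set \<Rightarrow> ('a set \<times> 'a set \<times> ('a \<Rightarrow> 'g)) set" where
  "fam g V = (if openin X V \<and> t g \<in> V then germ X H (s g) (SOME m. thru g V m) else {})"

lemma thru_germ: "thru g V m \<Longrightarrow> thru g V m' \<Longrightarrow> germ X H (s g) m = germ X H (s g) m'"
  unfolding thru_def using germ_char by simp

lemma fam_thru: "g \<in> topspace G \<Longrightarrow> openin X V \<Longrightarrow> t g \<in> V \<Longrightarrow> thru g V m \<Longrightarrow> fam g V = germ X H (s g) m"
proof -
  assume a: "g \<in> topspace G" "openin X V" "t g \<in> V" "thru g V m"
  have "thru g V (SOME m. thru g V m)" using thru_ex[OF a(1-3)] by (rule someI_ex)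
  then have "germ X H (s g) (SOME m. thru g V m) = germ X H (s g) m" using a(4) by (rule thru_germ)
  then show ?thesis unfolding fam_def using a by simp
qed

lemma germ_fam: "m \<in> smor H \<Longrightarrow> x \<in> fst m \<Longrightarrow> germ X H x m = fam (snd (snd m) x) (fst (snd m))"
proof -
  assume m: "m \<in> smor H" and x: "x \<in> fst m"
  obtain U V \<sigma> where e: "m = (U, V, \<sigma>)" using prod_cases3 by blast
  have p: "\<sigma> x \<in> topspace G" "t (\<sigma> x) \<in> V" "s (\<sigma> x) = x" using H_props[of U V \<sigma> x] m x e by auto
  have oV: "openin X V" using m e H_mor_iff by auto
  have "thru (\<sigma> x) V m" unfolding thru_def using m e x p by simp
  then show ?thesis using fam_thru[OF p(1) oV p(2)] e p by simp
qed

lemma H_inc_cmp: "(U, V, \<sigma>) \<in> smor H \<Longrightarrow> openin X V' \<Longrightarrow> V \<subseteq> V' \<Longrightarrow>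
   scmp H (sinc H V V') (U, V, \<sigma>) = (U, V', \<sigma>) \<and> (U, V', \<sigma>) \<in> smor H"
proof -
  assume m: "(U, V, \<sigma>) \<in> smor H" and V': "openin X V'" "V \<subseteq> V'"
  have "restrict (\<lambda>x. mc (restrict i V (t (\<sigma> x))) (\<sigma> x)) U = \<sigma>"
  proof (rule restrict_eqI)
    show "\<sigma> \<in> extensional U" using m H_mor_iff by blast
    fix x assume x: "x \<in> U"
    then show "mc (restrict i V (t (\<sigma> x))) (\<sigma> x) = \<sigma> x" using H_props[OF m x] e_unit by simp
  qed
  moreover have "(U, V', \<sigma>) \<in> smor H"
    using m V' H_cont[OF m] H_props[OF m] by (intro H_morI) (auto simp: H_mor_iff)
  ultimately show ?thesis by (simp add: H_simps)
qed

lemma fam_stalk2: "g \<in> topspace G \<Longrightarrow> fam g \<in> stalk2 X H (s g) (t g)"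
proof (rule Hs.stalk2_I)
  assume g: "g \<in> topspace G"
  { fix V assume V: "openin X V" "t g \<in> V"
    obtain m where m: "thru g V m" using thru_ex[OF g V] by blast
    have mm: "m \<in> smor H" "fst (snd m) = V" "s g \<in> fst m" using m unfolding thru_def by auto
    have "Hs.rep (s g) (fam g) V m" unfolding Hs.rep_def using fam_thru[OF g V m] mm by (simp add: H_simps)
    then show "\<exists>f. Hs.rep (s g) (fam g) V f" by blast }
  { fix V assume "\<not> (openin X V \<and> t g \<in> V)" then show "fam g V = {}" unfolding fam_def by auto }
  { fix V V' f assume V: "openin X V" "openin X V'" "t g \<in> V" "V \<subseteq> V'" and f: "Hs.rep (s g) (fam g) V f"
    obtain U V0 \<sigma> where e: "f = (U, V0, \<sigma>)" using prod_cases3 by blast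
    have fm: "(U, V, \<sigma>) \<in> smor H" "s g \<in> U" "germ X H (s g) f = fam g V" using f e unfolding Hs.rep_def by (auto simp: H_simps)
    have V0: "V0 = V" using f e unfolding Hs.rep_def by (simp add: H_simps)
    obtain m where m: "thru g V m" using thru_ex[OF g V(1,3)] by blast
    have "germ X H (s g) m = germ X H (s g) f" using fam_thru[OF g V(1,3) m] fm by simp
    then have "snd (snd m) (s g) = \<sigma> (s g)" using germ_char[of m f "s g"] m fm e V0 unfolding thru_def by simp
    then have sg: "\<sigma> (s g) = g" using m unfolding thru_def by simp
    have c: "scmp H (sinc H V V') f = (U, V', \<sigma>)" "(U, V', \<sigma>) \<in> smor H" using H_inc_cmp[OF fm(1) V(2,4)] e V0 by auto
    have "thru g V' (U, V', \<sigma>)" unfolding thru_def using c fm sg by simp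
    then show "germ X H (s g) (scmp H (sinc H V V') f) = fam g V'" using fam_thru[OF g V(2)] V c by auto }
qed


lemma stalk2_char:
  assumes x: "x \<in> topspace X" and y: "y \<in> topspace X" and \<phi>: "\<phi> \<in> stalk2 X H x y"
  shows "\<exists>g\<in>topspace G. s g = x \<and> t g = y \<and> \<phi> = fam g"
proof -
  have oX: "openin X (topspace X)" by simp
  obtain m0 where m0: "Hs.rep x \<phi> (topspace X) m0" using Hs.stalk2_rep[OF \<phi> oX y] by blast
  obtain U0 V0 \<sigma>0 where e00: "m0 = (U0, V0, \<sigma>0)" using prod_cases3 by blast
  have "V0 = topspace X" using m0 e00 unfolding Hs.rep_def by (simp add: H_simps)
  then have e0: "m0 = (U0, topspace X, \<sigma>0)" using e00 by simp
  have m0p: "(U0, topspace X, \<sigma>0) \<in> smor H" "x \<in> U0" "germ X H x m0 = \<phi> (topspace X)"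
    using m0 e0 unfolding Hs.rep_def by (auto simp: H_simps)
  define g where "g = \<sigma>0 x"
  have g: "g \<in> topspace G" "s g = x" using H_props[OF m0p(1,2)] unfolding g_def by auto
  have key: "\<And>V. openin X V \<Longrightarrow> y \<in> V \<Longrightarrow> \<exists>U1 \<sigma>1. (U1, V, \<sigma>1) \<in> smor H \<and> x \<in> U1 \<and> germ X H x (U1, V, \<sigma>1) = \<phi> V \<and> \<sigma>1 x = g"
  proof -
    fix V assume V: "openin X V" "y \<in> V"
    obtain m1 where m1: "Hs.rep x \<phi> V m1" using Hs.stalk2_rep[OF \<phi> V] by blast
    obtain U1 V1 \<sigma>1 where e1: "m1 = (U1, V1, \<sigma>1)" using prod_cases3 by blast
    have m1p: "(U1, V, \<sigma>1) \<in> smor H" "x \<in> U1" "germ X H x (U1, V, \<sigma>1) = \<phi> V"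
      using m1 e1 unfolding Hs.rep_def by (auto simp: H_simps)
    have VX: "V \<subseteq> topspace X" using V openin_subset by blast
    have V1: "V1 = V" using m1 e1 unfolding Hs.rep_def by (simp add: H_simps)
    have c: "germ X H x (scmp H (sinc H V (topspace X)) (U1, V, \<sigma>1)) = \<phi> (topspace X)"
      using Hs.stalk2_compat[OF \<phi> V(1) oX V(2) VX m1] e1 V1 by simp
    have ic: "scmp H (sinc H V (topspace X)) (U1, V, \<sigma>1) = (U1, topspace X, \<sigma>1)" "(U1, topspace X, \<sigma>1) \<in> smor H"
      using H_inc_cmp[OF m1p(1) oX VX] by auto
    have "germ X H x (U1, topspace X, \<sigma>1) = germ X H x m0" using c ic m0p by simp
    then have "\<sigma>1 x = \<sigma>0 x" using germ_char[of "(U1, topspace X, \<sigma>1)" m0 x] ic m0p e0 m1p by simp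
    then show "\<exists>U1 \<sigma>1. (U1, V, \<sigma>1) \<in> smor H \<and> x \<in> U1 \<and> germ X H x (U1, V, \<sigma>1) = \<phi> V \<and> \<sigma>1 x = g"
      using m1p unfolding g_def by blast
  qed
  have tg: "t g = y"
  proof (rule ccontr)
    assume ne: "t g \<noteq> y"
    have "t g \<in> topspace X" using t_top g by blast
    then obtain V where V: "openin X V" "y \<in> V" "t g \<notin> V" using T1 y ne unfolding t1_space_def by metis
    obtain U1 \<sigma>1 where k: "(U1, V, \<sigma>1) \<in> smor H" "x \<in> U1" "\<sigma>1 x = g" using key[OF V(1,2)] by blast
    show False using H_props[OF k(1,2)] k(3) V(3) by simp
  qed
  have "\<phi> = fam g"
  proof (rule Hs.stalk2_eqI[OF \<phi>])
    show "fam g \<in> stalk2 X H x y" using fam_stalk2[OF g(1)] g tg by simp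
    fix V assume V: "openin X V" "y \<in> V"
    obtain U1 \<sigma>1 where k: "(U1, V, \<sigma>1) \<in> smor H" "x \<in> U1" "germ X H x (U1, V, \<sigma>1) = \<phi> V" "\<sigma>1 x = g"
      using key[OF V] by blast
    show "\<phi> V = fam g V" using germ_fam[OF k(1)] k by simp
  qed
  then show ?thesis using g tg by blast
qed

lemma fam_inj: "g \<in> topspace G \<Longrightarrow> g' \<in> topspace G \<Longrightarrow> s g = s g' \<Longrightarrow> openin X V \<Longrightarrow> t g \<in> V \<Longrightarrow> t g' \<in> V \<Longrightarrow>
   fam g V = fam g' V \<Longrightarrow> g = g'"
proof -
  assume a: "g \<in> topspace G" "g' \<in> topspace G" "s g = s g'" "openin X V" "t g \<in> V" "t g' \<in> V" "fam g V = fam g' V"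
  obtain m where m: "thru g V m" using thru_ex a by blast
  obtain m' where m': "thru g' V m'" using thru_ex a by blast
  have "germ X H (s g) m = germ X H (s g) m'" using fam_thru[OF a(1,4,5) m] fam_thru[OF a(2,4,6) m'] a by simp
  then show "g = g'" using germ_char[of m m' "s g"] m m' a(3) unfolding thru_def by simp
qed

lemma idfam_fam: "x \<in> topspace X \<Longrightarrow> star_idfam X H x = fam (i x)"
proof
  fix V assume x: "x \<in> topspace X"
  have ix: "i x \<in> topspace G" "s (i x) = x" "t (i x) = x" using e_i[OF x] by auto
  show "star_idfam X H x V = fam (i x) V"
  proof (cases "openin X V \<and> x \<in> V")
    case True
    have "thru (i x) V (sidn H V)" unfolding thru_def using H_idn_mor[of V V] True ix by (simp add: H_simps)
    then show ?thesis unfolding star_idfam_def using True fam_thru[OF ix(1)] ix by simp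
  next
    case False then show ?thesis unfolding star_idfam_def fam_def using ix by auto
  qed
qed

lemma scf_fam: "g \<in> topspace G \<Longrightarrow> h \<in> topspace G \<Longrightarrow> s h = t g \<Longrightarrow>
   star_cmp_fam X H (s g) (t g) (t h) (fam h) (fam g) = fam (mc h g)"
proof -
  assume g: "g \<in> topspace G" and h: "h \<in> topspace G" and st: "s h = t g"
  have hg: "mc h g \<in> topspace G" "s (mc h g) = s g" "t (mc h g) = t h" using e_mc[OF g h st] by auto
  have sh: "fam h \<in> stalk2 X H (t g) (t h)" using fam_stalk2[OF h] st by simp
  have sg: "fam g \<in> stalk2 X H (s g) (t g)" using fam_stalk2[OF g] .
  show ?thesis
  proof (rule Hs.stalk2_eqI)
    show "star_cmp_fam X H (s g) (t g) (t h) (fam h) (fam g) \<in> stalk2 X H (s g) (t h)" using Hs.scf_stalk2[OF sh sg] .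
    show "fam (mc h g) \<in> stalk2 X H (s g) (t h)" using fam_stalk2[OF hg(1)] hg by simp
    fix W assume W: "openin X W" "t h \<in> W"
    obtain mh where mh: "thru h W mh" using thru_ex[OF h W] by blast
    obtain Uh Vh \<sigma>h where eh0: "mh = (Uh, Vh, \<sigma>h)" using prod_cases3 by blast
    have "Vh = W" using mh eh0 unfolding thru_def by simp
    then have eh: "mh = (Uh, W, \<sigma>h)" using eh0 by simp
    have mhp: "(Uh, W, \<sigma>h) \<in> smor H" "s h \<in> Uh" "\<sigma>h (s h) = h" using mh eh unfolding thru_def by auto
    have oUh: "openin X Uh" using mhp H_mor_iff by blast
    obtain mg where mg: "thru g Uh mg" using thru_ex[OF g oUh] mhp st by auto
    obtain Ug Vg \<sigma>g where eg0: "mg = (Ug, Vg, \<sigma>g)" using prod_cases3 by blast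
    have "Vg = Uh" using mg eg0 unfolding thru_def by simp
    then have eg: "mg = (Ug, Uh, \<sigma>g)" using eg0 by simp
    have mgp: "(Ug, Uh, \<sigma>g) \<in> smor H" "s g \<in> Ug" "\<sigma>g (s g) = g" using mg eg unfolding thru_def by auto
    have w: "Hs.cwit (s g) (t g) (fam h) (fam g) W mh mg"
      unfolding Hs.cwit_def Hs.rep_def using mhp mgp eh eg fam_thru[OF h W mh] fam_thru[OF g oUh _ mg] st
      by (simp add: H_simps)
    have "star_cmp_fam X H (s g) (t g) (t h) (fam h) (fam g) W = germ X H (s g) (scmp H mh mg)"
      using Hs.scf_eq[OF sh sg W w] .
    also have "\<dots> = fam (snd (snd (scmp H mh mg)) (s g)) (fst (snd (scmp H mh mg)))"
      using germ_fam[of "scmp H mh mg" "s g"] H_cmp_mor[OF mgp(1) mhp(1)] eh eg mgp by (simp add: H_simps)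
    also have "\<dots> = fam (mc h g) W" using eh eg mgp mhp st by (simp add: H_simps)
    finally show "star_cmp_fam X H (s g) (t g) (t h) (fam h) (fam g) W = fam (mc h g) W" .
  qed
qed


lemma H_pp: "pre_pseudogroup X H"
  unfolding pre_pseudogroup_def
proof (intro conjI allI impI ballI)
  show "is_sitecat X H" by (rule H_sitecat)
next
  fix V x assume a: "openin X V \<and> x \<in> topspace X"
  have VX: "V \<subseteq> topspace X" using a openin_subset by blast
  show "bij_betw (\<lambda>(y, \<phi>). \<phi> V) (SIGMA y:V. stalk2 X H x y) (stalk X H x V)"
    unfolding bij_betw_def
  proof (intro conjI)
    show "inj_on (\<lambda>(y, \<phi>). \<phi> V) (SIGMA y:V. stalk2 X H x y)"
    proof (rule inj_onI, clarify)
      fix y \<phi> y' \<phi>' assume y: "y \<in> V" "\<phi> \<in> stalk2 X H x y" and y': "y' \<in> V" "\<phi>' \<in> stalk2 X H x y'" and e: "\<phi> V = \<phi>' V"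
      obtain g where g: "g \<in> topspace G" "s g = x" "t g = y" "\<phi> = fam g" using stalk2_char[of x y \<phi>] a VX y by blast
      obtain g' where g': "g' \<in> topspace G" "s g' = x" "t g' = y'" "\<phi>' = fam g'" using stalk2_char[of x y' \<phi>'] a VX y' by blast
      have "g = g'" using fam_inj[OF g(1) g'(1) _ _ _ _] g g' e y y' a by auto
      then show "y = y' \<and> \<phi> = \<phi>'" using g g' by simp
    qed
    show "(\<lambda>(y, \<phi>). \<phi> V) ` (SIGMA y:V. stalk2 X H x y) = stalk X H x V"
    proof
      show "(\<lambda>(y, \<phi>). \<phi> V) ` (SIGMA y:V. stalk2 X H x y) \<subseteq> stalk X H x V"
        using a unfolding stalk2_def by auto
      show "stalk X H x V \<subseteq> (\<lambda>(y, \<phi>). \<phi> V) ` (SIGMA y:V. stalk2 X H x y)"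
      proof
        fix \<gamma> assume "\<gamma> \<in> stalk X H x V"
        then obtain m where m: "m \<in> smor H" "scod H m = V" "x \<in> sdom H m" "\<gamma> = germ X H x m"
          unfolding stalk_def by blast
        obtain U V1 \<sigma> where e: "m = (U, V1, \<sigma>)" using prod_cases3 by blast
        have mm: "(U, V, \<sigma>) \<in> smor H" "x \<in> U" using m e by (auto simp: H_simps)
        have p: "\<sigma> x \<in> topspace G" "t (\<sigma> x) \<in> V" "s (\<sigma> x) = x" using H_props[OF mm] by auto
        have "\<gamma> = fam (\<sigma> x) V" using germ_fam[of m x] m e mm by (simp add: H_simps)
        moreover have "(t (\<sigma> x), fam (\<sigma> x)) \<in> (SIGMA y:V. stalk2 X H x y)" using fam_stalk2[OF p(1)] p by simp
        ultimately show "\<gamma> \<in> (\<lambda>(y, \<phi>). \<phi> V) ` (SIGMA y:V. stalk2 X H x y)" by force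
      qed
    qed
  qed
next
  fix m assume m: "m \<in> star_mor X H"
  obtain x y \<phi> where e: "m = (x, y, \<phi>)" using prod_cases3 by blast
  have s0: "x \<in> topspace X" "y \<in> topspace X" "\<phi> \<in> stalk2 X H x y" using m e unfolding star_mor_def by auto
  obtain g where g: "g \<in> topspace G" "s g = x" "t g = y" "\<phi> = fam g" using stalk2_char[OF s0] by blast
  have ig: "iv g \<in> topspace G" "s (iv g) = t g" "t (iv g) = s g" "mc (iv g) g = i (s g)" "mc g (iv g) = i (t g)"
    using e_inv[OF g(1)] by auto
  have c1: "star_cmp_fam X H x y x (fam (iv g)) (fam g) = star_idfam X H x"
    using scf_fam[OF g(1) ig(1) ig(2)] ig g idfam_fam[OF s0(1)] by simp
  have c2: "star_cmp_fam X H y x y (fam g) (fam (iv g)) = star_idfam X H y"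
    using scf_fam[OF ig(1) g(1)] ig g idfam_fam[OF s0(2)] by simp
  have "fam (iv g) \<in> stalk2 X H y x" using fam_stalk2[OF ig(1)] ig g by simp
  then show "\<exists>\<psi>\<in>stalk2 X H (fst (snd m)) (fst m).
        star_cmp_fam X H (fst m) (fst (snd m)) (fst m) \<psi> (snd (snd m)) = star_idfam X H (fst m) \<and>
        star_cmp_fam X H (fst (snd m)) (fst m) (fst (snd m)) (snd (snd m)) \<psi> = star_idfam X H (fst (snd m))"
    using c1 c2 e g by auto
qed

lemma H_ps: "pseudogroup_sheaf X H"
  unfolding pseudogroup_sheaf_def using H_pp H_sheaf by blast

end


sublocale eg \<subseteq> Hp: pp X "hat_cat X G s t i mc"
  by unfold_locales (rule H_pp)

context eg begin

definition Phi :: "'g \<Rightarrow> 'a \<times> 'a \<times> ('a set \<Rightarrow> ('a set \<times> 'a set \<times> ('a \<Rightarrow> 'g)) set)" where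
  "Phi g = (s g, t g, fam g)"

lemma phi_mor: "g \<in> topspace G \<Longrightarrow> Phi g \<in> star_mor X H"
  unfolding Phi_def star_mor_def using s_top t_top fam_stalk2 by auto

lemma fam_X_eq: "g \<in> topspace G \<Longrightarrow> g' \<in> topspace G \<Longrightarrow> s g = s g' \<Longrightarrow> fam g (topspace X) = fam g' (topspace X) \<Longrightarrow> g = g'"
  using fam_inj[of g g' "topspace X"] t_top by auto

lemma phi_inj: "inj_on Phi (topspace G)"
proof (rule inj_onI)
  fix g g' assume g: "g \<in> topspace G" "g' \<in> topspace G" and e: "Phi g = Phi g'"
  then show "g = g'" using fam_X_eq[OF g] unfolding Phi_def by simp
qed

lemma phi_surj: "Phi ` topspace G = star_mor X H"
proof
  show "Phi ` topspace G \<subseteq> star_mor X H" using phi_mor by blast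
  show "star_mor X H \<subseteq> Phi ` topspace G"
  proof
    fix m assume m: "m \<in> star_mor X H"
    obtain x y \<phi> where e: "m = (x, y, \<phi>)" using prod_cases3 by blast
    have s0: "x \<in> topspace X" "y \<in> topspace X" "\<phi> \<in> stalk2 X H x y" using m e unfolding star_mor_def by auto
    obtain g where g: "g \<in> topspace G" "s g = x" "t g = y" "\<phi> = fam g" using stalk2_char[OF s0] by blast
    then show "m \<in> Phi ` topspace G" using e unfolding Phi_def by force
  qed
qed

lemma phi_basic: "f \<in> smor H \<Longrightarrow> fst (snd f) = topspace X \<Longrightarrow> g \<in> topspace G \<Longrightarrow>
   Phi g \<in> star_basic X H f \<longleftrightarrow> s g \<in> fst f \<and> snd (snd f) (s g) = g"
proof -
  assume f: "f \<in> smor H" "fst (snd f) = topspace X" and g: "g \<in> topspace G"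
  obtain U V \<sigma> where e: "f = (U, V, \<sigma>)" using prod_cases3 by blast
  have fm: "(U, topspace X, \<sigma>) \<in> smor H" using f e by auto
  show ?thesis
  proof
    assume "Phi g \<in> star_basic X H f"
    then have a: "s g \<in> U" "fam g (topspace X) = germ X H (s g) f" unfolding Hp.basic_iff Phi_def e by (auto simp: H_simps)
    then have "fam g (topspace X) = fam (\<sigma> (s g)) (topspace X)" using germ_fam[of f "s g"] f e by simp
    moreover have "\<sigma> (s g) \<in> topspace G" "s (\<sigma> (s g)) = s g" using H_props[OF fm a(1)] by auto
    ultimately have "g = \<sigma> (s g)" using fam_X_eq[OF g] by simp
    then show "s g \<in> fst f \<and> snd (snd f) (s g) = g" using a e by simp
  next
    assume a: "s g \<in> fst f \<and> snd (snd f) (s g) = g"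
    have "germ X H (s g) f = fam g (topspace X)" using germ_fam[of f "s g"] f a e by simp
    then show "Phi g \<in> star_basic X H f" unfolding Hp.basic_iff Phi_def using phi_mor[OF g] a e
      by (simp add: H_simps Phi_def)
  qed
qed

lemma phi_cont: "continuous_map G (star_top X H) Phi"
proof (rule Hp.cont_into_star)
  show "\<And>z. z \<in> topspace G \<Longrightarrow> Phi z \<in> star_mor X H" using phi_mor by blast
  fix f assume f: "f \<in> smor H \<and> scod H f = topspace X"
  obtain U V \<sigma> where e: "f = (U, V, \<sigma>)" using prod_cases3 by blast
  have fm: "(U, topspace X, \<sigma>) \<in> smor H" using f e by (auto simp: H_simps)
  have oU: "openin X U" using fm H_mor_iff by blast
  have S: "{z \<in> topspace G. Phi z \<in> star_basic X H f} = {g \<in> topspace G. s g \<in> U \<and> \<sigma> (s g) = g}"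
    using phi_basic[of f] f e by (auto simp: H_simps)
  have "openin G {g \<in> topspace G. s g \<in> U \<and> \<sigma> (s g) = g}"
  proof (subst openin_subopen, intro ballI)
    fix g assume g: "g \<in> {g \<in> topspace G. s g \<in> U \<and> \<sigma> (s g) = g}"
    obtain W where W: "openin G W" "g \<in> W" "homeomorphic_map (subtopology G W) (subtopology X (s ` W)) s"
      using e_cont(6) g unfolding local_homeo_def by blast
    have inj: "inj_on s (topspace G \<inter> W)" using homeomorphic_imp_injective_map[OF W(3)] by (simp add: topspace_subtopology)
    define U' where "U' = {x \<in> topspace (subtopology X U). \<sigma> x \<in> W}"
    have U': "openin X U'" unfolding U'_def
      using openin_trans_full[OF openin_continuous_map_preimage[OF H_cont[OF fm] W(1)] oU] .
    define N where "N = {g' \<in> topspace G. s g' \<in> U'} \<inter> W"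
    have N: "openin G N" unfolding N_def using openin_continuous_map_preimage[OF e_cont(1) U'] W(1) by blast
    have gN: "g \<in> N" unfolding N_def U'_def using g W(2) topU[OF oU] by auto
    have "N \<subseteq> {g \<in> topspace G. s g \<in> U \<and> \<sigma> (s g) = g}"
    proof
      fix g' assume g': "g' \<in> N"
      then have a: "g' \<in> topspace G" "s g' \<in> U" "\<sigma> (s g') \<in> W" "g' \<in> W" unfolding N_def U'_def using topU[OF oU] by auto
      have b: "\<sigma> (s g') \<in> topspace G" "s (\<sigma> (s g')) = s g'" using H_props[OF fm a(2)] by auto
      have "\<sigma> (s g') = g'" using inj a b unfolding inj_on_def by blast
      then show "g' \<in> {g \<in> topspace G. s g \<in> U \<and> \<sigma> (s g) = g}" using a by simp
    qed
    then show "\<exists>T. openin G T \<and> g \<in> T \<and> T \<subseteq> {g \<in> topspace G. s g \<in> U \<and> \<sigma> (s g) = g}" using N gN by blast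
  qed
  then show "openin G {z \<in> topspace G. Phi z \<in> star_basic X H f}" using S by simp
qed


lemma phi_open: "open_map G (star_top X H) Phi"
  unfolding open_map_def
proof (intro allI impI)
  fix Op assume Op: "openin G Op"
  show "openin (star_top X H) (Phi ` Op)"
    unfolding Hp.star_open_iff
  proof (intro conjI ballI)
    have OG: "Op \<subseteq> topspace G" using Op openin_subset by blast
    show "Phi ` Op \<subseteq> star_mor X H" using phi_mor OG by blast
    fix m assume "m \<in> Phi ` Op"
    then obtain g where g: "g \<in> Op" "m = Phi g" by blast
    have gG: "g \<in> topspace G" using g OG by blast
    obtain W where W: "openin G W" "g \<in> W" "openin X (s ` W)" "homeomorphic_map (subtopology G W) (subtopology X (s ` W)) s"
      using e_cont(6) gG unfolding local_homeo_def by blast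
    obtain r where r: "homeomorphic_maps (subtopology G W) (subtopology X (s ` W)) s r"
      using W(4) homeomorphic_map_maps by blast
    have WG: "W \<subseteq> topspace G" using W(1) openin_subset by blast
    have sW: "s ` W \<subseteq> topspace X" using W(3) openin_subset by blast
    have rc: "continuous_map (subtopology X (s ` W)) (subtopology G W) r" and
      rs: "\<And>x. x \<in> topspace (subtopology X (s ` W)) \<Longrightarrow> s (r x) = x" and
      sr: "\<And>h. h \<in> topspace (subtopology G W) \<Longrightarrow> r (s h) = h"
      using r unfolding homeomorphic_maps_def by auto
    define W' where "W' = W \<inter> Op"
    have W'o: "openin (subtopology G W) W'" unfolding W'_def using Op by (simp add: openin_subtopology_Int2)
    have "openin (subtopology X (s ` W)) (s ` W')"
      using homeomorphic_map_openness[OF W(4)] W'o openin_subset by (metis)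
    then have U: "openin X (s ` W')" using openin_trans_full W(3) by blast
    define U where "U = s ` W'"
    have UW: "U \<subseteq> s ` W" unfolding U_def W'_def by blast
    define \<sigma> where "\<sigma> = restrict r U"
    have fm: "(U, topspace X, \<sigma>) \<in> smor H"
    proof (rule H_morI)
      show "openin X U" using U unfolding U_def .
      show "openin X (topspace X)" by simp
      show "\<sigma> \<in> extensional U" unfolding \<sigma>_def by simp
      have "continuous_map (subtopology X U) G r"
        using continuous_map_from_subtopology_mono[OF continuous_map_into_fulltopology[OF rc] UW] .
      then show "continuous_map (subtopology X U) G \<sigma>" unfolding \<sigma>_def
        by (rule continuous_map_eq) (use topU[OF U[folded U_def]] in auto)
      fix x assume x: "x \<in> U"
      have xt: "x \<in> topspace (subtopology X (s ` W))" using x UW sW by (auto simp: topspace_subtopology)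
      have "r x \<in> topspace G" using cmap_mem[OF rc xt] by (simp add: topspace_subtopology)
      then show "t (\<sigma> x) \<in> topspace X \<and> s (\<sigma> x) = x" unfolding \<sigma>_def using x rs[OF xt] t_top by simp
    qed
    define f where "f = (U, topspace X, \<sigma>)"
    have XMf: "f \<in> smor H \<and> scod H f = topspace X" unfolding f_def using fm by (simp add: H_simps)
    have sgU: "s g \<in> U" unfolding U_def W'_def using g W(2) by blast
    have rsg: "r (s g) = g" using sr W(2) gG by (simp add: topspace_subtopology)
    have mB: "m \<in> star_basic X H f" using phi_basic[of f g] g gG sgU rsg fm unfolding f_def \<sigma>_def by simp
    have "star_basic X H f \<subseteq> Phi ` Op"
    proof
      fix m' assume m': "m' \<in> star_basic X H f"
      then have "m' \<in> star_mor X H" using Hp.basic_sub by blast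
      then obtain g' where g': "g' \<in> topspace G" "m' = Phi g'" using phi_surj by blast
      have a: "s g' \<in> U" "\<sigma> (s g') = g'" using phi_basic[of f g'] m' g' fm unfolding f_def by auto
      obtain w where w: "w \<in> W'" "s g' = s w" using a(1) unfolding U_def by blast
      have "r (s w) = w" using sr w WG unfolding W'_def by (auto simp: topspace_subtopology)
      then have "g' = w" using a w unfolding \<sigma>_def by simp
      then show "m' \<in> Phi ` Op" using g' w unfolding W'_def by blast
    qed
    then show "\<exists>f. (f \<in> smor H \<and> scod H f = topspace X) \<and> m \<in> star_basic X H f \<and> star_basic X H f \<subseteq> Phi ` Op"
      using XMf mB by blast
  qed
qed

lemma phi_homeo: "homeomorphic_map G (star_top X H) Phi"
  by (rule bijective_open_imp_homeomorphic_map[OF phi_cont phi_open])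
    (simp_all add: Hp.topspace_star phi_surj phi_inj)

theorem G_iso: "groupoid_iso_over X G s t i iv mc (star_top X H) star_src star_tgt (star_unit X H) (star_inv X H) (star_cmp X H) Phi"
  unfolding groupoid_iso_over_def
proof (intro conjI ballI impI)
  show "homeomorphic_map G (star_top X H) Phi" by (rule phi_homeo)
next
  fix f assume f: "f \<in> topspace G"
  show "star_src (Phi f) = s f" unfolding Phi_def star_src_def by simp
  show "star_tgt (Phi f) = t f" unfolding Phi_def star_tgt_def by simp
  have iv: "iv f \<in> topspace G" "s (iv f) = t f" "t (iv f) = s f" "mc (iv f) f = i (s f)"
    using e_inv[OF f] by auto
  have "star_cmp_fam X H (s f) (t f) (s f) (fam (iv f)) (fam f) = star_idfam X H (s f)"
    using scf_fam[OF f iv(1) iv(2)] iv idfam_fam[OF s_top[OF f]] by simp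
  then have "star_inv X H (s f, t f, fam f) = (t f, s f, fam (iv f))"
    using Hp.inv_left_unique[of "s f" "t f" "fam f" "fam (iv f)"] phi_mor[OF f] fam_stalk2[OF iv(1)] iv
    unfolding Phi_def by simp
  then show "Phi (iv f) = star_inv X H (Phi f)" unfolding Phi_def using iv by simp
next
  fix x assume x: "x \<in> topspace X"
  show "Phi (i x) = star_unit X H x" unfolding Phi_def star_unit_def using e_i[OF x] idfam_fam[OF x] by simp
next
  fix f g assume f: "f \<in> topspace G" and g: "g \<in> topspace G" and st: "s g = t f"
  have c: "s (mc g f) = s f" "t (mc g f) = t g" using e_mc[OF f g st] by auto
  show "Phi (mc g f) = star_cmp X H (Phi g) (Phi f)"
    unfolding Phi_def star_cmp_def using scf_fam[OF f g st] c by simp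
qed

end


theorem mainTheorem5:
  fixes X :: "'a topology"
  assumes "t1_space X"
  shows "(\<forall>(G :: 'g topology) s t i iv mc. etale_groupoid X G s t i iv mc \<longrightarrow>
            pseudogroup_sheaf X (hat_cat X G s t i mc) \<and>
            (\<exists>\<Phi>. groupoid_iso_over X G s t i iv mc
                    (star_top X (hat_cat X G s t i mc)) star_src star_tgt
                    (star_unit X (hat_cat X G s t i mc)) (star_inv X (hat_cat X G s t i mc))
                    (star_cmp X (hat_cat X G s t i mc)) \<Phi>)) \<and>
         (\<forall>C :: ('a, 'm) sitecat. pseudogroup_sheaf X C \<longrightarrow>
            etale_groupoid X (star_top X C) star_src star_tgt (star_unit X C) (star_inv X C) (star_cmp X C) \<and>
            (\<exists>F. sitecat_iso X (hat_cat X (star_top X C) star_src star_tgt (star_unit X C) (star_cmp X C)) C F))"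
proof (intro conjI allI impI)
  fix G :: "'g topology" and s t i iv mc
  assume eg0: "etale_groupoid X G s t i iv mc"
  interpret eg X G s t i iv mc using eg0 assms by unfold_locales
  show "pseudogroup_sheaf X (hat_cat X G s t i mc)" by (rule H_ps)
  show "\<exists>\<Phi>. groupoid_iso_over X G s t i iv mc
                    (star_top X (hat_cat X G s t i mc)) star_src star_tgt
                    (star_unit X (hat_cat X G s t i mc)) (star_inv X (hat_cat X G s t i mc))
                    (star_cmp X (hat_cat X G s t i mc)) \<Phi>" using G_iso by blast
next
  fix C :: "('a, 'm) sitecat"
  assume ps0: "pseudogroup_sheaf X C"
  have a: "is_sitecat X C" "pre_pseudogroup X C" "sheaf_cond X C"
    using ps0 unfolding pseudogroup_sheaf_def pre_pseudogroup_def by auto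
  interpret ps X C by unfold_locales (fact a)+
  show "etale_groupoid X (star_top X C) star_src star_tgt (star_unit X C) (star_inv X C) (star_cmp X C)"
    by (rule star_etale)
  show "\<exists>F. sitecat_iso X (hat_cat X (star_top X C) star_src star_tgt (star_unit X C) (star_cmp X C)) C F"
    by (rule hat_star_iso)
qed

end
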